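(* Let $R$ be a commutative ring with identity. Then: (1) If $M$ is a coprime $R$-module and $N$ is any $R$-module, then $\operatorname{Hom}_R(M,N)$ is a prime $R$-module. Conversely, if $N$ is an injective cogenerator and $\operatorname{Hom}_R(M,N)$ is prime, then $M$ is coprime. (2) If $R$ is Noetherian, $N$ is an injective cogenerator $R$-module and $M$ is a prime $R$-module, then $\operatorname{Hom}_R(M,N)$ is a coprime $R$-module. (3) If $M$ is a prime (resp. weakly prime, coprime, weakly coprime) $R$-module, then for every prime ideal $\mathcal P$ of $R$ the $R_{\mathcal P}$-module $M_{\mathcal P}$ is prime (resp. weakly prime, coprime, weakly coprime). (4) An injective cogenerator $R$-module which is reduced (resp. weakly prime) is coreduced (resp. weakly coprime). (5) A progenerator $R$-module which is coreduced (resp. weakly coprime) is reduced (resp. weakly prime).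
   Context: All rings are commutative with identity and modules are unital. An $R$-module $M$ is: prime if for all ideals $I$ of $R$ and all $m\in M$, $Im=0$ implies $m=0$ or $IM=0$; weakly prime if for all ideals $I,J$ of $R$ and $m\in M$, $IJm=0$ implies $Im=0$ or $Jm=0$; reduced if for all ideals $I$ and $m\in M$, $I^2m=0$ implies $Im=0$; coprime if for all ideals $I$ of $R$, $IM=0$ or $IM=M$; weakly coprime if for all ideals $I,J$ of $R$, $IJM=IM$ or $IJM=JM$; coreduced if $IM=I^2M$ for all ideals $I$. A progenerator is a finitely generated projective generator. *)

theory Defs
  imports "HOL-Algebra.Module" "HOL-Algebra.Ideal_Product" "HOL-Algebra.Ring_Divisibility"
begin

inductive_set gen_submod :: "'a ring \<Rightarrow> ('a, 'm) module \<Rightarrow> 'm set \<Rightarrow> 'm set"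
  for R M X where
    zero: "\<zero>\<^bsub>M\<^esub> \<in> gen_submod R M X"
  | incl: "x \<in> X \<Longrightarrow> x \<in> gen_submod R M X"
  | smult: "\<lbrakk> a \<in> carrier R; x \<in> gen_submod R M X \<rbrakk> \<Longrightarrow> a \<odot>\<^bsub>M\<^esub> x \<in> gen_submod R M X"
  | add: "\<lbrakk> x \<in> gen_submod R M X; y \<in> gen_submod R M X \<rbrakk> \<Longrightarrow> x \<oplus>\<^bsub>M\<^esub> y \<in> gen_submod R M X"

definition ideal_elt :: "'a ring \<Rightarrow> ('a, 'm) module \<Rightarrow> 'a set \<Rightarrow> 'm \<Rightarrow> 'm set" where
  "ideal_elt R M I m = {a \<odot>\<^bsub>M\<^esub> m | a. a \<in> I}"

definition ideal_mod :: "'a ring \<Rightarrow> ('a, 'm) module \<Rightarrow> 'a set \<Rightarrow> 'm set" where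
  "ideal_mod R M I = gen_submod R M {a \<odot>\<^bsub>M\<^esub> m | a m. a \<in> I \<and> m \<in> carrier M}"

definition prime_module :: "'a ring \<Rightarrow> ('a, 'm) module \<Rightarrow> bool" where
  "prime_module R M \<longleftrightarrow> (\<forall>I m. ideal I R \<and> m \<in> carrier M \<and> ideal_elt R M I m = {\<zero>\<^bsub>M\<^esub>}
      \<longrightarrow> m = \<zero>\<^bsub>M\<^esub> \<or> ideal_mod R M I = {\<zero>\<^bsub>M\<^esub>})"

definition weakly_prime_module :: "'a ring \<Rightarrow> ('a, 'm) module \<Rightarrow> bool" where
  "weakly_prime_module R M \<longleftrightarrow> (\<forall>I J m. ideal I R \<and> ideal J R \<and> m \<in> carrier M
      \<and> ideal_elt R M (ideal_prod R I J) m = {\<zero>\<^bsub>M\<^esub>}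
      \<longrightarrow> ideal_elt R M I m = {\<zero>\<^bsub>M\<^esub>} \<or> ideal_elt R M J m = {\<zero>\<^bsub>M\<^esub>})"

definition reduced_module :: "'a ring \<Rightarrow> ('a, 'm) module \<Rightarrow> bool" where
  "reduced_module R M \<longleftrightarrow> (\<forall>I m. ideal I R \<and> m \<in> carrier M
      \<and> ideal_elt R M (ideal_prod R I I) m = {\<zero>\<^bsub>M\<^esub>}
      \<longrightarrow> ideal_elt R M I m = {\<zero>\<^bsub>M\<^esub>})"

definition coprime_module :: "'a ring \<Rightarrow> ('a, 'm) module \<Rightarrow> bool" where
  "coprime_module R M \<longleftrightarrow> (\<forall>I. ideal I R
      \<longrightarrow> ideal_mod R M I = {\<zero>\<^bsub>M\<^esub>} \<or> ideal_mod R M I = carrier M)"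

definition weakly_coprime_module :: "'a ring \<Rightarrow> ('a, 'm) module \<Rightarrow> bool" where
  "weakly_coprime_module R M \<longleftrightarrow> (\<forall>I J. ideal I R \<and> ideal J R
      \<longrightarrow> ideal_mod R M (ideal_prod R I J) = ideal_mod R M I
        \<or> ideal_mod R M (ideal_prod R I J) = ideal_mod R M J)"

definition coreduced_module :: "'a ring \<Rightarrow> ('a, 'm) module \<Rightarrow> bool" where
  "coreduced_module R M \<longleftrightarrow> (\<forall>I. ideal I R
      \<longrightarrow> ideal_mod R M I = ideal_mod R M (ideal_prod R I I))"

definition module_hom :: "'a ring \<Rightarrow> ('a, 'm) module \<Rightarrow> ('a, 'n) module \<Rightarrow> ('m \<Rightarrow> 'n) set" where
  "module_hom R M N = {f. f \<in> carrier M \<rightarrow> carrier N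
      \<and> (\<forall>x \<in> carrier M. \<forall>y \<in> carrier M. f (x \<oplus>\<^bsub>M\<^esub> y) = f x \<oplus>\<^bsub>N\<^esub> f y)
      \<and> (\<forall>a \<in> carrier R. \<forall>x \<in> carrier M. f (a \<odot>\<^bsub>M\<^esub> x) = a \<odot>\<^bsub>N\<^esub> f x)}"

definition hom_module :: "'a ring \<Rightarrow> ('a, 'm) module \<Rightarrow> ('a, 'n) module \<Rightarrow> ('a, 'm \<Rightarrow> 'n) module" where
  "hom_module R M N = \<lparr> carrier = module_hom R M N \<inter> extensional (carrier M),
      monoid.mult = (\<lambda>f g. undefined), one = undefined,
      zero = (\<lambda>x \<in> carrier M. \<zero>\<^bsub>N\<^esub>),
      add = (\<lambda>f g. \<lambda>x \<in> carrier M. f x \<oplus>\<^bsub>N\<^esub> g x),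
      smult = (\<lambda>a f. \<lambda>x \<in> carrier M. a \<odot>\<^bsub>N\<^esub> f x) \<rparr>"

text \<open>HOL cannot quantify over all types inside a formula. The universal properties are
  therefore stated for test modules whose carriers live in the type \<open>'a list set\<close>
  (\<open>'a\<close> the ring type). This type contains isomorphic copies of \<open>R\<close>, all ideals, all
  cyclic modules \<open>R/I\<close>, all \<open>R^n\<close> and their quotients.\<close>

definition injective_module :: "'a ring \<Rightarrow> ('a, 'n) module \<Rightarrow> bool" where
  "injective_module R N \<longleftrightarrow>
    (\<forall>(A :: ('a, 'a list set) module) (B :: ('a, 'a list set) module) f g.
       module R A \<and> module R B \<and> f \<in> module_hom R A B \<and> inj_on f (carrier A)
       \<and> g \<in> module_hom R A N
       \<longrightarrow> (\<exists>h \<in> module_hom R B N. \<forall>x \<in> carrier A. h (f x) = g x))"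

definition cogenerator_module :: "'a ring \<Rightarrow> ('a, 'n) module \<Rightarrow> bool" where
  "cogenerator_module R N \<longleftrightarrow>
    (\<forall>(M :: ('a, 'a list set) module) m.
       module R M \<and> m \<in> carrier M \<and> m \<noteq> \<zero>\<^bsub>M\<^esub>
       \<longrightarrow> (\<exists>f \<in> module_hom R M N. f m \<noteq> \<zero>\<^bsub>N\<^esub>))"

definition projective_module :: "'a ring \<Rightarrow> ('a, 'p) module \<Rightarrow> bool" where
  "projective_module R P \<longleftrightarrow>
    (\<forall>(B :: ('a, 'a list set) module) (C :: ('a, 'a list set) module) g f.
       module R B \<and> module R C \<and> g \<in> module_hom R B C \<and> g ` carrier B = carrier C
       \<and> f \<in> module_hom R P C
       \<longrightarrow> (\<exists>h \<in> module_hom R P B. \<forall>x \<in> carrier P. g (h x) = f x))"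

definition generator_module :: "'a ring \<Rightarrow> ('a, 'p) module \<Rightarrow> bool" where
  "generator_module R P \<longleftrightarrow>
    (\<forall>(M :: ('a, 'a list set) module). module R M \<longrightarrow>
       carrier M = gen_submod R M (\<Union>{f ` carrier P | f. f \<in> module_hom R P M}))"

definition finitely_generated_module :: "'a ring \<Rightarrow> ('a, 'p) module \<Rightarrow> bool" where
  "finitely_generated_module R P \<longleftrightarrow>
    (\<exists>X. finite X \<and> X \<subseteq> carrier P \<and> carrier P = gen_submod R P X)"

definition progenerator_module :: "'a ring \<Rightarrow> ('a, 'p) module \<Rightarrow> bool" where
  "progenerator_module R P \<longleftrightarrow> finitely_generated_module R P \<and> projective_module R P
     \<and> generator_module R P"

text \<open>Equivalence class of the fraction m/s, with (m,s) ~ (n,t) iff u(tm - sn) = 0 for some u in S.\<close>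
definition loc_cls :: "'a ring \<Rightarrow> 'a set \<Rightarrow> ('a, 'm) module \<Rightarrow> 'm \<Rightarrow> 'a \<Rightarrow> ('m \<times> 'a) set" where
  "loc_cls R S M m s = {(n, t). n \<in> carrier M \<and> t \<in> S \<and>
      (\<exists>u \<in> S. u \<odot>\<^bsub>M\<^esub> (t \<odot>\<^bsub>M\<^esub> m \<ominus>\<^bsub>M\<^esub> s \<odot>\<^bsub>M\<^esub> n) = \<zero>\<^bsub>M\<^esub>)}"

definition loc_carrier :: "'a ring \<Rightarrow> 'a set \<Rightarrow> ('a, 'm) module \<Rightarrow> ('m \<times> 'a) set set" where
  "loc_carrier R S M = {loc_cls R S M m s | m s. m \<in> carrier M \<and> s \<in> S}"

definition loc_add :: "'a ring \<Rightarrow> 'a set \<Rightarrow> ('a, 'm) module \<Rightarrow> ('m \<times> 'a) set \<Rightarrow> ('m \<times> 'a) set \<Rightarrow> ('m \<times> 'a) set" where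
  "loc_add R S M X Y = (SOME Z. \<exists>m s n t. (m, s) \<in> X \<and> (n, t) \<in> Y \<and>
      Z = loc_cls R S M (t \<odot>\<^bsub>M\<^esub> m \<oplus>\<^bsub>M\<^esub> s \<odot>\<^bsub>M\<^esub> n) (s \<otimes>\<^bsub>R\<^esub> t))"

definition self_module :: "'a ring \<Rightarrow> ('a, 'a) module" where
  "self_module R = \<lparr> carrier = carrier R, monoid.mult = monoid.mult R, one = \<one>\<^bsub>R\<^esub>,
      zero = \<zero>\<^bsub>R\<^esub>, add = add R, smult = monoid.mult R \<rparr>"

definition loc_ring :: "'a ring \<Rightarrow> 'a set \<Rightarrow> ('a \<times> 'a) set ring" where
  "loc_ring R S = \<lparr> carrier = loc_carrier R S (self_module R),
      monoid.mult = (\<lambda>X Y. SOME Z. \<exists>a s b t. (a, s) \<in> X \<and> (b, t) \<in> Y \<and>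
          Z = loc_cls R S (self_module R) (a \<otimes>\<^bsub>R\<^esub> b) (s \<otimes>\<^bsub>R\<^esub> t)),
      one = loc_cls R S (self_module R) \<one>\<^bsub>R\<^esub> \<one>\<^bsub>R\<^esub>,
      zero = loc_cls R S (self_module R) \<zero>\<^bsub>R\<^esub> \<one>\<^bsub>R\<^esub>,
      add = loc_add R S (self_module R) \<rparr>"

definition loc_module :: "'a ring \<Rightarrow> 'a set \<Rightarrow> ('a, 'm) module \<Rightarrow> (('a \<times> 'a) set, ('m \<times> 'a) set) module" where
  "loc_module R S M = \<lparr> carrier = loc_carrier R S M,
      monoid.mult = (\<lambda>X Y. undefined), one = undefined,
      zero = loc_cls R S M \<zero>\<^bsub>M\<^esub> \<one>\<^bsub>R\<^esub>,
      add = loc_add R S M,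
      smult = (\<lambda>A X. SOME Z. \<exists>a s m t. (a, s) \<in> A \<and> (m, t) \<in> X \<and>
          Z = loc_cls R S M (a \<odot>\<^bsub>M\<^esub> m) (s \<otimes>\<^bsub>R\<^esub> t)) \<rparr>"

abbreviation loc_ring_at :: "'a ring \<Rightarrow> 'a set \<Rightarrow> ('a \<times> 'a) set ring" where
  "loc_ring_at R P \<equiv> loc_ring R (carrier R - P)"

abbreviation loc_module_at :: "'a ring \<Rightarrow> 'a set \<Rightarrow> ('a, 'm) module \<Rightarrow> (('a \<times> 'a) set, ('m \<times> 'a) set) module" where
  "loc_module_at R P M \<equiv> loc_module R (carrier R - P) M"

end

theory Submission
  imports Defs
begin

context abelian_group begin
lemma ag1: "\<lbrakk>x \<in> carrier G; p \<in> carrier G; y \<in> carrier G; q \<in> carrier G; x \<oplus> p = y \<oplus> q\<rbrakk> \<Longrightarrow> y \<oplus> \<ominus> x = p \<oplus> \<ominus> q"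
proof -
  assume a: "x \<in> carrier G" "p \<in> carrier G" "y \<in> carrier G" "q \<in> carrier G" "x \<oplus> p = y \<oplus> q"
  have "(y \<oplus> \<ominus> x) \<oplus> q = (y \<oplus> q) \<oplus> \<ominus> x" using a by (simp add: a_ac)
  also have "\<dots> = p" using a(1,2,5) by (metis a_assoc a_comm a_inv_closed r_neg r_zero)
  finally show ?thesis using a by (metis a_closed a_inv_closed add.inv_solve_right a_inv_def)
qed
lemma ag2: "\<lbrakk>x \<in> carrier G; p \<in> carrier G; y \<in> carrier G; q \<in> carrier G; y \<oplus> \<ominus> x = p \<oplus> \<ominus> q\<rbrakk> \<Longrightarrow> x \<oplus> p = y \<oplus> q"
proof -
  assume a: "x \<in> carrier G" "p \<in> carrier G" "y \<in> carrier G" "q \<in> carrier G" "y \<oplus> \<ominus> x = p \<oplus> \<ominus> q"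
  have "x \<oplus> p = x \<oplus> (p \<oplus> \<ominus> q) \<oplus> q" using a by (simp add: a_assoc l_neg)
  also have "\<dots> = x \<oplus> (y \<oplus> \<ominus> x) \<oplus> q" by (simp only: a(5))
  also have "\<dots> = y \<oplus> q" using a(1-4) by (metis a_assoc a_comm a_inv_closed r_neg r_zero)
  finally show ?thesis .
qed
lemma ag_eq0: "\<lbrakk>x \<in> carrier G; y \<in> carrier G; x \<oplus> \<ominus> y = \<zero>\<rbrakk> \<Longrightarrow> x = y"
proof -
  assume a: "x \<in> carrier G" "y \<in> carrier G" "x \<oplus> \<ominus> y = \<zero>"
  have "x = (x \<oplus> \<ominus> y) \<oplus> y" using a(1,2) by (simp add: a_assoc l_neg)
  then show ?thesis using a by simp
qed
end

definition cosl :: "'a ring \<Rightarrow> 'a set \<Rightarrow> 'a \<Rightarrow> 'a list set" where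
  "cosl R K r = {[x] | x. x \<in> carrier R \<and> x \<ominus>\<^bsub>R\<^esub> r \<in> K}"

definition qrep :: "'a ring \<Rightarrow> 'a set \<Rightarrow> 'a list set \<Rightarrow> 'a" where
  "qrep R K X = (SOME r. r \<in> carrier R \<and> X = cosl R K r)"

definition qmod :: "'a ring \<Rightarrow> 'a set \<Rightarrow> ('a, 'a list set) module" where
  "qmod R K = \<lparr> carrier = cosl R K ` carrier R, monoid.mult = (\<lambda>X Y. undefined), one = undefined,
     zero = cosl R K \<zero>\<^bsub>R\<^esub>,
     add = (\<lambda>X Y. cosl R K (qrep R K X \<oplus>\<^bsub>R\<^esub> qrep R K Y)),
     smult = (\<lambda>a X. cosl R K (a \<otimes>\<^bsub>R\<^esub> qrep R K X)) \<rparr>"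

locale cr = cring R for R :: "'a ring" (structure)
context cr begin

lemma cosl_eq:
  assumes K: "ideal K R" and x: "x \<in> carrier R" and y: "y \<in> carrier R"
  shows "cosl R K x = cosl R K y \<longleftrightarrow> x \<ominus> y \<in> K"
proof
  assume e: "cosl R K x = cosl R K y"
  have "x \<ominus> x = \<zero>" using x by algebra
  then have "x \<ominus> x \<in> K" using additive_subgroup.zero_closed[OF ideal.axioms(1)[OF K]] by simp
  then have "[x] \<in> cosl R K x" using x unfolding cosl_def by auto
  then show "x \<ominus> y \<in> K" using e unfolding cosl_def by auto
next
  assume h: "x \<ominus> y \<in> K"
  have Ks: "K \<subseteq> carrier R" using K by (simp add: ideal.axioms(1) additive_subgroup.a_subset)
  have "z \<ominus> x \<in> K \<longleftrightarrow> z \<ominus> y \<in> K" if z: "z \<in> carrier R" for z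
  proof
    assume "z \<ominus> x \<in> K"
    then have "(z \<ominus> x) \<oplus> (x \<ominus> y) \<in> K" using h K
      by (simp add: additive_subgroup.a_closed ideal.axioms(1))
    moreover have "(z \<ominus> x) \<oplus> (x \<ominus> y) = z \<ominus> y" using x y z by algebra
    ultimately show "z \<ominus> y \<in> K" by simp
  next
    assume "z \<ominus> y \<in> K"
    moreover have "\<ominus> (x \<ominus> y) \<in> K" using h K
      by (simp add: additive_subgroup.a_inv_closed ideal.axioms(1))
    ultimately have "(z \<ominus> y) \<oplus> \<ominus> (x \<ominus> y) \<in> K" using K
      by (simp add: additive_subgroup.a_closed ideal.axioms(1))
    moreover have "(z \<ominus> y) \<oplus> \<ominus> (x \<ominus> y) = z \<ominus> x" using x y z by algebra
    ultimately show "z \<ominus> x \<in> K" by simp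
  qed
  then show "cosl R K x = cosl R K y" unfolding cosl_def by blast
qed

lemma ideal_diff_closed:
  assumes K: "ideal K R" and "a \<in> K" "b \<in> K"
  shows "a \<ominus> b \<in> K"
  using assms unfolding a_minus_def
  by (simp add: additive_subgroup.a_closed additive_subgroup.a_inv_closed ideal.axioms(1))

lemma qrep:
  assumes K: "ideal K R" and x: "x \<in> carrier R"
  shows "qrep R K (cosl R K x) \<in> carrier R" "cosl R K (qrep R K (cosl R K x)) = cosl R K x"
    "qrep R K (cosl R K x) \<ominus> x \<in> K"
proof -
  have "\<exists>r. r \<in> carrier R \<and> cosl R K x = cosl R K r" using x by blast
  then have h: "qrep R K (cosl R K x) \<in> carrier R \<and> cosl R K x = cosl R K (qrep R K (cosl R K x))"
    unfolding qrep_def by (rule someI_ex)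
  then show "qrep R K (cosl R K x) \<in> carrier R" "cosl R K (qrep R K (cosl R K x)) = cosl R K x" by auto
  then show "qrep R K (cosl R K x) \<ominus> x \<in> K" using cosl_eq[OF K] x by blast
qed

lemma qmod_add:
  assumes K: "ideal K R" and x: "x \<in> carrier R" and y: "y \<in> carrier R"
  shows "cosl R K x \<oplus>\<^bsub>qmod R K\<^esub> cosl R K y = cosl R K (x \<oplus> y)"
proof -
  let ?x = "qrep R K (cosl R K x)" and ?y = "qrep R K (cosl R K y)"
  have c: "?x \<in> carrier R" "?y \<in> carrier R" using qrep[OF K] x y by auto
  have "(?x \<ominus> x) \<oplus> (?y \<ominus> y) \<in> K" using qrep[OF K] x y K
    by (simp add: additive_subgroup.a_closed ideal.axioms(1))
  moreover have "(?x \<ominus> x) \<oplus> (?y \<ominus> y) = (?x \<oplus> ?y) \<ominus> (x \<oplus> y)" using c x y by algebra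
  ultimately show ?thesis unfolding qmod_def using cosl_eq[OF K] c x y by simp
qed

lemma qmod_smult:
  assumes K: "ideal K R" and a: "a \<in> carrier R" and x: "x \<in> carrier R"
  shows "a \<odot>\<^bsub>qmod R K\<^esub> cosl R K x = cosl R K (a \<otimes> x)"
proof -
  let ?x = "qrep R K (cosl R K x)"
  have c: "?x \<in> carrier R" using qrep[OF K] x by auto
  have "a \<otimes> (?x \<ominus> x) \<in> K" using qrep[OF K] x K a
    by (simp add: ideal.I_l_closed)
  moreover have "a \<otimes> (?x \<ominus> x) = (a \<otimes> ?x) \<ominus> (a \<otimes> x)" using c x a by algebra
  ultimately show ?thesis unfolding qmod_def using cosl_eq[OF K] c x a by simp
qed

lemma qmod_zero: "\<zero>\<^bsub>qmod R K\<^esub> = cosl R K \<zero>" unfolding qmod_def by simp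
lemma qmod_carrier: "carrier (qmod R K) = cosl R K ` carrier R" unfolding qmod_def by simp

lemma qmod_module:
  assumes K: "ideal K R"
  shows "module R (qmod R K)"
proof (rule moduleI)
  show "cring R" by (rule is_cring)
  show "abelian_group (qmod R K)"
  proof (rule abelian_groupI)
    fix X Y assume "X \<in> carrier (qmod R K)" "Y \<in> carrier (qmod R K)"
    then obtain x y where "x \<in> carrier R" "y \<in> carrier R" "X = cosl R K x" "Y = cosl R K y"
      by (auto simp: qmod_carrier)
    then show "X \<oplus>\<^bsub>qmod R K\<^esub> Y \<in> carrier (qmod R K)"
      by (simp add: qmod_add[OF K] qmod_carrier)
  next
    show "\<zero>\<^bsub>qmod R K\<^esub> \<in> carrier (qmod R K)" by (simp add: qmod_zero qmod_carrier)
  next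
    fix X Y Z assume "X \<in> carrier (qmod R K)" "Y \<in> carrier (qmod R K)" "Z \<in> carrier (qmod R K)"
    then obtain x y z where "x \<in> carrier R" "y \<in> carrier R" "z \<in> carrier R"
       "X = cosl R K x" "Y = cosl R K y" "Z = cosl R K z"
      by (auto simp: qmod_carrier)
    then show "X \<oplus>\<^bsub>qmod R K\<^esub> Y \<oplus>\<^bsub>qmod R K\<^esub> Z = X \<oplus>\<^bsub>qmod R K\<^esub> (Y \<oplus>\<^bsub>qmod R K\<^esub> Z)"
      by (simp add: qmod_add[OF K] a_assoc)
  next
    fix X Y assume "X \<in> carrier (qmod R K)" "Y \<in> carrier (qmod R K)"
    then obtain x y where "x \<in> carrier R" "y \<in> carrier R" "X = cosl R K x" "Y = cosl R K y"
      by (auto simp: qmod_carrier)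
    then show "X \<oplus>\<^bsub>qmod R K\<^esub> Y = Y \<oplus>\<^bsub>qmod R K\<^esub> X"
      by (simp add: qmod_add[OF K] a_comm)
  next
    fix X assume "X \<in> carrier (qmod R K)"
    then obtain x where "x \<in> carrier R" "X = cosl R K x"
      by (auto simp: qmod_carrier)
    then show "\<zero>\<^bsub>qmod R K\<^esub> \<oplus>\<^bsub>qmod R K\<^esub> X = X"
      by (simp add: qmod_add[OF K] qmod_zero)
  next
    fix X assume "X \<in> carrier (qmod R K)"
    then obtain x where x: "x \<in> carrier R" "X = cosl R K x"
      by (auto simp: qmod_carrier)
    then have "cosl R K (\<ominus> x) \<oplus>\<^bsub>qmod R K\<^esub> X = \<zero>\<^bsub>qmod R K\<^esub>"
      by (simp add: qmod_add[OF K] qmod_zero l_neg)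
    then show "\<exists>Y\<in>carrier (qmod R K). Y \<oplus>\<^bsub>qmod R K\<^esub> X = \<zero>\<^bsub>qmod R K\<^esub>"
      using x by (auto simp: qmod_carrier)
  qed
next
  fix a X assume "a \<in> carrier R" "X \<in> carrier (qmod R K)"
  then show "a \<odot>\<^bsub>qmod R K\<^esub> X \<in> carrier (qmod R K)"
    by (auto simp: qmod_carrier qmod_smult[OF K])
next
  fix a b X assume "a \<in> carrier R" "b \<in> carrier R" "X \<in> carrier (qmod R K)"
  then show "(a \<oplus> b) \<odot>\<^bsub>qmod R K\<^esub> X = a \<odot>\<^bsub>qmod R K\<^esub> X \<oplus>\<^bsub>qmod R K\<^esub> b \<odot>\<^bsub>qmod R K\<^esub> X"
    by (auto simp: qmod_carrier qmod_smult[OF K] qmod_add[OF K] l_distr)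
next
  fix a X Y assume "a \<in> carrier R" "X \<in> carrier (qmod R K)" "Y \<in> carrier (qmod R K)"
  then show "a \<odot>\<^bsub>qmod R K\<^esub> (X \<oplus>\<^bsub>qmod R K\<^esub> Y) = a \<odot>\<^bsub>qmod R K\<^esub> X \<oplus>\<^bsub>qmod R K\<^esub> a \<odot>\<^bsub>qmod R K\<^esub> Y"
    by (auto simp: qmod_carrier qmod_smult[OF K] qmod_add[OF K] r_distr)
next
  fix a b X assume "a \<in> carrier R" "b \<in> carrier R" "X \<in> carrier (qmod R K)"
  then show "(a \<otimes> b) \<odot>\<^bsub>qmod R K\<^esub> X = a \<odot>\<^bsub>qmod R K\<^esub> (b \<odot>\<^bsub>qmod R K\<^esub> X)"
    by (auto simp: qmod_carrier qmod_smult[OF K] m_assoc)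
next
  fix X assume "X \<in> carrier (qmod R K)"
  then show "\<one> \<odot>\<^bsub>qmod R K\<^esub> X = X"
    by (auto simp: qmod_carrier qmod_smult[OF K])
qed

end

context cr begin

lemma minus_zero_eq: "x \<in> carrier R \<Longrightarrow> y \<in> carrier R \<Longrightarrow> x \<ominus> y = \<zero> \<Longrightarrow> x = y"
proof -
  assume a: "x \<in> carrier R" "y \<in> carrier R" "x \<ominus> y = \<zero>"
  have "x = (x \<ominus> y) \<oplus> y" using a(1,2) by algebra
  then show "x = y" using a by simp
qed

lemma qrep0: "x \<in> carrier R \<Longrightarrow> qrep R {\<zero>} (cosl R {\<zero>} x) = x"
  using qrep[OF zeroideal, of x] minus_zero_eq by blast

lemma cosl0_inj: "x \<in> carrier R \<Longrightarrow> y \<in> carrier R \<Longrightarrow> cosl R {\<zero>} x = cosl R {\<zero>} y \<Longrightarrow> x = y"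
  by (metis qrep0)

lemma injective_ideal_ext:
  assumes N: "module R N" and inj: "injective_module R N" and J: "ideal J R"
    and phi_c: "\<And>j. j \<in> J \<Longrightarrow> phi j \<in> carrier N"
    and phi_add: "\<And>i j. i \<in> J \<Longrightarrow> j \<in> J \<Longrightarrow> phi (i \<oplus> j) = phi i \<oplus>\<^bsub>N\<^esub> phi j"
    and phi_smult: "\<And>r j. r \<in> carrier R \<Longrightarrow> j \<in> J \<Longrightarrow> phi (r \<otimes> j) = r \<odot>\<^bsub>N\<^esub> phi j"
  shows "\<exists>n \<in> carrier N. \<forall>j \<in> J. phi j = j \<odot>\<^bsub>N\<^esub> n"
proof -
  have Jc: "J \<subseteq> carrier R" using J by (simp add: ideal.axioms(1) additive_subgroup.a_subset)
  define B0 where "B0 = qmod R {\<zero>}"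
  define A0 where "A0 = B0\<lparr>carrier := cosl R {\<zero>} ` J\<rparr>"
  have B0: "module R B0" unfolding B0_def by (rule qmod_module[OF zeroideal])
  interpret B0: module R B0 by (rule B0)
  have sub: "submodule (cosl R {\<zero>} ` J) R B0"
  proof (rule B0.submoduleI)
    show "cosl R {\<zero>} ` J \<subseteq> carrier B0" using Jc by (auto simp: B0_def qmod_carrier)
    show "\<zero>\<^bsub>B0\<^esub> \<in> cosl R {\<zero>} ` J" using J
      by (simp add: B0_def qmod_zero additive_subgroup.zero_closed ideal.axioms(1))
    show "\<ominus>\<^bsub>B0\<^esub> a \<in> cosl R {\<zero>} ` J" if "a \<in> cosl R {\<zero>} ` J" for a
    proof -
      from that obtain j where j: "j \<in> J" "a = cosl R {\<zero>} j" by blast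
      have jc: "j \<in> carrier R" using j Jc by auto
      have "(\<ominus> \<one>) \<odot>\<^bsub>B0\<^esub> a = \<ominus>\<^bsub>B0\<^esub> a"
        using B0.smult_l_minus[of \<one> a] j jc by (simp add: B0_def qmod_carrier qmod_smult[OF zeroideal])
      moreover have "(\<ominus> \<one>) \<odot>\<^bsub>B0\<^esub> a = cosl R {\<zero>} (\<ominus> \<one> \<otimes> j)"
        using j jc by (simp add: B0_def qmod_smult[OF zeroideal])
      moreover have "\<ominus> \<one> \<otimes> j \<in> J" using J j by (simp add: ideal.I_l_closed)
      ultimately show ?thesis by auto
    qed
    show "a \<oplus>\<^bsub>B0\<^esub> b \<in> cosl R {\<zero>} ` J" if "a \<in> cosl R {\<zero>} ` J" "b \<in> cosl R {\<zero>} ` J" for a b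
    proof -
      from that obtain i j where ij: "i \<in> J" "j \<in> J" "a = cosl R {\<zero>} i" "b = cosl R {\<zero>} j" by blast
      then have "a \<oplus>\<^bsub>B0\<^esub> b = cosl R {\<zero>} (i \<oplus> j)" using subsetD[OF Jc ij(1)] subsetD[OF Jc ij(2)]
        by (simp add: B0_def qmod_add[OF zeroideal])
      moreover have "i \<oplus> j \<in> J" using ij J by (simp add: additive_subgroup.a_closed ideal.axioms(1))
      ultimately show ?thesis by blast
    qed
    show "a \<odot>\<^bsub>B0\<^esub> x \<in> cosl R {\<zero>} ` J" if "a \<in> carrier R" "x \<in> cosl R {\<zero>} ` J" for a x
      using that Jc J by (auto simp: B0_def qmod_smult[OF zeroideal] ideal.I_l_closed)
  qed
  have A0: "module R A0" unfolding A0_def by (rule submodule.submodule_is_module[OF sub B0])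
  have f: "id \<in> module_hom R A0 B0" "inj_on id (carrier A0)"
    using Jc by (auto simp: module_hom_def A0_def B0_def qmod_carrier)
  define g where "g = (\<lambda>X. phi (qrep R {\<zero>} X))"
  have g: "g \<in> module_hom R A0 N"
    unfolding module_hom_def
  proof (intro CollectI conjI ballI)
    show "g \<in> carrier A0 \<rightarrow> carrier N" using Jc by (auto simp: A0_def g_def qrep0 phi_c)
  next
    fix x y assume "x \<in> carrier A0" "y \<in> carrier A0"
    then obtain i j where "i \<in> J" "j \<in> J" "x = cosl R {\<zero>} i" "y = cosl R {\<zero>} j" by (auto simp: A0_def)
    then show "g (x \<oplus>\<^bsub>A0\<^esub> y) = g x \<oplus>\<^bsub>N\<^esub> g y" using Jc subsetD[OF Jc \<open>i \<in> J\<close>] subsetD[OF Jc \<open>j \<in> J\<close>]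
      by (auto simp: A0_def B0_def g_def qmod_add[OF zeroideal] qrep0 phi_add)
  next
    fix a x assume "a \<in> carrier R" "x \<in> carrier A0"
    then obtain j where "j \<in> J" "x = cosl R {\<zero>} j" by (auto simp: A0_def)
    then show "g (a \<odot>\<^bsub>A0\<^esub> x) = a \<odot>\<^bsub>N\<^esub> g x" using Jc \<open>a \<in> carrier R\<close> subsetD[OF Jc \<open>j \<in> J\<close>]
      by (auto simp: A0_def B0_def g_def qmod_smult[OF zeroideal] qrep0 phi_smult)
  qed
  obtain h where h: "h \<in> module_hom R B0 N" "\<forall>x \<in> carrier A0. h (id x) = g x"
    using inj[unfolded injective_module_def, rule_format, of A0 B0 id g] A0 B0 f g by blast
  define n where "n = h (cosl R {\<zero>} \<one>)"
  have "n \<in> carrier N" using h(1) by (auto simp: n_def module_hom_def B0_def qmod_carrier)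
  moreover have "phi j = j \<odot>\<^bsub>N\<^esub> n" if j: "j \<in> J" for j
  proof -
    have jc: "j \<in> carrier R" using j Jc by auto
    have "phi j = g (cosl R {\<zero>} j)" by (simp add: g_def qrep0 jc)
    also have "\<dots> = h (cosl R {\<zero>} j)" using h(2) j by (auto simp: A0_def)
    also have "cosl R {\<zero>} j = j \<odot>\<^bsub>B0\<^esub> cosl R {\<zero>} \<one>" using jc by (simp add: B0_def qmod_smult[OF zeroideal])
    also have "h \<dots> = j \<odot>\<^bsub>N\<^esub> n" using h(1) jc unfolding n_def module_hom_def
      by (auto simp: B0_def qmod_carrier)
    finally show ?thesis .
  qed
  ultimately show ?thesis by blast
qed

end

definition good_ext :: "'a ring \<Rightarrow> ('a, 'b) module \<Rightarrow> ('a, 'n) module \<Rightarrow> 'b set \<Rightarrow> ('b \<Rightarrow> 'n) \<Rightarrow> ('b \<times> 'n) set \<Rightarrow> bool" where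
  "good_ext R B N A phi G \<longleftrightarrow> (\<forall>x u v. (x,u)\<in>G \<longrightarrow> (x,v)\<in>G \<longrightarrow> u = v)
     \<and> (\<forall>x u. (x,u)\<in>G \<longrightarrow> x \<in> carrier B \<and> u \<in> carrier N)
     \<and> (\<forall>x u y v. (x,u)\<in>G \<longrightarrow> (y,v)\<in>G \<longrightarrow> (x \<oplus>\<^bsub>B\<^esub> y, u \<oplus>\<^bsub>N\<^esub> v) \<in> G)
     \<and> (\<forall>r x u. r \<in> carrier R \<longrightarrow> (x,u)\<in>G \<longrightarrow> (r \<odot>\<^bsub>B\<^esub> x, r \<odot>\<^bsub>N\<^esub> u) \<in> G)
     \<and> (\<forall>a\<in>A. (a, phi a) \<in> G)"

lemma good_Union:
  assumes ne: "CC \<noteq> {}" and g: "\<And>G. G \<in> CC \<Longrightarrow> good_ext R B N A phi G"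
    and ch: "\<And>G H. G \<in> CC \<Longrightarrow> H \<in> CC \<Longrightarrow> G \<subseteq> H \<or> H \<subseteq> G"
  shows "good_ext R B N A phi (\<Union>CC)"
proof -
  have two: "\<exists>G\<in>CC. p \<in> G \<and> q \<in> G" if pq: "p \<in> \<Union>CC" "q \<in> \<Union>CC" for p q
  proof -
    obtain G1 G2 where "G1 \<in> CC" "G2 \<in> CC" "p \<in> G1" "q \<in> G2" using pq by blast
    then show ?thesis using ch[of G1 G2] by blast
  qed
  show ?thesis unfolding good_ext_def
  proof (intro conjI allI impI ballI)
    fix x u v assume "(x,u) \<in> \<Union>CC" "(x,v) \<in> \<Union>CC"
    then obtain G where "G \<in> CC" "(x,u) \<in> G" "(x,v) \<in> G" using two by blast
    then show "u = v" using g[of G] unfolding good_ext_def by blast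
  next
    fix x u assume "(x,u) \<in> \<Union>CC"
    then obtain G where "G \<in> CC" "(x,u) \<in> G" by blast
    then show "x \<in> carrier B" "u \<in> carrier N" using g[of G] unfolding good_ext_def by blast+
  next
    fix x u y v assume "(x,u) \<in> \<Union>CC" "(y,v) \<in> \<Union>CC"
    then obtain G where "G \<in> CC" "(x,u) \<in> G" "(y,v) \<in> G" using two by blast
    then show "(x \<oplus>\<^bsub>B\<^esub> y, u \<oplus>\<^bsub>N\<^esub> v) \<in> \<Union>CC" using g[of G] unfolding good_ext_def by blast
  next
    fix r x u assume "r \<in> carrier R" "(x,u) \<in> \<Union>CC"
    then obtain G where "G \<in> CC" "(x,u) \<in> G" by blast
    then show "(r \<odot>\<^bsub>B\<^esub> x, r \<odot>\<^bsub>N\<^esub> u) \<in> \<Union>CC" using g[of G] \<open>r \<in> carrier R\<close> unfolding good_ext_def by blast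
  next
    fix a assume "a \<in> A"
    obtain G where "G \<in> CC" using ne by blast
    then show "(a, phi a) \<in> \<Union>CC" using g[of G] \<open>a \<in> A\<close> unfolding good_ext_def by blast
  qed
qed

context cr begin

lemma baer_extend:
  fixes B :: "('a, 'b) module" and N :: "('a, 'n) module"
  assumes N: "module R N" and B: "module R B"
    and ext: "\<And>J psi. ideal J R \<Longrightarrow> (\<And>j. j \<in> J \<Longrightarrow> psi j \<in> carrier N)
       \<Longrightarrow> (\<And>i j. i \<in> J \<Longrightarrow> j \<in> J \<Longrightarrow> psi (i \<oplus> j) = psi i \<oplus>\<^bsub>N\<^esub> psi j)
       \<Longrightarrow> (\<And>r j. r \<in> carrier R \<Longrightarrow> j \<in> J \<Longrightarrow> psi (r \<otimes> j) = r \<odot>\<^bsub>N\<^esub> psi j)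
       \<Longrightarrow> \<exists>n\<in>carrier N. \<forall>j\<in>J. psi j = j \<odot>\<^bsub>N\<^esub> n"
    and A: "A \<subseteq> carrier B" "\<zero>\<^bsub>B\<^esub> \<in> A"
      "\<And>x y. x \<in> A \<Longrightarrow> y \<in> A \<Longrightarrow> x \<oplus>\<^bsub>B\<^esub> y \<in> A"
      "\<And>r x. r \<in> carrier R \<Longrightarrow> x \<in> A \<Longrightarrow> r \<odot>\<^bsub>B\<^esub> x \<in> A"
    and phi: "\<And>x. x \<in> A \<Longrightarrow> phi x \<in> carrier N"
      "\<And>x y. x \<in> A \<Longrightarrow> y \<in> A \<Longrightarrow> phi (x \<oplus>\<^bsub>B\<^esub> y) = phi x \<oplus>\<^bsub>N\<^esub> phi y"
      "\<And>r x. r \<in> carrier R \<Longrightarrow> x \<in> A \<Longrightarrow> phi (r \<odot>\<^bsub>B\<^esub> x) = r \<odot>\<^bsub>N\<^esub> phi x"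
  shows "\<exists>h\<in>module_hom R B N. \<forall>x\<in>A. h x = phi x"
proof -
  interpret Bm: module R B by (rule B)
  interpret Nm: module R N by (rule N)
  define Gs where "Gs = {G. good_ext R B N A phi G}"
  define G0 where "G0 = {(a, phi a) | a. a \<in> A}"
  have G0: "good_ext R B N A phi G0"
    unfolding good_ext_def
  proof (intro conjI allI impI ballI)
    fix x u v assume "(x,u) \<in> G0" "(x,v) \<in> G0" then show "u = v" by (auto simp: G0_def)
  next
    fix x u assume "(x,u) \<in> G0" then show "x \<in> carrier B" "u \<in> carrier N" using A(1) phi(1) by (auto simp: G0_def)
  next
    fix x u y v assume "(x,u) \<in> G0" "(y,v) \<in> G0"
    then show "(x \<oplus>\<^bsub>B\<^esub> y, u \<oplus>\<^bsub>N\<^esub> v) \<in> G0" using A(3) phi(2) by (auto simp: G0_def)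
  next
    fix r x u assume "r \<in> carrier R" "(x,u) \<in> G0"
    then show "(r \<odot>\<^bsub>B\<^esub> x, r \<odot>\<^bsub>N\<^esub> u) \<in> G0" using A(4) phi(3) by (auto simp: G0_def)
  next
    fix a assume "a \<in> A" then show "(a, phi a) \<in> G0" by (auto simp: G0_def)
  qed
  have "\<forall>C\<in>chains Gs. \<exists>U\<in>Gs. \<forall>X\<in>C. X \<subseteq> U"
  proof
    fix C assume C: "C \<in> chains Gs"
    have gC: "good_ext R B N A phi G" if "G \<in> C" for G
      using that C unfolding chains_def Gs_def by blast
    have sub: "G0 \<subseteq> G" if GC: "G \<in> C" for G
    proof -
      have "\<forall>a\<in>A. (a, phi a) \<in> G" using gC[OF GC] unfolding good_ext_def by blast
      then show ?thesis unfolding G0_def by blast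
    qed
    have "good_ext R B N A phi (\<Union>(insert G0 C))"
    proof (rule good_Union)
      show "insert G0 C \<noteq> {}" by simp
      show "good_ext R B N A phi G" if "G \<in> insert G0 C" for G
        using that G0 gC by blast
      have ch: "G \<subseteq> H \<or> H \<subseteq> G" if "G \<in> C" "H \<in> C" for G H
        using that C unfolding chains_def chain_subset_def by blast
      show "G \<subseteq> H \<or> H \<subseteq> G" if GH: "G \<in> insert G0 C" "H \<in> insert G0 C" for G H
      proof -
        consider "G = G0" | "H = G0" | "G \<in> C \<and> H \<in> C" using GH by blast
        then show ?thesis
        proof cases
          case 1 then show ?thesis using GH sub by blast
        next
          case 2 then show ?thesis using GH sub by blast
        next
          case 3 then show ?thesis using ch by blast
        qed
      qed
    qed
    moreover have "\<forall>X\<in>C. X \<subseteq> \<Union>(insert G0 C)" by blast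
    ultimately show "\<exists>U\<in>Gs. \<forall>X\<in>C. X \<subseteq> U" unfolding Gs_def by (intro bexI[of _ "\<Union>(insert G0 C)"]) auto
  qed
  from Zorn_Lemma2[OF this] obtain Gm where Gm: "Gm \<in> Gs" and max: "\<And>X. X \<in> Gs \<Longrightarrow> Gm \<subseteq> X \<Longrightarrow> X = Gm"
    by blast
  have gm: "good_ext R B N A phi Gm" using Gm by (simp add: Gs_def)
  have fnc: "\<And>x u v. (x,u)\<in>Gm \<Longrightarrow> (x,v)\<in>Gm \<Longrightarrow> u = v"
    and car: "\<And>x u. (x,u)\<in>Gm \<Longrightarrow> x \<in> carrier B \<and> u \<in> carrier N"
    and add: "\<And>x u y v. (x,u)\<in>Gm \<Longrightarrow> (y,v)\<in>Gm \<Longrightarrow> (x \<oplus>\<^bsub>B\<^esub> y, u \<oplus>\<^bsub>N\<^esub> v) \<in> Gm"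
    and sm: "\<And>r x u. r \<in> carrier R \<Longrightarrow> (x,u)\<in>Gm \<Longrightarrow> (r \<odot>\<^bsub>B\<^esub> x, r \<odot>\<^bsub>N\<^esub> u) \<in> Gm"
    and inA: "\<And>a. a\<in>A \<Longrightarrow> (a, phi a) \<in> Gm"
    using gm[unfolded good_ext_def] by simp_all
  have zero: "(\<zero>\<^bsub>B\<^esub>, \<zero>\<^bsub>N\<^esub>) \<in> Gm"
  proof -
    have "(\<zero> \<odot>\<^bsub>B\<^esub> \<zero>\<^bsub>B\<^esub>, \<zero> \<odot>\<^bsub>N\<^esub> phi \<zero>\<^bsub>B\<^esub>) \<in> Gm" using sm[OF zero_closed inA[OF A(2)]] .
    then show ?thesis using phi(1)[OF A(2)] by simp
  qed
  have neg: "(\<ominus>\<^bsub>B\<^esub> x, \<ominus>\<^bsub>N\<^esub> u) \<in> Gm" if "(x,u) \<in> Gm" for x u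
  proof -
    have "((\<ominus> \<one>) \<odot>\<^bsub>B\<^esub> x, (\<ominus> \<one>) \<odot>\<^bsub>N\<^esub> u) \<in> Gm" using sm[OF _ that] by simp
    then show ?thesis using car[OF that] by (simp add: Bm.smult_l_minus Nm.smult_l_minus)
  qed
  define val where "val x = (THE u. (x,u) \<in> Gm)" for x
  have val: "(x, val x) \<in> Gm" if xD: "x \<in> Domain Gm" for x
  proof -
    obtain u where u: "(x,u) \<in> Gm" using xD by blast
    have "(THE u. (x,u) \<in> Gm) = u" using u fnc by (intro the_equality) auto
    then show ?thesis using u by (simp add: val_def)
  qed
  have val_eq: "val x = u" if "(x,u) \<in> Gm" for x u
    using fnc[OF val[of x] that] that by blast
  have dom: "Domain Gm = carrier B"
  proof (rule ccontr)
    assume "Domain Gm \<noteq> carrier B"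
    moreover have "Domain Gm \<subseteq> carrier B" using car by blast
    ultimately obtain b where b: "b \<in> carrier B" "b \<notin> Domain Gm" by blast
    define J where "J = {r \<in> carrier R. r \<odot>\<^bsub>B\<^esub> b \<in> Domain Gm}"
    have Jadd: "r \<oplus> s \<in> J" if "r \<in> J" "s \<in> J" for r s
    proof -
      have "(r \<odot>\<^bsub>B\<^esub> b \<oplus>\<^bsub>B\<^esub> s \<odot>\<^bsub>B\<^esub> b, val (r \<odot>\<^bsub>B\<^esub> b) \<oplus>\<^bsub>N\<^esub> val (s \<odot>\<^bsub>B\<^esub> b)) \<in> Gm"
        using that add val unfolding J_def by blast
      then show ?thesis using that b by (auto simp: J_def Bm.smult_l_distr)
    qed
    have Jsm: "x \<otimes> r \<in> J" if "r \<in> J" "x \<in> carrier R" for r x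
    proof -
      have "(x \<odot>\<^bsub>B\<^esub> (r \<odot>\<^bsub>B\<^esub> b), x \<odot>\<^bsub>N\<^esub> val (r \<odot>\<^bsub>B\<^esub> b)) \<in> Gm"
        using that sm val unfolding J_def by blast
      then show ?thesis using that b by (auto simp: J_def Bm.smult_assoc1)
    qed
    have Jideal: "ideal J R"
    proof (rule idealI)
      show "ring R" by (rule ring_axioms)
      show "subgroup J (add_monoid R)"
      proof (rule subgroup.intro)
        show "J \<subseteq> carrier (add_monoid R)" by (auto simp: J_def)
        show "x \<otimes>\<^bsub>add_monoid R\<^esub> y \<in> J" if "x \<in> J" "y \<in> J" for x y using Jadd that by simp
        show "\<one>\<^bsub>add_monoid R\<^esub> \<in> J" using zero b by (auto simp: J_def)
        show "inv\<^bsub>add_monoid R\<^esub> x \<in> J" if "x \<in> J" for x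
        proof -
          have "(\<ominus> \<one>) \<otimes> x \<in> J" using Jsm that by simp
          then have "\<ominus> x \<in> J" using that by (simp add: J_def l_minus)
          then show ?thesis by (simp add: a_inv_def)
        qed
      qed
      show "x \<otimes> a \<in> J" if "a \<in> J" "x \<in> carrier R" for a x using Jsm that by blast
      show "a \<otimes> x \<in> J" if "a \<in> J" "x \<in> carrier R" for a x
        using Jsm that m_comm[of a x] by (auto simp: J_def)
    qed
    define psi where "psi r = val (r \<odot>\<^bsub>B\<^esub> b)" for r
    obtain n where n: "n \<in> carrier N" "\<And>j. j \<in> J \<Longrightarrow> psi j = j \<odot>\<^bsub>N\<^esub> n"
    proof -
      have "\<exists>n\<in>carrier N. \<forall>j\<in>J. psi j = j \<odot>\<^bsub>N\<^esub> n"
      proof (rule ext[OF Jideal])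
        show "psi j \<in> carrier N" if "j \<in> J" for j
          using that car val unfolding psi_def J_def by blast
        show "psi (i \<oplus> j) = psi i \<oplus>\<^bsub>N\<^esub> psi j" if "i \<in> J" "j \<in> J" for i j
        proof -
          have "(i \<odot>\<^bsub>B\<^esub> b \<oplus>\<^bsub>B\<^esub> j \<odot>\<^bsub>B\<^esub> b, psi i \<oplus>\<^bsub>N\<^esub> psi j) \<in> Gm"
            using that add val unfolding J_def psi_def by blast
          then show ?thesis using that b val_eq unfolding psi_def J_def by (simp add: Bm.smult_l_distr)
        qed
        show "psi (r \<otimes> j) = r \<odot>\<^bsub>N\<^esub> psi j" if "r \<in> carrier R" "j \<in> J" for r j
        proof -
          have "(r \<odot>\<^bsub>B\<^esub> (j \<odot>\<^bsub>B\<^esub> b), r \<odot>\<^bsub>N\<^esub> psi j) \<in> Gm"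
            using that sm val unfolding J_def psi_def by blast
          then show ?thesis using that b val_eq unfolding psi_def J_def by (simp add: Bm.smult_assoc1)
        qed
      qed
      then show ?thesis using that by blast
    qed
    define G' where "G' = {(x \<oplus>\<^bsub>B\<^esub> r \<odot>\<^bsub>B\<^esub> b, u \<oplus>\<^bsub>N\<^esub> r \<odot>\<^bsub>N\<^esub> n) | x u r. (x,u) \<in> Gm \<and> r \<in> carrier R}"
    have G'good: "good_ext R B N A phi G'"
      unfolding good_ext_def
    proof (intro conjI allI impI ballI)
      fix z w w' assume "(z,w) \<in> G'" "(z,w') \<in> G'"
      then obtain x u r y v s where xu: "(x,u) \<in> Gm" "r \<in> carrier R" "z = x \<oplus>\<^bsub>B\<^esub> r \<odot>\<^bsub>B\<^esub> b" "w = u \<oplus>\<^bsub>N\<^esub> r \<odot>\<^bsub>N\<^esub> n"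
        and yv: "(y,v) \<in> Gm" "s \<in> carrier R" "z = y \<oplus>\<^bsub>B\<^esub> s \<odot>\<^bsub>B\<^esub> b" "w' = v \<oplus>\<^bsub>N\<^esub> s \<odot>\<^bsub>N\<^esub> n"
        unfolding G'_def by blast
      have c: "x \<in> carrier B" "u \<in> carrier N" "y \<in> carrier B" "v \<in> carrier N" using car xu yv by auto
      have e1: "y \<oplus>\<^bsub>B\<^esub> \<ominus>\<^bsub>B\<^esub> x = r \<odot>\<^bsub>B\<^esub> b \<oplus>\<^bsub>B\<^esub> \<ominus>\<^bsub>B\<^esub> (s \<odot>\<^bsub>B\<^esub> b)"
        using Bm.ag1[of x "r \<odot>\<^bsub>B\<^esub> b" y "s \<odot>\<^bsub>B\<^esub> b"] xu yv c b by simp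
      also have "\<dots> = (r \<oplus> \<ominus> s) \<odot>\<^bsub>B\<^esub> b" using xu yv b by (simp add: Bm.smult_l_distr Bm.smult_l_minus)
      finally have e2: "y \<oplus>\<^bsub>B\<^esub> \<ominus>\<^bsub>B\<^esub> x = (r \<oplus> \<ominus> s) \<odot>\<^bsub>B\<^esub> b" .
      have inG: "(y \<oplus>\<^bsub>B\<^esub> \<ominus>\<^bsub>B\<^esub> x, v \<oplus>\<^bsub>N\<^esub> \<ominus>\<^bsub>N\<^esub> u) \<in> Gm" using add neg xu yv by blast
      have rs: "r \<oplus> \<ominus> s \<in> J" using inG e2 xu yv unfolding J_def by auto
      have "v \<oplus>\<^bsub>N\<^esub> \<ominus>\<^bsub>N\<^esub> u = psi (r \<oplus> \<ominus> s)" using inG e2 val_eq unfolding psi_def by simp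
      also have "\<dots> = (r \<oplus> \<ominus> s) \<odot>\<^bsub>N\<^esub> n" using n rs by blast
      also have "\<dots> = r \<odot>\<^bsub>N\<^esub> n \<oplus>\<^bsub>N\<^esub> \<ominus>\<^bsub>N\<^esub> (s \<odot>\<^bsub>N\<^esub> n)" using xu yv n by (simp add: Nm.smult_l_distr Nm.smult_l_minus)
      finally have "u \<oplus>\<^bsub>N\<^esub> r \<odot>\<^bsub>N\<^esub> n = v \<oplus>\<^bsub>N\<^esub> s \<odot>\<^bsub>N\<^esub> n"
        using Nm.ag2[of u "r \<odot>\<^bsub>N\<^esub> n" v "s \<odot>\<^bsub>N\<^esub> n"] c n xu yv by simp
      then show "w = w'" using xu yv by simp
    next
      fix z w assume "(z,w) \<in> G'"
      then obtain x u r where xu: "(x,u) \<in> Gm" "r \<in> carrier R" "z = x \<oplus>\<^bsub>B\<^esub> r \<odot>\<^bsub>B\<^esub> b" "w = u \<oplus>\<^bsub>N\<^esub> r \<odot>\<^bsub>N\<^esub> n"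
        unfolding G'_def by blast
      then show "z \<in> carrier B" "w \<in> carrier N" using car[OF xu(1)] b n by auto
    next
      fix z w z' w' assume "(z,w) \<in> G'" "(z',w') \<in> G'"
      then obtain x u r y v s where xu: "(x,u) \<in> Gm" "r \<in> carrier R" "z = x \<oplus>\<^bsub>B\<^esub> r \<odot>\<^bsub>B\<^esub> b" "w = u \<oplus>\<^bsub>N\<^esub> r \<odot>\<^bsub>N\<^esub> n"
        and yv: "(y,v) \<in> Gm" "s \<in> carrier R" "z' = y \<oplus>\<^bsub>B\<^esub> s \<odot>\<^bsub>B\<^esub> b" "w' = v \<oplus>\<^bsub>N\<^esub> s \<odot>\<^bsub>N\<^esub> n"
        unfolding G'_def by blast
      have c: "x \<in> carrier B" "u \<in> carrier N" "y \<in> carrier B" "v \<in> carrier N" using car xu yv by auto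
      have "z \<oplus>\<^bsub>B\<^esub> z' = (x \<oplus>\<^bsub>B\<^esub> y) \<oplus>\<^bsub>B\<^esub> (r \<oplus> s) \<odot>\<^bsub>B\<^esub> b"
        using xu yv c b by (simp add: Bm.smult_l_distr Bm.a_ac)
      moreover have "w \<oplus>\<^bsub>N\<^esub> w' = (u \<oplus>\<^bsub>N\<^esub> v) \<oplus>\<^bsub>N\<^esub> (r \<oplus> s) \<odot>\<^bsub>N\<^esub> n"
        using xu yv c n by (simp add: Nm.smult_l_distr Nm.a_ac)
      moreover have "(x \<oplus>\<^bsub>B\<^esub> y, u \<oplus>\<^bsub>N\<^esub> v) \<in> Gm" using add xu yv by blast
      ultimately show "(z \<oplus>\<^bsub>B\<^esub> z', w \<oplus>\<^bsub>N\<^esub> w') \<in> G'" unfolding G'_def using xu yv by blast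
    next
      fix c z w assume cc: "c \<in> carrier R" and "(z,w) \<in> G'"
      then obtain x u r where xu: "(x,u) \<in> Gm" "r \<in> carrier R" "z = x \<oplus>\<^bsub>B\<^esub> r \<odot>\<^bsub>B\<^esub> b" "w = u \<oplus>\<^bsub>N\<^esub> r \<odot>\<^bsub>N\<^esub> n"
        unfolding G'_def by blast
      have cx: "x \<in> carrier B" "u \<in> carrier N" using car xu by auto
      have "c \<odot>\<^bsub>B\<^esub> z = c \<odot>\<^bsub>B\<^esub> x \<oplus>\<^bsub>B\<^esub> (c \<otimes> r) \<odot>\<^bsub>B\<^esub> b"
        using xu cx b cc by (simp add: Bm.smult_r_distr Bm.smult_assoc1)
      moreover have "c \<odot>\<^bsub>N\<^esub> w = c \<odot>\<^bsub>N\<^esub> u \<oplus>\<^bsub>N\<^esub> (c \<otimes> r) \<odot>\<^bsub>N\<^esub> n"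
        using xu cx n cc by (simp add: Nm.smult_r_distr Nm.smult_assoc1)
      moreover have "(c \<odot>\<^bsub>B\<^esub> x, c \<odot>\<^bsub>N\<^esub> u) \<in> Gm" using sm xu cc by blast
      ultimately show "(c \<odot>\<^bsub>B\<^esub> z, c \<odot>\<^bsub>N\<^esub> w) \<in> G'" unfolding G'_def using xu cc by blast
    next
      fix a assume "a \<in> A"
      then have "(a, phi a) \<in> Gm" by (rule inA)
      moreover have "a \<oplus>\<^bsub>B\<^esub> \<zero> \<odot>\<^bsub>B\<^esub> b = a" "phi a \<oplus>\<^bsub>N\<^esub> \<zero> \<odot>\<^bsub>N\<^esub> n = phi a"
        using car[OF calculation] b n by auto
      ultimately show "(a, phi a) \<in> G'" unfolding G'_def by force
    qed
    have "Gm \<subseteq> G'"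
    proof
      fix p assume p: "p \<in> Gm"
      obtain x u where xu: "p = (x,u)" by (cases p)
      have "x \<oplus>\<^bsub>B\<^esub> \<zero> \<odot>\<^bsub>B\<^esub> b = x" "u \<oplus>\<^bsub>N\<^esub> \<zero> \<odot>\<^bsub>N\<^esub> n = u"
        using car[of x u] p xu b n by auto
      then show "p \<in> G'" unfolding G'_def using p xu by force
    qed
    then have "G' = Gm" using max G'good by (simp add: Gs_def)
    moreover have "(b, n) \<in> G'"
    proof -
      have "\<zero>\<^bsub>B\<^esub> \<oplus>\<^bsub>B\<^esub> \<one> \<odot>\<^bsub>B\<^esub> b = b" "\<zero>\<^bsub>N\<^esub> \<oplus>\<^bsub>N\<^esub> \<one> \<odot>\<^bsub>N\<^esub> n = n" using b n by auto
      then show ?thesis unfolding G'_def using zero by force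
    qed
    ultimately show False using b by blast
  qed
  have "val \<in> module_hom R B N"
    unfolding module_hom_def
  proof (intro CollectI conjI ballI)
    show "val \<in> carrier B \<rightarrow> carrier N"
    proof
      fix x assume "x \<in> carrier B" then have "x \<in> Domain Gm" using dom by simp
      then show "val x \<in> carrier N" using car[OF val] by blast
    qed
    show "val (x \<oplus>\<^bsub>B\<^esub> y) = val x \<oplus>\<^bsub>N\<^esub> val y" if xy: "x \<in> carrier B" "y \<in> carrier B" for x y
    proof -
      have "x \<in> Domain Gm" "y \<in> Domain Gm" using dom xy by simp_all
      then show ?thesis by (rule val_eq[OF add[OF val val]])
    qed
    show "val (a \<odot>\<^bsub>B\<^esub> x) = a \<odot>\<^bsub>N\<^esub> val x" if ax: "a \<in> carrier R" "x \<in> carrier B" for a x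
    proof -
      have "x \<in> Domain Gm" using dom ax by simp
      then show ?thesis by (rule val_eq[OF sm[OF ax(1) val]])
    qed
  qed
  moreover have "\<forall>x\<in>A. val x = phi x" using val_eq[OF inA] by blast
  ultimately show ?thesis by blast
qed

end

context cr begin

lemma inj_extend:
  fixes B :: "('a, 'b) module" and N :: "('a, 'n) module"
  assumes N: "module R N" and inj: "injective_module R N" and B: "module R B"
    and A: "A \<subseteq> carrier B" "\<zero>\<^bsub>B\<^esub> \<in> A"
      "\<And>x y. x \<in> A \<Longrightarrow> y \<in> A \<Longrightarrow> x \<oplus>\<^bsub>B\<^esub> y \<in> A"
      "\<And>r x. r \<in> carrier R \<Longrightarrow> x \<in> A \<Longrightarrow> r \<odot>\<^bsub>B\<^esub> x \<in> A"
    and phi: "\<And>x. x \<in> A \<Longrightarrow> phi x \<in> carrier N"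
      "\<And>x y. x \<in> A \<Longrightarrow> y \<in> A \<Longrightarrow> phi (x \<oplus>\<^bsub>B\<^esub> y) = phi x \<oplus>\<^bsub>N\<^esub> phi y"
      "\<And>r x. r \<in> carrier R \<Longrightarrow> x \<in> A \<Longrightarrow> phi (r \<odot>\<^bsub>B\<^esub> x) = r \<odot>\<^bsub>N\<^esub> phi x"
  shows "\<exists>h\<in>module_hom R B N. \<forall>x\<in>A. h x = phi x"
proof (rule baer_extend[OF N B _ A phi])
  fix J and psi :: "'a \<Rightarrow> 'n"
  assume "ideal J R" "\<And>j. j \<in> J \<Longrightarrow> psi j \<in> carrier N"
    "\<And>i j. i \<in> J \<Longrightarrow> j \<in> J \<Longrightarrow> psi (i \<oplus> j) = psi i \<oplus>\<^bsub>N\<^esub> psi j"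
    "\<And>r j. r \<in> carrier R \<Longrightarrow> j \<in> J \<Longrightarrow> psi (r \<otimes> j) = r \<odot>\<^bsub>N\<^esub> psi j"
  then show "\<exists>n\<in>carrier N. \<forall>j\<in>J. psi j = j \<odot>\<^bsub>N\<^esub> n"
    using injective_ideal_ext[OF N inj] by blast
qed

lemma hom_zero:
  assumes M: "module R M" and N: "module R N" and f: "f \<in> module_hom R M N"
  shows "f \<zero>\<^bsub>M\<^esub> = \<zero>\<^bsub>N\<^esub>"
proof -
  interpret M: module R M by (rule M)
  interpret N: module R N by (rule N)
  have "f \<zero>\<^bsub>M\<^esub> = f (\<zero> \<odot>\<^bsub>M\<^esub> \<zero>\<^bsub>M\<^esub>)" by simp
  also have "\<dots> = \<zero> \<odot>\<^bsub>N\<^esub> f \<zero>\<^bsub>M\<^esub>"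
  proof -
    have "\<forall>a\<in>carrier R. \<forall>x\<in>carrier M. f (a \<odot>\<^bsub>M\<^esub> x) = a \<odot>\<^bsub>N\<^esub> f x"
      using f unfolding module_hom_def by blast
    then show ?thesis using zero_closed M.zero_closed by blast
  qed
  also have "\<dots> = \<zero>\<^bsub>N\<^esub>" using f unfolding module_hom_def by (simp add: Pi_iff)
  finally show ?thesis .
qed

lemma separation:
  fixes M :: "('a, 'm) module" and N :: "('a, 'n) module"
  assumes M: "module R M" and N: "module R N" and inj: "injective_module R N"
    and cog: "cogenerator_module R N"
    and U: "U \<subseteq> carrier M" "\<zero>\<^bsub>M\<^esub> \<in> U"
      "\<And>x y. x \<in> U \<Longrightarrow> y \<in> U \<Longrightarrow> x \<oplus>\<^bsub>M\<^esub> y \<in> U"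
      "\<And>r x. r \<in> carrier R \<Longrightarrow> x \<in> U \<Longrightarrow> r \<odot>\<^bsub>M\<^esub> x \<in> U"
    and x: "x \<in> carrier M" "x \<notin> U"
  shows "\<exists>h\<in>module_hom R M N. (\<forall>u\<in>U. h u = \<zero>\<^bsub>N\<^esub>) \<and> h x \<noteq> \<zero>\<^bsub>N\<^esub>"
proof -
  interpret Mm: module R M by (rule M)
  interpret Nm: module R N by (rule N)
  have Uneg: "\<ominus>\<^bsub>M\<^esub> u \<in> U" if "u \<in> U" for u
  proof -
    have "(\<ominus> \<one>) \<odot>\<^bsub>M\<^esub> u \<in> U" using U(4) that by simp
    then show ?thesis using that U(1) by (simp add: Mm.smult_l_minus subsetD)
  qed
  define K where "K = {r \<in> carrier R. r \<odot>\<^bsub>M\<^esub> x \<in> U}"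
  have Kideal: "ideal K R"
  proof (rule idealI)
    show "ring R" by (rule ring_axioms)
    show "subgroup K (add_monoid R)"
    proof (rule subgroup.intro)
      show "K \<subseteq> carrier (add_monoid R)" by (auto simp: K_def)
      show "a \<otimes>\<^bsub>add_monoid R\<^esub> b \<in> K" if "a \<in> K" "b \<in> K" for a b
        using that U(3) x(1) by (auto simp: K_def Mm.smult_l_distr)
      show "\<one>\<^bsub>add_monoid R\<^esub> \<in> K" using U(2) x(1) by (auto simp: K_def)
      show "inv\<^bsub>add_monoid R\<^esub> a \<in> K" if "a \<in> K" for a
      proof -
        have "\<ominus> a \<in> K" using that Uneg x(1) by (auto simp: K_def Mm.smult_l_minus)
        then show ?thesis by (simp add: a_inv_def)
      qed
    qed
    show "b \<otimes> a \<in> K" if "a \<in> K" "b \<in> carrier R" for a b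
      using that U(4) x(1) by (auto simp: K_def Mm.smult_assoc1)
    show "a \<otimes> b \<in> K" if "a \<in> K" "b \<in> carrier R" for a b
      using that U(4) x(1) m_comm[of a b] by (auto simp: K_def Mm.smult_assoc1)
  qed
  define Q where "Q = qmod R K"
  have Q: "module R Q" unfolding Q_def by (rule qmod_module[OF Kideal])
  have "\<one> \<notin> K" using x by (auto simp: K_def)
  moreover have "\<one> \<ominus> \<zero> = \<one>" by algebra
  ultimately have ne: "cosl R K \<one> \<noteq> \<zero>\<^bsub>Q\<^esub>" using cosl_eq[OF Kideal, of \<one> \<zero>]
    by (auto simp: Q_def qmod_zero)
  obtain g where g: "g \<in> module_hom R Q N" "g (cosl R K \<one>) \<noteq> \<zero>\<^bsub>N\<^esub>"
    using cog[unfolded cogenerator_module_def, rule_format, of Q "cosl R K \<one>"] Q ne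
    by (auto simp: Q_def qmod_carrier)
  define A where "A = {u \<oplus>\<^bsub>M\<^esub> r \<odot>\<^bsub>M\<^esub> x | u r. u \<in> U \<and> r \<in> carrier R}"
  define phi where "phi y = g (cosl R K (SOME r. r \<in> carrier R \<and> (\<exists>u\<in>U. y = u \<oplus>\<^bsub>M\<^esub> r \<odot>\<^bsub>M\<^esub> x)))" for y
  have wd: "cosl R K r = cosl R K r'"
    if "u \<in> U" "u' \<in> U" "r \<in> carrier R" "r' \<in> carrier R" "u \<oplus>\<^bsub>M\<^esub> r \<odot>\<^bsub>M\<^esub> x = u' \<oplus>\<^bsub>M\<^esub> r' \<odot>\<^bsub>M\<^esub> x"
    for u u' r r'
  proof -
    have uc: "u \<in> carrier M" "u' \<in> carrier M" using that U(1) by auto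
    have "u' \<oplus>\<^bsub>M\<^esub> \<ominus>\<^bsub>M\<^esub> u = r \<odot>\<^bsub>M\<^esub> x \<oplus>\<^bsub>M\<^esub> \<ominus>\<^bsub>M\<^esub> (r' \<odot>\<^bsub>M\<^esub> x)"
      using Mm.ag1[of u "r \<odot>\<^bsub>M\<^esub> x" u' "r' \<odot>\<^bsub>M\<^esub> x"] that uc x by simp
    also have "\<dots> = (r \<ominus> r') \<odot>\<^bsub>M\<^esub> x" using that x
      by (simp add: a_minus_def Mm.smult_l_distr Mm.smult_l_minus)
    finally have "(r \<ominus> r') \<odot>\<^bsub>M\<^esub> x \<in> U" using U(3) Uneg that by metis
    then have "r \<ominus> r' \<in> K" using that by (simp add: K_def)
    then show ?thesis using cosl_eq[OF Kideal] that by simp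
  qed
  have phi_eq: "phi (u \<oplus>\<^bsub>M\<^esub> r \<odot>\<^bsub>M\<^esub> x) = g (cosl R K r)" if ur: "u \<in> U" "r \<in> carrier R" for u r
  proof -
    let ?P = "\<lambda>s. s \<in> carrier R \<and> (\<exists>u'\<in>U. u \<oplus>\<^bsub>M\<^esub> r \<odot>\<^bsub>M\<^esub> x = u' \<oplus>\<^bsub>M\<^esub> s \<odot>\<^bsub>M\<^esub> x)"
    have "?P r" using ur by blast
    then have "?P (SOME s. ?P s)" by (rule someI)
    then obtain u' where "(SOME s. ?P s) \<in> carrier R" "u' \<in> U"
      "u \<oplus>\<^bsub>M\<^esub> r \<odot>\<^bsub>M\<^esub> x = u' \<oplus>\<^bsub>M\<^esub> (SOME s. ?P s) \<odot>\<^bsub>M\<^esub> x" by blast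
    then have "cosl R K r = cosl R K (SOME s. ?P s)" using wd ur by blast
    then show ?thesis unfolding phi_def by simp
  qed
  have gQ1: "g (X \<oplus>\<^bsub>Q\<^esub> Y) = g X \<oplus>\<^bsub>N\<^esub> g Y"
    if "X \<in> carrier Q" "Y \<in> carrier Q" for X Y
    using g(1) that unfolding module_hom_def by auto
  have gQ2: "g (c \<odot>\<^bsub>Q\<^esub> X) = c \<odot>\<^bsub>N\<^esub> g X"
    if "X \<in> carrier Q" "c \<in> carrier R" for X c
    using g(1) that unfolding module_hom_def by auto
  have gc: "g X \<in> carrier N" if "X \<in> carrier Q" for X
    using g(1) that unfolding module_hom_def by auto
  have cQ: "cosl R K r \<in> carrier Q" if "r \<in> carrier R" for r using that by (simp add: Q_def qmod_carrier)
  have "\<exists>h\<in>module_hom R M N. \<forall>y\<in>A. h y = phi y"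
  proof (rule inj_extend[OF N inj M])
    show "A \<subseteq> carrier M" using U(1) x by (auto simp: A_def)
    have "\<zero>\<^bsub>M\<^esub> = \<zero>\<^bsub>M\<^esub> \<oplus>\<^bsub>M\<^esub> \<zero> \<odot>\<^bsub>M\<^esub> x" using x by simp
    then show "\<zero>\<^bsub>M\<^esub> \<in> A" using U(2) unfolding A_def by blast
    show "y \<oplus>\<^bsub>M\<^esub> z \<in> A" if yz: "y \<in> A" "z \<in> A" for y z
    proof -
      obtain u r v s where "u \<in> U" "r \<in> carrier R" "y = u \<oplus>\<^bsub>M\<^esub> r \<odot>\<^bsub>M\<^esub> x"
        "v \<in> U" "s \<in> carrier R" "z = v \<oplus>\<^bsub>M\<^esub> s \<odot>\<^bsub>M\<^esub> x" using yz unfolding A_def by blast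
      moreover have "(u \<oplus>\<^bsub>M\<^esub> r \<odot>\<^bsub>M\<^esub> x) \<oplus>\<^bsub>M\<^esub> (v \<oplus>\<^bsub>M\<^esub> s \<odot>\<^bsub>M\<^esub> x) = (u \<oplus>\<^bsub>M\<^esub> v) \<oplus>\<^bsub>M\<^esub> (r \<oplus> s) \<odot>\<^bsub>M\<^esub> x"
        using calculation U(1) x by (simp add: subsetD Mm.smult_l_distr Mm.a_ac)
      ultimately show ?thesis using U(3) unfolding A_def by blast
    qed
    show "c \<odot>\<^bsub>M\<^esub> y \<in> A" if cy: "c \<in> carrier R" "y \<in> A" for c y
    proof -
      obtain u r where "u \<in> U" "r \<in> carrier R" "y = u \<oplus>\<^bsub>M\<^esub> r \<odot>\<^bsub>M\<^esub> x" using cy unfolding A_def by blast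
      moreover have "c \<odot>\<^bsub>M\<^esub> (u \<oplus>\<^bsub>M\<^esub> r \<odot>\<^bsub>M\<^esub> x) = c \<odot>\<^bsub>M\<^esub> u \<oplus>\<^bsub>M\<^esub> (c \<otimes> r) \<odot>\<^bsub>M\<^esub> x"
        using calculation U(1) x cy by (simp add: subsetD Mm.smult_r_distr Mm.smult_assoc1)
      ultimately show ?thesis using U(4) cy unfolding A_def by blast
    qed
    show "phi y \<in> carrier N" if "y \<in> A" for y
      using that phi_eq gc cQ unfolding A_def by auto
    show "phi (y \<oplus>\<^bsub>M\<^esub> z) = phi y \<oplus>\<^bsub>N\<^esub> phi z" if yz: "y \<in> A" "z \<in> A" for y z
    proof -
      obtain u r v s where h: "u \<in> U" "r \<in> carrier R" "y = u \<oplus>\<^bsub>M\<^esub> r \<odot>\<^bsub>M\<^esub> x"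
        "v \<in> U" "s \<in> carrier R" "z = v \<oplus>\<^bsub>M\<^esub> s \<odot>\<^bsub>M\<^esub> x" using yz unfolding A_def by blast
      moreover have "(u \<oplus>\<^bsub>M\<^esub> r \<odot>\<^bsub>M\<^esub> x) \<oplus>\<^bsub>M\<^esub> (v \<oplus>\<^bsub>M\<^esub> s \<odot>\<^bsub>M\<^esub> x) = (u \<oplus>\<^bsub>M\<^esub> v) \<oplus>\<^bsub>M\<^esub> (r \<oplus> s) \<odot>\<^bsub>M\<^esub> x"
        using calculation U(1) x by (simp add: subsetD Mm.smult_l_distr Mm.a_ac)
      ultimately have "phi (y \<oplus>\<^bsub>M\<^esub> z) = g (cosl R K (r \<oplus> s))" using phi_eq U(3) by simp
      also have "\<dots> = g (cosl R K r \<oplus>\<^bsub>Q\<^esub> cosl R K s)" using h by (simp add: Q_def qmod_add[OF Kideal])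
      also have "\<dots> = phi y \<oplus>\<^bsub>N\<^esub> phi z" using h gQ1 cQ phi_eq by simp
      finally show ?thesis .
    qed
    show "phi (c \<odot>\<^bsub>M\<^esub> y) = c \<odot>\<^bsub>N\<^esub> phi y" if cy: "c \<in> carrier R" "y \<in> A" for c y
    proof -
      obtain u r where h: "u \<in> U" "r \<in> carrier R" "y = u \<oplus>\<^bsub>M\<^esub> r \<odot>\<^bsub>M\<^esub> x" using cy unfolding A_def by blast
      moreover have "c \<odot>\<^bsub>M\<^esub> (u \<oplus>\<^bsub>M\<^esub> r \<odot>\<^bsub>M\<^esub> x) = c \<odot>\<^bsub>M\<^esub> u \<oplus>\<^bsub>M\<^esub> (c \<otimes> r) \<odot>\<^bsub>M\<^esub> x"
        using calculation U(1) x cy by (simp add: subsetD Mm.smult_r_distr Mm.smult_assoc1)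
      ultimately have "phi (c \<odot>\<^bsub>M\<^esub> y) = g (cosl R K (c \<otimes> r))" using phi_eq U(4) cy by simp
      also have "\<dots> = g (c \<odot>\<^bsub>Q\<^esub> cosl R K r)" using h cy by (simp add: Q_def qmod_smult[OF Kideal])
      also have "\<dots> = c \<odot>\<^bsub>N\<^esub> phi y" using h gQ2 cQ phi_eq cy by simp
      finally show ?thesis .
    qed
  qed
  then obtain h where h: "h \<in> module_hom R M N" "\<forall>y\<in>A. h y = phi y" by blast
  have "h u = \<zero>\<^bsub>N\<^esub>" if u: "u \<in> U" for u
  proof -
    have e: "u \<oplus>\<^bsub>M\<^esub> \<zero> \<odot>\<^bsub>M\<^esub> x = u" using u U(1) x by (simp add: subsetD)
    have "u \<oplus>\<^bsub>M\<^esub> \<zero> \<odot>\<^bsub>M\<^esub> x \<in> A" using u unfolding A_def by blast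
    then have "h u = phi (u \<oplus>\<^bsub>M\<^esub> \<zero> \<odot>\<^bsub>M\<^esub> x)" using h(2) unfolding e by blast
    then have "h u = g (cosl R K \<zero>)" using phi_eq[OF u zero_closed] by simp
    also have "\<dots> = \<zero>\<^bsub>N\<^esub>" using hom_zero[OF Q N g(1)] by (simp add: Q_def qmod_zero)
    finally show ?thesis .
  qed
  moreover have "h x \<noteq> \<zero>\<^bsub>N\<^esub>"
  proof -
    have e: "\<zero>\<^bsub>M\<^esub> \<oplus>\<^bsub>M\<^esub> \<one> \<odot>\<^bsub>M\<^esub> x = x" using x by simp
    have "\<zero>\<^bsub>M\<^esub> \<oplus>\<^bsub>M\<^esub> \<one> \<odot>\<^bsub>M\<^esub> x \<in> A" using U(2) unfolding A_def by blast
    then have "h x = phi (\<zero>\<^bsub>M\<^esub> \<oplus>\<^bsub>M\<^esub> \<one> \<odot>\<^bsub>M\<^esub> x)" using h(2) unfolding e by blast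
    then have "h x = g (cosl R K \<one>)" using phi_eq[OF U(2) one_closed] by simp
    then show ?thesis using g(2) by simp
  qed
  ultimately show ?thesis using h(1) by blast
qed

end

lemma hom_module_simps:
  "carrier (hom_module R M N) = module_hom R M N \<inter> extensional (carrier M)"
  "\<zero>\<^bsub>hom_module R M N\<^esub> = (\<lambda>x \<in> carrier M. \<zero>\<^bsub>N\<^esub>)"
  "f \<oplus>\<^bsub>hom_module R M N\<^esub> g = (\<lambda>x \<in> carrier M. f x \<oplus>\<^bsub>N\<^esub> g x)"
  "a \<odot>\<^bsub>hom_module R M N\<^esub> f = (\<lambda>x \<in> carrier M. a \<odot>\<^bsub>N\<^esub> f x)"
  unfolding hom_module_def by simp_all

lemma gen_submod_mono: "X \<subseteq> Y \<Longrightarrow> gen_submod R M X \<subseteq> gen_submod R M Y"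
proof
  fix x assume XY: "X \<subseteq> Y" and "x \<in> gen_submod R M X"
  from this(2) show "x \<in> gen_submod R M Y"
    by (induction rule: gen_submod.induct) (use XY in \<open>auto intro: gen_submod.intros\<close>)
qed

lemma gen_submod_least:
  assumes "\<zero>\<^bsub>M\<^esub> \<in> S" "X \<subseteq> S" "\<And>a x. a \<in> carrier R \<Longrightarrow> x \<in> S \<Longrightarrow> a \<odot>\<^bsub>M\<^esub> x \<in> S"
    "\<And>x y. x \<in> S \<Longrightarrow> y \<in> S \<Longrightarrow> x \<oplus>\<^bsub>M\<^esub> y \<in> S"
  shows "gen_submod R M X \<subseteq> S"
proof
  fix x assume "x \<in> gen_submod R M X"
  then show "x \<in> S" by (induction rule: gen_submod.induct) (use assms in auto)
qed

lemma ideal_mod_mono: "I \<subseteq> J \<Longrightarrow> ideal_mod R M I \<subseteq> ideal_mod R M J"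
  unfolding ideal_mod_def by (rule gen_submod_mono) blast

lemma ideal_mod_gen: "a \<in> I \<Longrightarrow> m \<in> carrier M \<Longrightarrow> a \<odot>\<^bsub>M\<^esub> m \<in> ideal_mod R M I"
  unfolding ideal_mod_def by (rule gen_submod.incl) blast

lemma ideal_mod_zero_in: "\<zero>\<^bsub>M\<^esub> \<in> ideal_mod R M I"
  unfolding ideal_mod_def by (rule gen_submod.zero)

lemma ideal_mod_smult: "a \<in> carrier R \<Longrightarrow> x \<in> ideal_mod R M I \<Longrightarrow> a \<odot>\<^bsub>M\<^esub> x \<in> ideal_mod R M I"
  unfolding ideal_mod_def by (rule gen_submod.smult)

lemma ideal_mod_add: "x \<in> ideal_mod R M I \<Longrightarrow> y \<in> ideal_mod R M I \<Longrightarrow> x \<oplus>\<^bsub>M\<^esub> y \<in> ideal_mod R M I"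
  unfolding ideal_mod_def by (rule gen_submod.add)

context cr begin

lemma gen_submod_carrier:
  assumes M: "module R M" and X: "X \<subseteq> carrier M"
  shows "gen_submod R M X \<subseteq> carrier M"
proof (rule gen_submod_least)
  interpret module R M by (rule M)
  show "\<zero>\<^bsub>M\<^esub> \<in> carrier M" by simp
  show "X \<subseteq> carrier M" by (rule X)
  show "a \<odot>\<^bsub>M\<^esub> x \<in> carrier M" if "a \<in> carrier R" "x \<in> carrier M" for a x using that by simp
  show "x \<oplus>\<^bsub>M\<^esub> y \<in> carrier M" if "x \<in> carrier M" "y \<in> carrier M" for x y using that by simp
qed

lemma ideal_mod_carrier:
  assumes M: "module R M" and I: "ideal I R"
  shows "ideal_mod R M I \<subseteq> carrier M"
  unfolding ideal_mod_def
proof (rule gen_submod_carrier[OF M])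
  interpret module R M by (rule M)
  have "I \<subseteq> carrier R" using I by (simp add: ideal.axioms(1) additive_subgroup.a_subset)
  then show "{a \<odot>\<^bsub>M\<^esub> m |a m. a \<in> I \<and> m \<in> carrier M} \<subseteq> carrier M" by auto
qed

lemma hom_props:
  assumes "f \<in> module_hom R M N"
  shows "\<And>x. x \<in> carrier M \<Longrightarrow> f x \<in> carrier N"
    "\<And>x y. x \<in> carrier M \<Longrightarrow> y \<in> carrier M \<Longrightarrow> f (x \<oplus>\<^bsub>M\<^esub> y) = f x \<oplus>\<^bsub>N\<^esub> f y"
    "\<And>a x. a \<in> carrier R \<Longrightarrow> x \<in> carrier M \<Longrightarrow> f (a \<odot>\<^bsub>M\<^esub> x) = a \<odot>\<^bsub>N\<^esub> f x"
  using assms unfolding module_hom_def by auto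

lemma restrict_hom:
  assumes "f \<in> module_hom R M N" and M: "module R M"
  shows "restrict f (carrier M) \<in> carrier (hom_module R M N)"
proof -
  interpret module R M by (rule M)
  show ?thesis using assms(1) unfolding hom_module_simps module_hom_def by auto
qed

lemma hom_ideal_mod_zero:
  assumes M: "module R M" and N: "module R N" and I: "ideal I R"
    and kill: "\<And>a y. a \<in> I \<Longrightarrow> y \<in> carrier M \<Longrightarrow> a \<odot>\<^bsub>M\<^esub> y = \<zero>\<^bsub>M\<^esub>"
  shows "ideal_mod R (hom_module R M N) I = {\<zero>\<^bsub>hom_module R M N\<^esub>}"
proof
  interpret Mm: module R M by (rule M)
  interpret Nm: module R N by (rule N)
  have Ic: "I \<subseteq> carrier R" using I by (simp add: ideal.axioms(1) additive_subgroup.a_subset)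
  show "ideal_mod R (hom_module R M N) I \<subseteq> {\<zero>\<^bsub>hom_module R M N\<^esub>}"
    unfolding ideal_mod_def
  proof (rule gen_submod_least)
    show "\<zero>\<^bsub>hom_module R M N\<^esub> \<in> {\<zero>\<^bsub>hom_module R M N\<^esub>}" by simp
    show "{a \<odot>\<^bsub>hom_module R M N\<^esub> m |a m. a \<in> I \<and> m \<in> carrier (hom_module R M N)} \<subseteq> {\<zero>\<^bsub>hom_module R M N\<^esub>}"
    proof clarify
      fix a h assume a: "a \<in> I" and h: "h \<in> carrier (hom_module R M N)"
      have hh: "h \<in> module_hom R M N" using h by (simp add: hom_module_simps)
      have "a \<odot>\<^bsub>N\<^esub> h y = \<zero>\<^bsub>N\<^esub>" if y: "y \<in> carrier M" for y
      proof -
        have "a \<odot>\<^bsub>N\<^esub> h y = h (a \<odot>\<^bsub>M\<^esub> y)" using hom_props(3)[OF hh] a Ic y by auto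
        also have "\<dots> = h \<zero>\<^bsub>M\<^esub>" using kill a y by simp
        also have "\<dots> = \<zero>\<^bsub>N\<^esub>" by (rule hom_zero[OF M N hh])
        finally show ?thesis .
      qed
      then show "a \<odot>\<^bsub>hom_module R M N\<^esub> h = \<zero>\<^bsub>hom_module R M N\<^esub>"
        by (simp add: hom_module_simps restrict_def fun_eq_iff)
    qed
    show "a \<odot>\<^bsub>hom_module R M N\<^esub> x \<in> {\<zero>\<^bsub>hom_module R M N\<^esub>}"
      if "a \<in> carrier R" "x \<in> {\<zero>\<^bsub>hom_module R M N\<^esub>}" for a x
      using that by (simp add: hom_module_simps restrict_def fun_eq_iff)
    show "x \<oplus>\<^bsub>hom_module R M N\<^esub> y \<in> {\<zero>\<^bsub>hom_module R M N\<^esub>}"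
      if "x \<in> {\<zero>\<^bsub>hom_module R M N\<^esub>}" "y \<in> {\<zero>\<^bsub>hom_module R M N\<^esub>}" for x y
      using that by (simp add: hom_module_simps restrict_def fun_eq_iff)
  qed
  show "{\<zero>\<^bsub>hom_module R M N\<^esub>} \<subseteq> ideal_mod R (hom_module R M N) I"
    using ideal_mod_zero_in by blast
qed

end

context cr begin

lemma ideal_sub: "ideal I R \<Longrightarrow> I \<subseteq> carrier R"
  by (simp add: ideal.axioms(1) additive_subgroup.a_subset)

lemma ideal_zero: "ideal I R \<Longrightarrow> \<zero> \<in> I"
  by (simp add: ideal.axioms(1) additive_subgroup.zero_closed)

lemma hom_eqI:
  assumes "f \<in> carrier (hom_module R M N)" "g \<in> carrier (hom_module R M N)"
    "\<And>x. x \<in> carrier M \<Longrightarrow> f x = g x"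
  shows "f = g"
  using assms by (auto simp: hom_module_simps intro: extensionalityI)

lemma part1a:
  assumes M: "module R M" and N: "module R N" and cp: "coprime_module R M"
  shows "prime_module R (hom_module R M N)"
  unfolding prime_module_def
proof (intro allI impI)
  interpret Mm: module R M by (rule M)
  interpret Nm: module R N by (rule N)
  fix I f assume as: "ideal I R \<and> f \<in> carrier (hom_module R M N)
     \<and> ideal_elt R (hom_module R M N) I f = {\<zero>\<^bsub>hom_module R M N\<^esub>}"
  then have I: "ideal I R" and f: "f \<in> carrier (hom_module R M N)"
    and fz: "ideal_elt R (hom_module R M N) I f = {\<zero>\<^bsub>hom_module R M N\<^esub>}" by auto
  have fh: "f \<in> module_hom R M N" using f by (simp add: hom_module_simps)
  have Ic: "I \<subseteq> carrier R" by (rule ideal_sub[OF I])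
  consider "ideal_mod R M I = {\<zero>\<^bsub>M\<^esub>}" | "ideal_mod R M I = carrier M"
    using cp I unfolding coprime_module_def by blast
  then show "f = \<zero>\<^bsub>hom_module R M N\<^esub> \<or> ideal_mod R (hom_module R M N) I = {\<zero>\<^bsub>hom_module R M N\<^esub>}"
  proof cases
    case 1
    have "ideal_mod R (hom_module R M N) I = {\<zero>\<^bsub>hom_module R M N\<^esub>}"
    proof (rule hom_ideal_mod_zero[OF M N I])
      fix a y assume "a \<in> I" "y \<in> carrier M"
      then have "a \<odot>\<^bsub>M\<^esub> y \<in> ideal_mod R M I" by (rule ideal_mod_gen)
      then show "a \<odot>\<^bsub>M\<^esub> y = \<zero>\<^bsub>M\<^esub>" using 1 by simp
    qed
    then show ?thesis by blast
  next
    case 2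
    have af: "a \<odot>\<^bsub>N\<^esub> f y = \<zero>\<^bsub>N\<^esub>" if a: "a \<in> I" and y: "y \<in> carrier M" for a y
    proof -
      have "a \<odot>\<^bsub>hom_module R M N\<^esub> f \<in> ideal_elt R (hom_module R M N) I f"
        unfolding ideal_elt_def using a by blast
      then have "a \<odot>\<^bsub>hom_module R M N\<^esub> f = \<zero>\<^bsub>hom_module R M N\<^esub>" using fz by blast
      then have "(a \<odot>\<^bsub>hom_module R M N\<^esub> f) y = \<zero>\<^bsub>hom_module R M N\<^esub> y" by simp
      then show ?thesis using y by (simp add: hom_module_simps)
    qed
    have "ideal_mod R M I \<subseteq> {y \<in> carrier M. f y = \<zero>\<^bsub>N\<^esub>}"
      unfolding ideal_mod_def
    proof (rule gen_submod_least)
      show "\<zero>\<^bsub>M\<^esub> \<in> {y \<in> carrier M. f y = \<zero>\<^bsub>N\<^esub>}" using hom_zero[OF M N fh] by simp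
      show "{a \<odot>\<^bsub>M\<^esub> m |a m. a \<in> I \<and> m \<in> carrier M} \<subseteq> {y \<in> carrier M. f y = \<zero>\<^bsub>N\<^esub>}"
        using af Ic hom_props(3)[OF fh] by auto
      show "a \<odot>\<^bsub>M\<^esub> x \<in> {y \<in> carrier M. f y = \<zero>\<^bsub>N\<^esub>}" if "a \<in> carrier R" "x \<in> {y \<in> carrier M. f y = \<zero>\<^bsub>N\<^esub>}" for a x
        using that hom_props(3)[OF fh] by auto
      show "x \<oplus>\<^bsub>M\<^esub> y \<in> {y \<in> carrier M. f y = \<zero>\<^bsub>N\<^esub>}" if "x \<in> {y \<in> carrier M. f y = \<zero>\<^bsub>N\<^esub>}" "y \<in> {y \<in> carrier M. f y = \<zero>\<^bsub>N\<^esub>}" for x y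
        using that hom_props(2)[OF fh] by auto
    qed
    then have "f y = \<zero>\<^bsub>N\<^esub>" if "y \<in> carrier M" for y using 2 that by auto
    then have "f = \<zero>\<^bsub>hom_module R M N\<^esub>"
      by (intro hom_eqI[OF f]) (auto simp: hom_module_simps module_hom_def)
    then show ?thesis by blast
  qed
qed

lemma part1b:
  fixes M :: "('a, 'm) module" and N :: "('a, 'n) module"
  assumes M: "module R M" and N: "module R N" and inj: "injective_module R N"
    and cog: "cogenerator_module R N" and pr: "prime_module R (hom_module R M N)"
  shows "coprime_module R M"
  unfolding coprime_module_def
proof (intro allI impI)
  interpret Mm: module R M by (rule M)
  interpret Nm: module R N by (rule N)
  fix I assume I: "ideal I R"
  have Ic: "I \<subseteq> carrier R" by (rule ideal_sub[OF I])
  show "ideal_mod R M I = {\<zero>\<^bsub>M\<^esub>} \<or> ideal_mod R M I = carrier M"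
  proof (cases "ideal_mod R M I = carrier M")
    case True then show ?thesis by blast
  next
    case False
    then obtain x where x: "x \<in> carrier M" "x \<notin> ideal_mod R M I"
      using ideal_mod_carrier[OF M I] by blast
    obtain h where h: "h \<in> module_hom R M N" "\<forall>u\<in>ideal_mod R M I. h u = \<zero>\<^bsub>N\<^esub>" "h x \<noteq> \<zero>\<^bsub>N\<^esub>"
      using separation[OF M N inj cog ideal_mod_carrier[OF M I] ideal_mod_zero_in ideal_mod_add ideal_mod_smult x]
      by blast
    define f where "f = restrict h (carrier M)"
    have f: "f \<in> carrier (hom_module R M N)" unfolding f_def by (rule restrict_hom[OF h(1) M])
    have fne: "f \<noteq> \<zero>\<^bsub>hom_module R M N\<^esub>"
    proof
      assume "f = \<zero>\<^bsub>hom_module R M N\<^esub>"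
      then have "f x = \<zero>\<^bsub>N\<^esub>" using x by (simp add: hom_module_simps)
      then show False using h(3) x by (simp add: f_def)
    qed
    have elt: "ideal_elt R (hom_module R M N) I f = {\<zero>\<^bsub>hom_module R M N\<^esub>}"
    proof -
      have "a \<odot>\<^bsub>hom_module R M N\<^esub> f = \<zero>\<^bsub>hom_module R M N\<^esub>" if a: "a \<in> I" for a
      proof -
        have "a \<odot>\<^bsub>N\<^esub> h y = \<zero>\<^bsub>N\<^esub>" if y: "y \<in> carrier M" for y
        proof -
          have "a \<odot>\<^bsub>N\<^esub> h y = h (a \<odot>\<^bsub>M\<^esub> y)" using hom_props(3)[OF h(1)] a Ic y by auto
          also have "\<dots> = \<zero>\<^bsub>N\<^esub>" using h(2) ideal_mod_gen[OF a y] by blast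
          finally show ?thesis .
        qed
        then show ?thesis by (simp add: hom_module_simps f_def fun_eq_iff)
      qed
      note aux = this
      have z: "\<zero> \<in> I" by (rule ideal_zero[OF I])
      show ?thesis
      proof (rule equalityI)
        show "ideal_elt R (hom_module R M N) I f \<subseteq> {\<zero>\<^bsub>hom_module R M N\<^esub>}"
          unfolding ideal_elt_def using aux by blast
        have "\<zero>\<^bsub>hom_module R M N\<^esub> \<in> ideal_elt R (hom_module R M N) I f"
          unfolding ideal_elt_def using aux[OF z, symmetric] z by blast
        then show "{\<zero>\<^bsub>hom_module R M N\<^esub>} \<subseteq> ideal_elt R (hom_module R M N) I f" by blast
      qed
    qed
    have imp: "ideal I R \<and> f \<in> carrier (hom_module R M N)
     \<and> ideal_elt R (hom_module R M N) I f = {\<zero>\<^bsub>hom_module R M N\<^esub>}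
      \<longrightarrow> f = \<zero>\<^bsub>hom_module R M N\<^esub> \<or> ideal_mod R (hom_module R M N) I = {\<zero>\<^bsub>hom_module R M N\<^esub>}"
      using pr[unfolded prime_module_def, THEN spec[where x=I], THEN spec[where x=f]] .
    have "f = \<zero>\<^bsub>hom_module R M N\<^esub> \<or> ideal_mod R (hom_module R M N) I = {\<zero>\<^bsub>hom_module R M N\<^esub>}"
      by (rule mp[OF imp]) (intro conjI I f elt)
    then have Hz: "ideal_mod R (hom_module R M N) I = {\<zero>\<^bsub>hom_module R M N\<^esub>}"
      using fne by simp
    have "ideal_mod R M I \<subseteq> {\<zero>\<^bsub>M\<^esub>}"
      unfolding ideal_mod_def
    proof (rule gen_submod_least)
      show "\<zero>\<^bsub>M\<^esub> \<in> {\<zero>\<^bsub>M\<^esub>}" by simp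
      show "a \<odot>\<^bsub>M\<^esub> x \<in> {\<zero>\<^bsub>M\<^esub>}" if "a \<in> carrier R" "x \<in> {\<zero>\<^bsub>M\<^esub>}" for a x using that by simp
      show "x \<oplus>\<^bsub>M\<^esub> y \<in> {\<zero>\<^bsub>M\<^esub>}" if "x \<in> {\<zero>\<^bsub>M\<^esub>}" "y \<in> {\<zero>\<^bsub>M\<^esub>}" for x y using that by simp
      show "{a \<odot>\<^bsub>M\<^esub> m |a m. a \<in> I \<and> m \<in> carrier M} \<subseteq> {\<zero>\<^bsub>M\<^esub>}"
      proof clarify
        fix a y assume a: "a \<in> I" and y: "y \<in> carrier M"
        have ac: "a \<in> carrier R" using a Ic by auto
        show "a \<odot>\<^bsub>M\<^esub> y = \<zero>\<^bsub>M\<^esub>"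
        proof (rule ccontr)
          assume ne: "a \<odot>\<^bsub>M\<^esub> y \<noteq> \<zero>\<^bsub>M\<^esub>"
          obtain k where k: "k \<in> module_hom R M N" "k (a \<odot>\<^bsub>M\<^esub> y) \<noteq> \<zero>\<^bsub>N\<^esub>"
          proof -
            have "\<exists>h\<in>module_hom R M N. (\<forall>u\<in>{\<zero>\<^bsub>M\<^esub>}. h u = \<zero>\<^bsub>N\<^esub>) \<and> h (a \<odot>\<^bsub>M\<^esub> y) \<noteq> \<zero>\<^bsub>N\<^esub>"
            proof (rule separation[OF M N inj cog])
              show "{\<zero>\<^bsub>M\<^esub>} \<subseteq> carrier M" "\<zero>\<^bsub>M\<^esub> \<in> {\<zero>\<^bsub>M\<^esub>}" by auto
              show "x \<oplus>\<^bsub>M\<^esub> y \<in> {\<zero>\<^bsub>M\<^esub>}" if "x \<in> {\<zero>\<^bsub>M\<^esub>}" "y \<in> {\<zero>\<^bsub>M\<^esub>}" for x y using that by simp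
              show "r \<odot>\<^bsub>M\<^esub> x \<in> {\<zero>\<^bsub>M\<^esub>}" if "r \<in> carrier R" "x \<in> {\<zero>\<^bsub>M\<^esub>}" for r x using that by simp
              show "a \<odot>\<^bsub>M\<^esub> y \<in> carrier M" using ac y by simp
              show "a \<odot>\<^bsub>M\<^esub> y \<notin> {\<zero>\<^bsub>M\<^esub>}" using ne by simp
            qed
            then show ?thesis using that by blast
          qed
          have "restrict k (carrier M) \<in> carrier (hom_module R M N)" by (rule restrict_hom[OF k(1) M])
          then have "a \<odot>\<^bsub>hom_module R M N\<^esub> restrict k (carrier M) \<in> ideal_mod R (hom_module R M N) I"
            by (rule ideal_mod_gen[OF a])
          then have "a \<odot>\<^bsub>hom_module R M N\<^esub> restrict k (carrier M) = \<zero>\<^bsub>hom_module R M N\<^esub>" using Hz by blast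
          then have "(a \<odot>\<^bsub>hom_module R M N\<^esub> restrict k (carrier M)) y = \<zero>\<^bsub>hom_module R M N\<^esub> y" by simp
          then have "a \<odot>\<^bsub>N\<^esub> k y = \<zero>\<^bsub>N\<^esub>" using y by (simp add: hom_module_simps)
          moreover have "k (a \<odot>\<^bsub>M\<^esub> y) = a \<odot>\<^bsub>N\<^esub> k y" using hom_props(3)[OF k(1)] ac y by auto
          ultimately show False using k(2) by simp
        qed
      qed
    qed
    then have "ideal_mod R M I = {\<zero>\<^bsub>M\<^esub>}" using ideal_mod_zero_in by blast
    then show ?thesis by blast
  qed
qed

end

context cr begin

lemma hom_carrier_closed:
  assumes M: "module R M" and N: "module R N"
  shows "\<zero>\<^bsub>hom_module R M N\<^esub> \<in> carrier (hom_module R M N)"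
    "f \<in> carrier (hom_module R M N) \<Longrightarrow> g \<in> carrier (hom_module R M N) \<Longrightarrow> f \<oplus>\<^bsub>hom_module R M N\<^esub> g \<in> carrier (hom_module R M N)"
    "a \<in> carrier R \<Longrightarrow> f \<in> carrier (hom_module R M N) \<Longrightarrow> a \<odot>\<^bsub>hom_module R M N\<^esub> f \<in> carrier (hom_module R M N)"
proof -
  interpret Mm: module R M by (rule M)
  interpret Nm: module R N by (rule N)
  show "\<zero>\<^bsub>hom_module R M N\<^esub> \<in> carrier (hom_module R M N)"
    by (auto simp: hom_module_simps module_hom_def)
  show "f \<oplus>\<^bsub>hom_module R M N\<^esub> g \<in> carrier (hom_module R M N)"
    if f: "f \<in> carrier (hom_module R M N)" and g: "g \<in> carrier (hom_module R M N)"
  proof -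
    have fh: "f \<in> module_hom R M N" and gh: "g \<in> module_hom R M N" using f g by (auto simp: hom_module_simps)
    note F = hom_props[OF fh] and G = hom_props[OF gh]
    have "(\<lambda>x\<in>carrier M. f x \<oplus>\<^bsub>N\<^esub> g x) \<in> module_hom R M N"
      unfolding module_hom_def
    proof (intro CollectI conjI ballI)
      show "(\<lambda>x\<in>carrier M. f x \<oplus>\<^bsub>N\<^esub> g x) \<in> carrier M \<rightarrow> carrier N" using F(1) G(1) by auto
      show "(\<lambda>x\<in>carrier M. f x \<oplus>\<^bsub>N\<^esub> g x) (x \<oplus>\<^bsub>M\<^esub> y) =
        (\<lambda>x\<in>carrier M. f x \<oplus>\<^bsub>N\<^esub> g x) x \<oplus>\<^bsub>N\<^esub> (\<lambda>x\<in>carrier M. f x \<oplus>\<^bsub>N\<^esub> g x) y"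
        if "x \<in> carrier M" "y \<in> carrier M" for x y
        using that F G by (simp add: Nm.a_ac)
      show "(\<lambda>x\<in>carrier M. f x \<oplus>\<^bsub>N\<^esub> g x) (a \<odot>\<^bsub>M\<^esub> x) = a \<odot>\<^bsub>N\<^esub> (\<lambda>x\<in>carrier M. f x \<oplus>\<^bsub>N\<^esub> g x) x"
        if "a \<in> carrier R" "x \<in> carrier M" for a x
        using that F G by (simp add: Nm.smult_r_distr)
    qed
    then show ?thesis by (simp add: hom_module_simps)
  qed
  show "a \<odot>\<^bsub>hom_module R M N\<^esub> f \<in> carrier (hom_module R M N)"
    if a: "a \<in> carrier R" and f: "f \<in> carrier (hom_module R M N)"
  proof -
    have fh: "f \<in> module_hom R M N" using f by (auto simp: hom_module_simps)
    note F = hom_props[OF fh]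
    have "(\<lambda>x\<in>carrier M. a \<odot>\<^bsub>N\<^esub> f x) \<in> module_hom R M N"
      unfolding module_hom_def
    proof (intro CollectI conjI ballI)
      show "(\<lambda>x\<in>carrier M. a \<odot>\<^bsub>N\<^esub> f x) \<in> carrier M \<rightarrow> carrier N" using F(1) a by auto
      show "(\<lambda>x\<in>carrier M. a \<odot>\<^bsub>N\<^esub> f x) (x \<oplus>\<^bsub>M\<^esub> y) =
        (\<lambda>x\<in>carrier M. a \<odot>\<^bsub>N\<^esub> f x) x \<oplus>\<^bsub>N\<^esub> (\<lambda>x\<in>carrier M. a \<odot>\<^bsub>N\<^esub> f x) y"
        if "x \<in> carrier M" "y \<in> carrier M" for x y
        using that F a by (simp add: Nm.smult_r_distr)
      show "(\<lambda>x\<in>carrier M. a \<odot>\<^bsub>N\<^esub> f x) (b \<odot>\<^bsub>M\<^esub> x) = b \<odot>\<^bsub>N\<^esub> (\<lambda>x\<in>carrier M. a \<odot>\<^bsub>N\<^esub> f x) x"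
        if "b \<in> carrier R" "x \<in> carrier M" for b x
      proof -
        have "a \<odot>\<^bsub>N\<^esub> f (b \<odot>\<^bsub>M\<^esub> x) = a \<odot>\<^bsub>N\<^esub> (b \<odot>\<^bsub>N\<^esub> f x)" using that F by simp
        also have "\<dots> = (a \<otimes> b) \<odot>\<^bsub>N\<^esub> f x" using that F a by (simp add: Nm.smult_assoc1)
        also have "\<dots> = (b \<otimes> a) \<odot>\<^bsub>N\<^esub> f x" using that a by (simp add: m_comm)
        also have "\<dots> = b \<odot>\<^bsub>N\<^esub> (a \<odot>\<^bsub>N\<^esub> f x)" using that F a by (simp add: Nm.smult_assoc1)
        finally show ?thesis using that by simp
      qed
    qed
    then show ?thesis by (simp add: hom_module_simps)
  qed
qed

lemma hom_ideal_mod_carrier: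
  assumes M: "module R M" and N: "module R N" and I: "ideal I R"
  shows "ideal_mod R (hom_module R M N) I \<subseteq> carrier (hom_module R M N)"
  unfolding ideal_mod_def
proof (rule gen_submod_least)
  have Ic: "I \<subseteq> carrier R" by (rule ideal_sub[OF I])
  show "\<zero>\<^bsub>hom_module R M N\<^esub> \<in> carrier (hom_module R M N)" by (rule hom_carrier_closed(1)[OF M N])
  show "{a \<odot>\<^bsub>hom_module R M N\<^esub> m |a m. a \<in> I \<and> m \<in> carrier (hom_module R M N)} \<subseteq> carrier (hom_module R M N)"
    using hom_carrier_closed(3)[OF M N] Ic by blast
  show "a \<odot>\<^bsub>hom_module R M N\<^esub> x \<in> carrier (hom_module R M N)" if "a \<in> carrier R" "x \<in> carrier (hom_module R M N)" for a x
    using hom_carrier_closed(3)[OF M N] that by blast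
  show "x \<oplus>\<^bsub>hom_module R M N\<^esub> y \<in> carrier (hom_module R M N)" if "x \<in> carrier (hom_module R M N)" "y \<in> carrier (hom_module R M N)" for x y
    using hom_carrier_closed(2)[OF M N] that by blast
qed

lemma prime_kills:
  assumes M: "module R M" and pr: "prime_module R M" and a: "a \<in> carrier R"
    and x: "x \<in> carrier M" "x \<noteq> \<zero>\<^bsub>M\<^esub>" "a \<odot>\<^bsub>M\<^esub> x = \<zero>\<^bsub>M\<^esub>" and y: "y \<in> carrier M"
  shows "a \<odot>\<^bsub>M\<^esub> y = \<zero>\<^bsub>M\<^esub>"
proof -
  interpret Mm: module R M by (rule M)
  have Pa: "ideal (PIdl a) R" by (rule cgenideal_ideal[OF a])
  have "ideal_elt R M (PIdl a) x = {\<zero>\<^bsub>M\<^esub>}"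
  proof (rule equalityI)
    show "ideal_elt R M (PIdl a) x \<subseteq> {\<zero>\<^bsub>M\<^esub>}"
    proof
      fix z assume "z \<in> ideal_elt R M (PIdl a) x"
      then obtain r where r: "r \<in> carrier R" "z = (r \<otimes> a) \<odot>\<^bsub>M\<^esub> x"
        unfolding ideal_elt_def cgenideal_def by blast
      then have "z = r \<odot>\<^bsub>M\<^esub> (a \<odot>\<^bsub>M\<^esub> x)" using a x by (simp add: Mm.smult_assoc1)
      then show "z \<in> {\<zero>\<^bsub>M\<^esub>}" using x r by simp
    qed
    have "\<zero> \<in> PIdl a" by (rule ideal_zero[OF Pa])
    moreover have "\<zero> \<odot>\<^bsub>M\<^esub> x = \<zero>\<^bsub>M\<^esub>" using x by simp
    ultimately show "{\<zero>\<^bsub>M\<^esub>} \<subseteq> ideal_elt R M (PIdl a) x" unfolding ideal_elt_def by force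
  qed
  then have "x = \<zero>\<^bsub>M\<^esub> \<or> ideal_mod R M (PIdl a) = {\<zero>\<^bsub>M\<^esub>}"
    using pr[unfolded prime_module_def, THEN spec[where x="PIdl a"], THEN spec[where x=x]] Pa x(1) by blast
  then have "ideal_mod R M (PIdl a) = {\<zero>\<^bsub>M\<^esub>}" using x(2) by simp
  moreover have "a \<odot>\<^bsub>M\<^esub> y \<in> ideal_mod R M (PIdl a)" by (rule ideal_mod_gen[OF cgenideal_self[OF a] y])
  ultimately show ?thesis by simp
qed

lemma part2:
  fixes M :: "('a, 'm) module" and N :: "('a, 'n) module"
  assumes M: "module R M" and N: "module R N" and inj: "injective_module R N"
    and pr: "prime_module R M"
  shows "coprime_module R (hom_module R M N)"
  unfolding coprime_module_def
proof (intro allI impI)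
  interpret Mm: module R M by (rule M)
  interpret Nm: module R N by (rule N)
  fix I assume I: "ideal I R"
  have Ic: "I \<subseteq> carrier R" by (rule ideal_sub[OF I])
  show "ideal_mod R (hom_module R M N) I = {\<zero>\<^bsub>hom_module R M N\<^esub>} \<or>
        ideal_mod R (hom_module R M N) I = carrier (hom_module R M N)"
  proof (cases "\<exists>a\<in>I. \<forall>x\<in>carrier M. a \<odot>\<^bsub>M\<^esub> x = \<zero>\<^bsub>M\<^esub> \<longrightarrow> x = \<zero>\<^bsub>M\<^esub>")
    case True
    then obtain a where aI: "a \<in> I" and ainj0: "\<And>x. x \<in> carrier M \<Longrightarrow> a \<odot>\<^bsub>M\<^esub> x = \<zero>\<^bsub>M\<^esub> \<Longrightarrow> x = \<zero>\<^bsub>M\<^esub>" by blast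
    have a: "a \<in> carrier R" using aI Ic by auto
    have ainj: "x = x'" if "x \<in> carrier M" "x' \<in> carrier M" "a \<odot>\<^bsub>M\<^esub> x = a \<odot>\<^bsub>M\<^esub> x'" for x x'
    proof -
      have "a \<odot>\<^bsub>M\<^esub> (x \<oplus>\<^bsub>M\<^esub> \<ominus>\<^bsub>M\<^esub> x') = a \<odot>\<^bsub>M\<^esub> x \<oplus>\<^bsub>M\<^esub> \<ominus>\<^bsub>M\<^esub> (a \<odot>\<^bsub>M\<^esub> x')"
        using that a by (simp add: Mm.smult_r_distr Mm.smult_r_minus)
      also have "\<dots> = \<zero>\<^bsub>M\<^esub>" using that a by (simp add: Mm.r_neg)
      finally have "x \<oplus>\<^bsub>M\<^esub> \<ominus>\<^bsub>M\<^esub> x' = \<zero>\<^bsub>M\<^esub>" using ainj0 that by simp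
      then show ?thesis using Mm.ag_eq0 that by blast
    qed
    have "carrier (hom_module R M N) \<subseteq> ideal_mod R (hom_module R M N) I"
    proof
      fix f assume f: "f \<in> carrier (hom_module R M N)"
      have fh: "f \<in> module_hom R M N" using f by (simp add: hom_module_simps)
      note F = hom_props[OF fh]
      define A where "A = {a \<odot>\<^bsub>M\<^esub> x | x. x \<in> carrier M}"
      define phi where "phi y = f (SOME x. x \<in> carrier M \<and> y = a \<odot>\<^bsub>M\<^esub> x)" for y
      have phi_eq: "phi (a \<odot>\<^bsub>M\<^esub> x) = f x" if x: "x \<in> carrier M" for x
      proof -
        let ?P = "\<lambda>z. z \<in> carrier M \<and> a \<odot>\<^bsub>M\<^esub> x = a \<odot>\<^bsub>M\<^esub> z"
        have "?P x" using x by simp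
        then have "?P (SOME z. ?P z)" by (rule someI)
        then have "(SOME z. ?P z) = x" using ainj x by metis
        then show ?thesis by (simp add: phi_def)
      qed
      have "\<exists>h\<in>module_hom R M N. \<forall>y\<in>A. h y = phi y"
      proof (rule inj_extend[OF N inj M])
        show "A \<subseteq> carrier M" using a by (auto simp: A_def)
        have "\<zero>\<^bsub>M\<^esub> = a \<odot>\<^bsub>M\<^esub> \<zero>\<^bsub>M\<^esub>" using a by simp
        then show "\<zero>\<^bsub>M\<^esub> \<in> A" unfolding A_def by blast
        show "y \<oplus>\<^bsub>M\<^esub> z \<in> A" if yz: "y \<in> A" "z \<in> A" for y z
        proof -
          obtain u v where uv: "u \<in> carrier M" "v \<in> carrier M" "y = a \<odot>\<^bsub>M\<^esub> u" "z = a \<odot>\<^bsub>M\<^esub> v"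
            using yz unfolding A_def by blast
          then have "y \<oplus>\<^bsub>M\<^esub> z = a \<odot>\<^bsub>M\<^esub> (u \<oplus>\<^bsub>M\<^esub> v)" using a by (simp add: Mm.smult_r_distr)
          then show ?thesis using uv unfolding A_def by blast
        qed
        show "r \<odot>\<^bsub>M\<^esub> y \<in> A" if ry: "r \<in> carrier R" "y \<in> A" for r y
        proof -
          obtain u where u: "u \<in> carrier M" "y = a \<odot>\<^bsub>M\<^esub> u" using ry unfolding A_def by blast
          then have "r \<odot>\<^bsub>M\<^esub> y = a \<odot>\<^bsub>M\<^esub> (r \<odot>\<^bsub>M\<^esub> u)" using a ry
            by (simp add: Mm.smult_assoc1[symmetric] m_comm)
          then show ?thesis using u ry unfolding A_def by auto
        qed
        show "phi y \<in> carrier N" if y: "y \<in> A" for y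
        proof -
          obtain u where u: "u \<in> carrier M" "y = a \<odot>\<^bsub>M\<^esub> u" using y unfolding A_def by blast
          then show ?thesis using phi_eq F(1) by simp
        qed
        show "phi (y \<oplus>\<^bsub>M\<^esub> z) = phi y \<oplus>\<^bsub>N\<^esub> phi z" if yz: "y \<in> A" "z \<in> A" for y z
        proof -
          obtain u v where uv: "u \<in> carrier M" "v \<in> carrier M" "y = a \<odot>\<^bsub>M\<^esub> u" "z = a \<odot>\<^bsub>M\<^esub> v"
            using yz unfolding A_def by blast
          then have "y \<oplus>\<^bsub>M\<^esub> z = a \<odot>\<^bsub>M\<^esub> (u \<oplus>\<^bsub>M\<^esub> v)" using a by (simp add: Mm.smult_r_distr)
          then show ?thesis using uv phi_eq F(2) by simp
        qed
        show "phi (r \<odot>\<^bsub>M\<^esub> y) = r \<odot>\<^bsub>N\<^esub> phi y" if ry: "r \<in> carrier R" "y \<in> A" for r y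
        proof -
          obtain u where u: "u \<in> carrier M" "y = a \<odot>\<^bsub>M\<^esub> u" using ry unfolding A_def by blast
          then have "r \<odot>\<^bsub>M\<^esub> y = a \<odot>\<^bsub>M\<^esub> (r \<odot>\<^bsub>M\<^esub> u)" using a ry
            by (simp add: Mm.smult_assoc1[symmetric] m_comm)
          then show ?thesis using u ry phi_eq F(3) by simp
        qed
      qed
      then obtain g where g: "g \<in> module_hom R M N" "\<And>y. y \<in> A \<Longrightarrow> g y = phi y" by blast
      define g' where "g' = restrict g (carrier M)"
      have g': "g' \<in> carrier (hom_module R M N)" unfolding g'_def by (rule restrict_hom[OF g(1) M])
      have "a \<odot>\<^bsub>hom_module R M N\<^esub> g' = f"
      proof (rule hom_eqI[OF hom_carrier_closed(3)[OF M N a g'] f])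
        fix x assume x: "x \<in> carrier M"
        have "a \<odot>\<^bsub>M\<^esub> x \<in> A" using x unfolding A_def by blast
        then have "g (a \<odot>\<^bsub>M\<^esub> x) = f x" using g(2) phi_eq[OF x] by simp
        moreover have "g (a \<odot>\<^bsub>M\<^esub> x) = a \<odot>\<^bsub>N\<^esub> g x" using hom_props(3)[OF g(1)] a x by simp
        ultimately show "(a \<odot>\<^bsub>hom_module R M N\<^esub> g') x = f x" using x by (simp add: hom_module_simps g'_def)
      qed
      moreover have "a \<odot>\<^bsub>hom_module R M N\<^esub> g' \<in> ideal_mod R (hom_module R M N) I"
        by (rule ideal_mod_gen[OF aI g'])
      ultimately show "f \<in> ideal_mod R (hom_module R M N) I" by simp
    qed
    then have "ideal_mod R (hom_module R M N) I = carrier (hom_module R M N)"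
      using hom_ideal_mod_carrier[OF M N I] by blast
    then show ?thesis by blast
  next
    case False
    have "ideal_mod R (hom_module R M N) I = {\<zero>\<^bsub>hom_module R M N\<^esub>}"
    proof (rule hom_ideal_mod_zero[OF M N I])
      fix a y assume a: "a \<in> I" and y: "y \<in> carrier M"
      obtain x where x: "x \<in> carrier M" "a \<odot>\<^bsub>M\<^esub> x = \<zero>\<^bsub>M\<^esub>" "x \<noteq> \<zero>\<^bsub>M\<^esub>" using False a by blast
      show "a \<odot>\<^bsub>M\<^esub> y = \<zero>\<^bsub>M\<^esub>"
        by (rule prime_kills[OF M pr _ x(1) x(3) x(2) y]) (use a Ic in auto)
    qed
    then show ?thesis by blast
  qed
qed

end

context cr begin

lemma elt_zero_iff:
  assumes N: "module R N" and I: "ideal I R" and m: "m \<in> carrier N"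
  shows "ideal_elt R N I m = {\<zero>\<^bsub>N\<^esub>} \<longleftrightarrow> (\<forall>c\<in>I. c \<odot>\<^bsub>N\<^esub> m = \<zero>\<^bsub>N\<^esub>)"
proof -
  interpret Nm: module R N by (rule N)
  have z: "\<zero> \<in> I" by (rule ideal_zero[OF I])
  have zm: "\<zero> \<odot>\<^bsub>N\<^esub> m = \<zero>\<^bsub>N\<^esub>" using m by simp
  show ?thesis
  proof
    assume "ideal_elt R N I m = {\<zero>\<^bsub>N\<^esub>}"
    then show "\<forall>c\<in>I. c \<odot>\<^bsub>N\<^esub> m = \<zero>\<^bsub>N\<^esub>" unfolding ideal_elt_def by blast
  next
    assume h: "\<forall>c\<in>I. c \<odot>\<^bsub>N\<^esub> m = \<zero>\<^bsub>N\<^esub>"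
    have "\<zero>\<^bsub>N\<^esub> \<in> ideal_elt R N I m" unfolding ideal_elt_def using z zm[symmetric] by blast
    moreover have "ideal_elt R N I m \<subseteq> {\<zero>\<^bsub>N\<^esub>}" unfolding ideal_elt_def using h by blast
    ultimately show "ideal_elt R N I m = {\<zero>\<^bsub>N\<^esub>}" by blast
  qed
qed

lemma prod_PIdl:
  assumes a: "a \<in> carrier R" and b: "b \<in> carrier R"
  shows "ideal_prod R (PIdl a) (PIdl b) \<subseteq> PIdl (a \<otimes> b)"
proof
  fix c assume "c \<in> ideal_prod R (PIdl a) (PIdl b)"
  then show "c \<in> PIdl (a \<otimes> b)"
  proof (induction rule: ideal_prod.induct)
    case (prod i j)
    then obtain x y where xy: "x \<in> carrier R" "y \<in> carrier R" "i = x \<otimes> a" "j = y \<otimes> b"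
      unfolding cgenideal_def by blast
    then have "i \<otimes> j = (x \<otimes> y) \<otimes> (a \<otimes> b)" using a b by (simp add: m_ac)
    then show ?case using xy unfolding cgenideal_def by blast
  next
    case (sum s1 s2)
    then obtain x y where xy: "x \<in> carrier R" "y \<in> carrier R" "s1 = x \<otimes> (a \<otimes> b)" "s2 = y \<otimes> (a \<otimes> b)"
      unfolding cgenideal_def by blast
    then have "s1 \<oplus> s2 = (x \<oplus> y) \<otimes> (a \<otimes> b)" using a b by (simp add: l_distr)
    then show ?case using xy unfolding cgenideal_def by blast
  qed
qed

lemma vnr_prod_sub:
  assumes vnr: "\<And>a. a \<in> carrier R \<Longrightarrow> \<exists>r\<in>carrier R. a = r \<otimes> a \<otimes> a"
    and I: "ideal I R" and J: "ideal J R" and IJ: "I \<subseteq> J"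
  shows "ideal_prod R I J = I" "ideal_prod R J I = I"
proof -
  have Ic: "I \<subseteq> carrier R" by (rule ideal_sub[OF I])
  show "ideal_prod R I J = I"
  proof
    show "ideal_prod R I J \<subseteq> I" using ideal_prod_inter[OF I J] by blast
    show "I \<subseteq> ideal_prod R I J"
    proof
      fix a assume a: "a \<in> I"
      then obtain r where r: "r \<in> carrier R" "a = r \<otimes> a \<otimes> a" using vnr Ic by blast
      have "r \<otimes> a \<in> I" using I a r by (simp add: ideal.I_l_closed)
      then have "(r \<otimes> a) \<otimes> a \<in> ideal_prod R I J" using a IJ by (blast intro: ideal_prod.prod)
      then show "a \<in> ideal_prod R I J" using r by simp
    qed
  qed
  show "ideal_prod R J I = I"
  proof
    show "ideal_prod R J I \<subseteq> I" using ideal_prod_inter[OF J I] by blast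
    show "I \<subseteq> ideal_prod R J I"
    proof
      fix a assume a: "a \<in> I"
      then obtain r where r: "r \<in> carrier R" "a = r \<otimes> a \<otimes> a" using vnr Ic by blast
      have ac: "a \<in> carrier R" using a Ic by auto
      have "r \<otimes> a \<in> I" using I a r by (simp add: ideal.I_l_closed)
      then have "a \<otimes> (r \<otimes> a) \<in> ideal_prod R J I" using a IJ by (blast intro: ideal_prod.prod)
      moreover have "a \<otimes> (r \<otimes> a) = r \<otimes> a \<otimes> a" using ac r by (simp add: m_ac)
      ultimately show "a \<in> ideal_prod R J I" using r by simp
    qed
  qed
qed

lemma cos_gen:
  assumes N: "module R N" and K: "ideal K R" and g: "g \<in> module_hom R (qmod R K) N"
    and c: "c \<in> carrier R"
  shows "c \<odot>\<^bsub>N\<^esub> g (cosl R K \<one>) = g (cosl R K c)"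
    "c \<in> K \<Longrightarrow> c \<odot>\<^bsub>N\<^esub> g (cosl R K \<one>) = \<zero>\<^bsub>N\<^esub>"
    "g (cosl R K \<one>) \<in> carrier N"
proof -
  have Q: "module R (qmod R K)" by (rule qmod_module[OF K])
  have one: "cosl R K \<one> \<in> carrier (qmod R K)" by (simp add: qmod_carrier)
  show 1: "c \<odot>\<^bsub>N\<^esub> g (cosl R K \<one>) = g (cosl R K c)"
    using hom_props(3)[OF g c one] c by (simp add: qmod_smult[OF K])
  show "g (cosl R K \<one>) \<in> carrier N" using hom_props(1)[OF g one] .
  assume cK: "c \<in> K"
  have "c \<ominus> \<zero> = c" using c by algebra
  then have "cosl R K c = cosl R K \<zero>" using cosl_eq[OF K c zero_closed] cK by simp
  then show "c \<odot>\<^bsub>N\<^esub> g (cosl R K \<one>) = \<zero>\<^bsub>N\<^esub>"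
    using 1 hom_zero[OF Q N g] by (simp add: qmod_zero)
qed

lemma cosl_ne0:
  assumes K: "ideal K R" and a: "a \<in> carrier R" "a \<notin> K"
  shows "cosl R K a \<noteq> \<zero>\<^bsub>qmod R K\<^esub>" "cosl R K a \<in> carrier (qmod R K)"
proof -
  have "a \<ominus> \<zero> = a" using a by algebra
  then show "cosl R K a \<noteq> \<zero>\<^bsub>qmod R K\<^esub>" using cosl_eq[OF K a(1) zero_closed] a by (simp add: qmod_zero)
  show "cosl R K a \<in> carrier (qmod R K)" using a by (simp add: qmod_carrier)
qed

lemma cog_sep:
  assumes cog: "cogenerator_module R N" and K: "ideal K R" and a: "a \<in> carrier R" "a \<notin> K"
  obtains g where "g \<in> module_hom R (qmod R K) N" "g (cosl R K a) \<noteq> \<zero>\<^bsub>N\<^esub>"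
  using cog[unfolded cogenerator_module_def, rule_format, of "qmod R K" "cosl R K a"]
    qmod_module[OF K] cosl_ne0[OF K a] by blast

lemma reduced_vnr:
  assumes N: "module R N" and cog: "cogenerator_module R N" and red: "reduced_module R N"
    and a: "a \<in> carrier R"
  shows "\<exists>r\<in>carrier R. a = r \<otimes> a \<otimes> a"
proof (rule ccontr)
  interpret Nm: module R N by (rule N)
  assume no: "\<not> (\<exists>r\<in>carrier R. a = r \<otimes> a \<otimes> a)"
  define K where "K = PIdl (a \<otimes> a)"
  have K: "ideal K R" unfolding K_def by (rule cgenideal_ideal) (simp add: a)
  have aK: "a \<notin> K" using no a unfolding K_def cgenideal_def by (auto simp: m_assoc)
  obtain g where g: "g \<in> module_hom R (qmod R K) N" "g (cosl R K a) \<noteq> \<zero>\<^bsub>N\<^esub>"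
    using cog_sep[OF cog K a aK] by blast
  define m where "m = g (cosl R K \<one>)"
  have m: "m \<in> carrier N" unfolding m_def by (rule cos_gen(3)[OF N K g(1) one_closed])
  have Pa: "ideal (PIdl a) R" by (rule cgenideal_ideal[OF a])
  have PP: "ideal (ideal_prod R (PIdl a) (PIdl a)) R" by (rule ideal_prod_is_ideal[OF Pa Pa])
  have "\<forall>c\<in>ideal_prod R (PIdl a) (PIdl a). c \<odot>\<^bsub>N\<^esub> m = \<zero>\<^bsub>N\<^esub>"
  proof
    fix c assume "c \<in> ideal_prod R (PIdl a) (PIdl a)"
    then have cK: "c \<in> K" using prod_PIdl[OF a a] unfolding K_def by blast
    then have "c \<in> carrier R" using ideal_sub[OF K] by blast
    then show "c \<odot>\<^bsub>N\<^esub> m = \<zero>\<^bsub>N\<^esub>" unfolding m_def using cos_gen(2)[OF N K g(1)] cK by blast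
  qed
  then have "ideal_elt R N (ideal_prod R (PIdl a) (PIdl a)) m = {\<zero>\<^bsub>N\<^esub>}"
    using elt_zero_iff[OF N PP m] by blast
  then have "ideal_elt R N (PIdl a) m = {\<zero>\<^bsub>N\<^esub>}"
    using red[unfolded reduced_module_def, THEN spec[where x="PIdl a"], THEN spec[where x=m]] Pa m by blast
  then have "a \<odot>\<^bsub>N\<^esub> m = \<zero>\<^bsub>N\<^esub>" using elt_zero_iff[OF N Pa m] cgenideal_self[OF a] by blast
  moreover have "a \<odot>\<^bsub>N\<^esub> m = g (cosl R K a)" unfolding m_def by (rule cos_gen(1)[OF N K g(1) a])
  ultimately show False using g(2) by simp
qed

lemma weakly_prime_reduced:
  assumes "weakly_prime_module R N"
  shows "reduced_module R N"
  using assms unfolding weakly_prime_module_def reduced_module_def by blast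

lemma wp_total:
  assumes N: "module R N" and cog: "cogenerator_module R N" and wp: "weakly_prime_module R N"
    and I: "ideal I R" and J: "ideal J R"
  shows "I \<subseteq> J \<or> J \<subseteq> I"
proof (rule ccontr)
  interpret Nm: module R N by (rule N)
  assume "\<not> (I \<subseteq> J \<or> J \<subseteq> I)"
  then obtain a b where ab: "a \<in> I" "a \<notin> J" "b \<in> J" "b \<notin> I" by blast
  have a: "a \<in> carrier R" and b: "b \<in> carrier R" using ab ideal_sub[OF I] ideal_sub[OF J] by auto
  define K where "K = PIdl (a \<otimes> b)"
  have K: "ideal K R" unfolding K_def by (rule cgenideal_ideal) (simp add: a b)
  have aK: "a \<notin> K"
  proof
    assume "a \<in> K"
    then obtain x where "x \<in> carrier R" "a = x \<otimes> (a \<otimes> b)" unfolding K_def cgenideal_def by blast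
    moreover have "x \<otimes> (a \<otimes> b) \<in> J" using J ab(3) a calculation(1) by (simp add: ideal.I_l_closed)
    ultimately show False using ab(2) by simp
  qed
  have bK: "b \<notin> K"
  proof
    assume "b \<in> K"
    then obtain x where x: "x \<in> carrier R" "b = x \<otimes> (a \<otimes> b)" unfolding K_def cgenideal_def by blast
    then have "b = (x \<otimes> b) \<otimes> a" using a b by (simp add: m_ac)
    moreover have "(x \<otimes> b) \<otimes> a \<in> I" using I ab(1) x(1) b by (simp add: ideal.I_l_closed)
    ultimately show False using ab(4) by simp
  qed
  have Pa: "ideal (PIdl a) R" by (rule cgenideal_ideal[OF a])
  have Pb: "ideal (PIdl b) R" by (rule cgenideal_ideal[OF b])
  have PP: "ideal (ideal_prod R (PIdl a) (PIdl b)) R" by (rule ideal_prod_is_ideal[OF Pa Pb])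
  have PPK: "ideal_prod R (PIdl a) (PIdl b) \<subseteq> K" using prod_PIdl[OF a b] unfolding K_def .
  have PPc: "ideal_prod R (PIdl a) (PIdl b) \<subseteq> carrier R" using ideal_sub[OF PP] .
  have wpi: "ideal_elt R N (PIdl a) m = {\<zero>\<^bsub>N\<^esub>} \<or> ideal_elt R N (PIdl b) m = {\<zero>\<^bsub>N\<^esub>}"
    if m: "m \<in> carrier N" and k: "\<forall>c\<in>ideal_prod R (PIdl a) (PIdl b). c \<odot>\<^bsub>N\<^esub> m = \<zero>\<^bsub>N\<^esub>" for m
  proof -
    have "ideal_elt R N (ideal_prod R (PIdl a) (PIdl b)) m = {\<zero>\<^bsub>N\<^esub>}" using elt_zero_iff[OF N PP m] k by blast
    then show ?thesis
      using wp[unfolded weakly_prime_module_def, THEN spec[where x="PIdl a"], THEN spec[where x="PIdl b"],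
          THEN spec[where x=m]] Pa Pb m by blast
  qed
  have wpi2: "a \<odot>\<^bsub>N\<^esub> m = \<zero>\<^bsub>N\<^esub> \<or> b \<odot>\<^bsub>N\<^esub> m = \<zero>\<^bsub>N\<^esub>"
    if m: "m \<in> carrier N" and k: "\<forall>c\<in>ideal_prod R (PIdl a) (PIdl b). c \<odot>\<^bsub>N\<^esub> m = \<zero>\<^bsub>N\<^esub>" for m
    using wpi[OF m k] elt_zero_iff[OF N Pa m] elt_zero_iff[OF N Pb m] cgenideal_self[OF a] cgenideal_self[OF b]
    by blast
  obtain g1 where g1: "g1 \<in> module_hom R (qmod R K) N" "g1 (cosl R K a) \<noteq> \<zero>\<^bsub>N\<^esub>"
    using cog_sep[OF cog K a aK] by blast
  obtain g2 where g2: "g2 \<in> module_hom R (qmod R K) N" "g2 (cosl R K b) \<noteq> \<zero>\<^bsub>N\<^esub>"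
    using cog_sep[OF cog K b bK] by blast
  define m1 where "m1 = g1 (cosl R K \<one>)"
  define m2 where "m2 = g2 (cosl R K \<one>)"
  have m1: "m1 \<in> carrier N" unfolding m1_def by (rule cos_gen(3)[OF N K g1(1) one_closed])
  have m2: "m2 \<in> carrier N" unfolding m2_def by (rule cos_gen(3)[OF N K g2(1) one_closed])
  have k1: "c \<odot>\<^bsub>N\<^esub> m1 = \<zero>\<^bsub>N\<^esub>" if "c \<in> ideal_prod R (PIdl a) (PIdl b)" for c
    unfolding m1_def using cos_gen(2)[OF N K g1(1)] that PPK PPc by blast
  have k2: "c \<odot>\<^bsub>N\<^esub> m2 = \<zero>\<^bsub>N\<^esub>" if "c \<in> ideal_prod R (PIdl a) (PIdl b)" for c
    unfolding m2_def using cos_gen(2)[OF N K g2(1)] that PPK PPc by blast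
  have am1: "a \<odot>\<^bsub>N\<^esub> m1 \<noteq> \<zero>\<^bsub>N\<^esub>" using cos_gen(1)[OF N K g1(1) a] g1(2) unfolding m1_def by simp
  have bm2: "b \<odot>\<^bsub>N\<^esub> m2 \<noteq> \<zero>\<^bsub>N\<^esub>" using cos_gen(1)[OF N K g2(1) b] g2(2) unfolding m2_def by simp
  have bm1: "b \<odot>\<^bsub>N\<^esub> m1 = \<zero>\<^bsub>N\<^esub>" using wpi2[OF m1] k1 am1 by blast
  have am2: "a \<odot>\<^bsub>N\<^esub> m2 = \<zero>\<^bsub>N\<^esub>" using wpi2[OF m2] k2 bm2 by blast
  define m where "m = m1 \<oplus>\<^bsub>N\<^esub> m2"
  have m: "m \<in> carrier N" using m1 m2 by (simp add: m_def)
  have "c \<odot>\<^bsub>N\<^esub> m = \<zero>\<^bsub>N\<^esub>" if c: "c \<in> ideal_prod R (PIdl a) (PIdl b)" for c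
  proof -
    have "c \<in> carrier R" using c PPc by blast
    then have "c \<odot>\<^bsub>N\<^esub> m = c \<odot>\<^bsub>N\<^esub> m1 \<oplus>\<^bsub>N\<^esub> c \<odot>\<^bsub>N\<^esub> m2" using m1 m2 by (simp add: m_def Nm.smult_r_distr)
    then show ?thesis using k1[OF c] k2[OF c] by simp
  qed
  then have "a \<odot>\<^bsub>N\<^esub> m = \<zero>\<^bsub>N\<^esub> \<or> b \<odot>\<^bsub>N\<^esub> m = \<zero>\<^bsub>N\<^esub>" using wpi2[OF m] by blast
  moreover have "a \<odot>\<^bsub>N\<^esub> m = a \<odot>\<^bsub>N\<^esub> m1" using a m1 m2 am2 by (simp add: m_def Nm.smult_r_distr)
  moreover have "b \<odot>\<^bsub>N\<^esub> m = b \<odot>\<^bsub>N\<^esub> m2" using b m1 m2 bm1 by (simp add: m_def Nm.smult_r_distr)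
  ultimately show False using am1 bm2 by simp
qed

lemma part4:
  assumes N: "module R N" and cog: "cogenerator_module R N"
  shows "(reduced_module R N \<longrightarrow> coreduced_module R N)
       \<and> (weakly_prime_module R N \<longrightarrow> weakly_coprime_module R N)"
proof (intro conjI impI)
  assume red: "reduced_module R N"
  have vnr: "\<exists>r\<in>carrier R. a = r \<otimes> a \<otimes> a" if "a \<in> carrier R" for a
    by (rule reduced_vnr[OF N cog red that])
  show "coreduced_module R N" unfolding coreduced_module_def
    using vnr_prod_sub(1)[OF vnr] by simp
next
  assume wp: "weakly_prime_module R N"
  have vnr: "\<exists>r\<in>carrier R. a = r \<otimes> a \<otimes> a" if "a \<in> carrier R" for a
    by (rule reduced_vnr[OF N cog weakly_prime_reduced[OF wp] that])
  show "weakly_coprime_module R N" unfolding weakly_coprime_module_def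
  proof (intro allI impI)
    fix I J assume IJ: "ideal I R \<and> ideal J R"
    then have I: "ideal I R" and J: "ideal J R" by auto
    consider "I \<subseteq> J" | "J \<subseteq> I" using wp_total[OF N cog wp I J] by blast
    then show "ideal_mod R N (ideal_prod R I J) = ideal_mod R N I \<or> ideal_mod R N (ideal_prod R I J) = ideal_mod R N J"
    proof cases
      case 1 then show ?thesis using vnr_prod_sub(1)[OF vnr I J] by simp
    next
      case 2 then show ?thesis using vnr_prod_sub(2)[OF vnr J I] by simp
    qed
  qed
qed

end

context cr begin

lemma gen_incl:
  fixes Q :: "('a, 'm) module"
  assumes Q: "module R Q" and gen: "generator_module R Q" and I: "ideal I R" and J: "ideal J R"
    and sub: "ideal_mod R Q I \<subseteq> ideal_mod R Q J"
  shows "I \<subseteq> J"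
proof
  interpret Qm: module R Q by (rule Q)
  fix a assume aI: "a \<in> I"
  have a: "a \<in> carrier R" using aI ideal_sub[OF I] by blast
  define T where "T = qmod R J"
  have T: "module R T" unfolding T_def by (rule qmod_module[OF J])
  interpret Tm: module R T by (rule T)
  have kill: "f z = \<zero>\<^bsub>T\<^esub>" if f: "f \<in> module_hom R Q T" and z: "z \<in> ideal_mod R Q J" for f z
  proof -
    have "ideal_mod R Q J \<subseteq> {z \<in> carrier Q. f z = \<zero>\<^bsub>T\<^esub>}"
      unfolding ideal_mod_def
    proof (rule gen_submod_least)
      show "\<zero>\<^bsub>Q\<^esub> \<in> {z \<in> carrier Q. f z = \<zero>\<^bsub>T\<^esub>}" using hom_zero[OF Q T f] by simp
      show "{b \<odot>\<^bsub>Q\<^esub> m |b m. b \<in> J \<and> m \<in> carrier Q} \<subseteq> {z \<in> carrier Q. f z = \<zero>\<^bsub>T\<^esub>}"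
      proof clarify
        fix b m assume b: "b \<in> J" and m: "m \<in> carrier Q"
        have bc: "b \<in> carrier R" using b ideal_sub[OF J] by blast
        obtain r where r: "r \<in> carrier R" "f m = cosl R J r"
          using hom_props(1)[OF f m] by (auto simp: T_def qmod_carrier)
        have "f (b \<odot>\<^bsub>Q\<^esub> m) = b \<odot>\<^bsub>T\<^esub> f m" using hom_props(3)[OF f bc m] .
        also have "\<dots> = cosl R J (b \<otimes> r)" using r bc by (simp add: T_def qmod_smult[OF J])
        also have "\<dots> = cosl R J \<zero>"
        proof -
          have "b \<otimes> r \<in> J" using J b r by (simp add: ideal.I_r_closed)
          moreover have "b \<otimes> r \<ominus> \<zero> = b \<otimes> r" using bc r by algebra
          ultimately show ?thesis using cosl_eq[OF J _ zero_closed, of "b \<otimes> r"] bc r by simp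
        qed
        finally show "b \<odot>\<^bsub>Q\<^esub> m \<in> carrier Q \<and> f (b \<odot>\<^bsub>Q\<^esub> m) = \<zero>\<^bsub>T\<^esub>" using bc m by (simp add: T_def qmod_zero)
      qed
      show "c \<odot>\<^bsub>Q\<^esub> x \<in> {z \<in> carrier Q. f z = \<zero>\<^bsub>T\<^esub>}" if "c \<in> carrier R" "x \<in> {z \<in> carrier Q. f z = \<zero>\<^bsub>T\<^esub>}" for c x
        using that hom_props(3)[OF f] by simp
      show "x \<oplus>\<^bsub>Q\<^esub> y \<in> {z \<in> carrier Q. f z = \<zero>\<^bsub>T\<^esub>}" if "x \<in> {z \<in> carrier Q. f z = \<zero>\<^bsub>T\<^esub>}" "y \<in> {z \<in> carrier Q. f z = \<zero>\<^bsub>T\<^esub>}" for x y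
        using that hom_props(2)[OF f] by simp
    qed
    then show ?thesis using z by blast
  qed
  have "carrier T = gen_submod R T (\<Union>{f ` carrier Q | f. f \<in> module_hom R Q T})"
    using gen[unfolded generator_module_def, THEN spec[where x=T]] T by blast
  also have "\<dots> \<subseteq> {X \<in> carrier T. a \<odot>\<^bsub>T\<^esub> X = \<zero>\<^bsub>T\<^esub>}"
  proof (rule gen_submod_least)
    show "\<zero>\<^bsub>T\<^esub> \<in> {X \<in> carrier T. a \<odot>\<^bsub>T\<^esub> X = \<zero>\<^bsub>T\<^esub>}" using a by simp
    show "\<Union>{f ` carrier Q | f. f \<in> module_hom R Q T} \<subseteq> {X \<in> carrier T. a \<odot>\<^bsub>T\<^esub> X = \<zero>\<^bsub>T\<^esub>}"
    proof
      fix X assume "X \<in> \<Union>{f ` carrier Q | f. f \<in> module_hom R Q T}"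
      then obtain f y where f: "f \<in> module_hom R Q T" and y: "y \<in> carrier Q" and X: "X = f y" by blast
      have "a \<odot>\<^bsub>T\<^esub> f y = f (a \<odot>\<^bsub>Q\<^esub> y)" using hom_props(3)[OF f a y] by simp
      also have "\<dots> = \<zero>\<^bsub>T\<^esub>" using kill[OF f] sub ideal_mod_gen[OF aI y] by blast
      finally show "X \<in> {X \<in> carrier T. a \<odot>\<^bsub>T\<^esub> X = \<zero>\<^bsub>T\<^esub>}" using X hom_props(1)[OF f y] by simp
    qed
    show "c \<odot>\<^bsub>T\<^esub> x \<in> {X \<in> carrier T. a \<odot>\<^bsub>T\<^esub> X = \<zero>\<^bsub>T\<^esub>}" if c: "c \<in> carrier R" and x: "x \<in> {X \<in> carrier T. a \<odot>\<^bsub>T\<^esub> X = \<zero>\<^bsub>T\<^esub>}" for c x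
    proof -
      have xc: "x \<in> carrier T" and ax: "a \<odot>\<^bsub>T\<^esub> x = \<zero>\<^bsub>T\<^esub>" using x by auto
      have "a \<odot>\<^bsub>T\<^esub> (c \<odot>\<^bsub>T\<^esub> x) = (a \<otimes> c) \<odot>\<^bsub>T\<^esub> x" using a c xc by (simp add: Tm.smult_assoc1)
      also have "\<dots> = (c \<otimes> a) \<odot>\<^bsub>T\<^esub> x" using a c by (simp add: m_comm)
      also have "\<dots> = c \<odot>\<^bsub>T\<^esub> (a \<odot>\<^bsub>T\<^esub> x)" using a c xc by (simp add: Tm.smult_assoc1)
      also have "\<dots> = \<zero>\<^bsub>T\<^esub>" using ax c by simp
      finally show ?thesis using c xc by simp
    qed
    show "x \<oplus>\<^bsub>T\<^esub> y \<in> {X \<in> carrier T. a \<odot>\<^bsub>T\<^esub> X = \<zero>\<^bsub>T\<^esub>}" if "x \<in> {X \<in> carrier T. a \<odot>\<^bsub>T\<^esub> X = \<zero>\<^bsub>T\<^esub>}" "y \<in> {X \<in> carrier T. a \<odot>\<^bsub>T\<^esub> X = \<zero>\<^bsub>T\<^esub>}" for x y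
      using that a by (simp add: Tm.smult_r_distr)
  qed
  finally have "a \<odot>\<^bsub>T\<^esub> cosl R J \<one> = \<zero>\<^bsub>T\<^esub>" by (auto simp: T_def qmod_carrier)
  then have "cosl R J a = cosl R J \<zero>" using a by (simp add: T_def qmod_smult[OF J] qmod_zero)
  then have "a \<ominus> \<zero> \<in> J" using cosl_eq[OF J a zero_closed] by simp
  moreover have "a \<ominus> \<zero> = a" using a by algebra
  ultimately show "a \<in> J" by simp
qed


lemma part5:
  fixes Q :: "('a, 'm) module"
  assumes Q: "module R Q" and pg: "progenerator_module R Q"
  shows "(coreduced_module R Q \<longrightarrow> reduced_module R Q)
       \<and> (weakly_coprime_module R Q \<longrightarrow> weakly_prime_module R Q)"
proof (intro conjI impI)
  have gen: "generator_module R Q" using pg unfolding progenerator_module_def by blast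
  {
    assume cr: "coreduced_module R Q"
    show "reduced_module R Q" unfolding reduced_module_def
    proof (intro allI impI)
      fix I m assume h: "ideal I R \<and> m \<in> carrier Q \<and> ideal_elt R Q (ideal_prod R I I) m = {\<zero>\<^bsub>Q\<^esub>}"
      then have I: "ideal I R" by blast
      have II: "ideal (ideal_prod R I I) R" by (rule ideal_prod_is_ideal[OF I I])
      have "ideal_mod R Q I = ideal_mod R Q (ideal_prod R I I)"
        using cr[unfolded coreduced_module_def, THEN spec[where x=I]] I by blast
      then have "I \<subseteq> ideal_prod R I I" using gen_incl[OF Q gen I II] by simp
      then have "ideal_prod R I I = I" using ideal_prod_inter[OF I I] by blast
      then show "ideal_elt R Q I m = {\<zero>\<^bsub>Q\<^esub>}" using h by simp
    qed
  }
  {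
    assume wc: "weakly_coprime_module R Q"
    show "weakly_prime_module R Q" unfolding weakly_prime_module_def
    proof (intro allI impI)
      fix I J m assume h: "ideal I R \<and> ideal J R \<and> m \<in> carrier Q \<and> ideal_elt R Q (ideal_prod R I J) m = {\<zero>\<^bsub>Q\<^esub>}"
      then have I: "ideal I R" and J: "ideal J R" by blast+
      have IJ: "ideal (ideal_prod R I J) R" by (rule ideal_prod_is_ideal[OF I J])
      have "ideal_mod R Q (ideal_prod R I J) = ideal_mod R Q I \<or> ideal_mod R Q (ideal_prod R I J) = ideal_mod R Q J"
        using wc[unfolded weakly_coprime_module_def, THEN spec[where x=I], THEN spec[where x=J]] I J by blast
      then show "ideal_elt R Q I m = {\<zero>\<^bsub>Q\<^esub>} \<or> ideal_elt R Q J m = {\<zero>\<^bsub>Q\<^esub>}"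
      proof
        assume "ideal_mod R Q (ideal_prod R I J) = ideal_mod R Q I"
        then have "I \<subseteq> ideal_prod R I J" using gen_incl[OF Q gen I IJ] by simp
        then have "ideal_prod R I J = I" using ideal_prod_inter[OF I J] by blast
        then show ?thesis using h by simp
      next
        assume "ideal_mod R Q (ideal_prod R I J) = ideal_mod R Q J"
        then have "J \<subseteq> ideal_prod R I J" using gen_incl[OF Q gen J IJ] by simp
        then have "ideal_prod R I J = J" using ideal_prod_inter[OF I J] by blast
        then show ?thesis using h by simp
      qed
    qed
  }
qed

end

locale locz = cr R for R :: "'a ring" (structure) +
  fixes S :: "'a set"
  assumes S_sub: "S \<subseteq> carrier R" and one_S: "\<one> \<in> S" and S_mult: "s \<in> S \<Longrightarrow> t \<in> S \<Longrightarrow> s \<otimes> t \<in> S"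

locale locm = locz R S for R :: "'a ring" (structure) and S +
  fixes M :: "('a, 'm) module"
  assumes M: "module R M"
begin

sublocale Mm: module R M by (rule M)

definition lrel :: "'m \<Rightarrow> 'a \<Rightarrow> 'm \<Rightarrow> 'a \<Rightarrow> bool" where
  "lrel m s n t \<longleftrightarrow> (\<exists>u\<in>S. (u \<otimes> t) \<odot>\<^bsub>M\<^esub> m = (u \<otimes> s) \<odot>\<^bsub>M\<^esub> n)"

lemma Sc: "s \<in> S \<Longrightarrow> s \<in> carrier R" using S_sub by blast

lemma diff_zero_iff:
  assumes "u \<in> carrier R" "t \<in> carrier R" "s \<in> carrier R" "m \<in> carrier M" "n \<in> carrier M"
  shows "u \<odot>\<^bsub>M\<^esub> (t \<odot>\<^bsub>M\<^esub> m \<ominus>\<^bsub>M\<^esub> s \<odot>\<^bsub>M\<^esub> n) = \<zero>\<^bsub>M\<^esub> \<longleftrightarrow> (u \<otimes> t) \<odot>\<^bsub>M\<^esub> m = (u \<otimes> s) \<odot>\<^bsub>M\<^esub> n"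
proof -
  have "u \<odot>\<^bsub>M\<^esub> (t \<odot>\<^bsub>M\<^esub> m \<ominus>\<^bsub>M\<^esub> s \<odot>\<^bsub>M\<^esub> n) = (u \<otimes> t) \<odot>\<^bsub>M\<^esub> m \<oplus>\<^bsub>M\<^esub> \<ominus>\<^bsub>M\<^esub> ((u \<otimes> s) \<odot>\<^bsub>M\<^esub> n)"
    using assms by (simp add: a_minus_def Mm.smult_r_distr Mm.smult_r_minus Mm.smult_assoc1)
  moreover have "x \<oplus>\<^bsub>M\<^esub> \<ominus>\<^bsub>M\<^esub> y = \<zero>\<^bsub>M\<^esub> \<longleftrightarrow> x = y" if "x \<in> carrier M" "y \<in> carrier M" for x y
    using Mm.ag_eq0[OF that] that by (auto simp: Mm.r_neg)
  ultimately show ?thesis using assms by simp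
qed

lemma mem_cls:
  assumes "m \<in> carrier M" "s \<in> S"
  shows "(n, t) \<in> loc_cls R S M m s \<longleftrightarrow> n \<in> carrier M \<and> t \<in> S \<and> lrel m s n t"
  unfolding loc_cls_def lrel_def using assms diff_zero_iff Sc by auto

lemma smult_cong:
  assumes "a \<odot>\<^bsub>M\<^esub> m = b \<odot>\<^bsub>M\<^esub> n" "a \<in> carrier R" "b \<in> carrier R" "c \<in> carrier R" "m \<in> carrier M" "n \<in> carrier M"
  shows "(c \<otimes> a) \<odot>\<^bsub>M\<^esub> m = (c \<otimes> b) \<odot>\<^bsub>M\<^esub> n"
  using assms by (simp add: Mm.smult_assoc1)

lemma lrel_refl: "m \<in> carrier M \<Longrightarrow> s \<in> S \<Longrightarrow> lrel m s m s"
  unfolding lrel_def using one_S by blast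

lemma lrel_sym: "lrel m s n t \<Longrightarrow> lrel n t m s"
  unfolding lrel_def by metis

lemma lrel_trans:
  assumes "lrel m s n t" "lrel n t p w" "m \<in> carrier M" "n \<in> carrier M" "p \<in> carrier M"
    "s \<in> S" "t \<in> S" "w \<in> S"
  shows "lrel m s p w"
proof -
  obtain u where u: "u \<in> S" "(u \<otimes> t) \<odot>\<^bsub>M\<^esub> m = (u \<otimes> s) \<odot>\<^bsub>M\<^esub> n" using assms(1) unfolding lrel_def by blast
  obtain u' where u': "u' \<in> S" "(u' \<otimes> w) \<odot>\<^bsub>M\<^esub> n = (u' \<otimes> t) \<odot>\<^bsub>M\<^esub> p" using assms(2) unfolding lrel_def by blast
  have c: "u \<in> carrier R" "u' \<in> carrier R" "s \<in> carrier R" "t \<in> carrier R" "w \<in> carrier R"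
    using u u' assms Sc by auto
  define v where "v = u \<otimes> u' \<otimes> t"
  have v: "v \<in> S" unfolding v_def using u u' assms S_mult by blast
  have "(v \<otimes> w) \<odot>\<^bsub>M\<^esub> m = ((u' \<otimes> w) \<otimes> (u \<otimes> t)) \<odot>\<^bsub>M\<^esub> m" using c by (simp add: v_def m_ac)
  also have "\<dots> = ((u' \<otimes> w) \<otimes> (u \<otimes> s)) \<odot>\<^bsub>M\<^esub> n" by (rule smult_cong[OF u(2)]) (use c assms in auto)
  also have "\<dots> = ((u \<otimes> s) \<otimes> (u' \<otimes> w)) \<odot>\<^bsub>M\<^esub> n" using c by (simp add: m_ac)
  also have "\<dots> = ((u \<otimes> s) \<otimes> (u' \<otimes> t)) \<odot>\<^bsub>M\<^esub> p" by (rule smult_cong[OF u'(2)]) (use c assms in auto)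
  also have "\<dots> = (v \<otimes> s) \<odot>\<^bsub>M\<^esub> p" using c by (simp add: v_def m_ac)
  finally show ?thesis unfolding lrel_def using v by blast
qed

lemma cls_eq:
  assumes "m \<in> carrier M" "s \<in> S" "n \<in> carrier M" "t \<in> S"
  shows "loc_cls R S M m s = loc_cls R S M n t \<longleftrightarrow> lrel m s n t"
proof
  assume e: "loc_cls R S M m s = loc_cls R S M n t"
  have "(n, t) \<in> loc_cls R S M n t" using assms mem_cls lrel_refl by simp
  then have "(n, t) \<in> loc_cls R S M m s" using e by simp
  then show "lrel m s n t" using mem_cls[OF assms(1,2)] by simp
next
  assume h: "lrel m s n t"
  have "(q, w) \<in> loc_cls R S M m s \<longleftrightarrow> (q, w) \<in> loc_cls R S M n t" for q w
  proof -
    have A: "(q, w) \<in> loc_cls R S M m s \<longleftrightarrow> q \<in> carrier M \<and> w \<in> S \<and> lrel m s q w" using mem_cls[OF assms(1,2)] .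
    have B: "(q, w) \<in> loc_cls R S M n t \<longleftrightarrow> q \<in> carrier M \<and> w \<in> S \<and> lrel n t q w" using mem_cls[OF assms(3,4)] .
    show ?thesis unfolding A B using assms h lrel_trans lrel_sym by meson
  qed
  then show "loc_cls R S M m s = loc_cls R S M n t" by auto
qed

lemma self_cls: "m \<in> carrier M \<Longrightarrow> s \<in> S \<Longrightarrow> (m, s) \<in> loc_cls R S M m s"
  using mem_cls lrel_refl by simp

lemma cls_mem_eq:
  assumes "(n, t) \<in> loc_cls R S M m s" "m \<in> carrier M" "s \<in> S"
  shows "loc_cls R S M n t = loc_cls R S M m s" "n \<in> carrier M" "t \<in> S"
  using assms mem_cls cls_eq lrel_sym by auto

lemma loc_carrier_mem: "m \<in> carrier M \<Longrightarrow> s \<in> S \<Longrightarrow> loc_cls R S M m s \<in> loc_carrier R S M"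
  unfolding loc_carrier_def by blast

lemma loc_add_cls:
  assumes m: "m \<in> carrier M" and s: "s \<in> S" and n: "n \<in> carrier M" and t: "t \<in> S"
  shows "loc_add R S M (loc_cls R S M m s) (loc_cls R S M n t)
       = loc_cls R S M (t \<odot>\<^bsub>M\<^esub> m \<oplus>\<^bsub>M\<^esub> s \<odot>\<^bsub>M\<^esub> n) (s \<otimes> t)"
proof -
  let ?X = "loc_cls R S M m s" and ?Y = "loc_cls R S M n t"
  let ?P = "\<lambda>Z. \<exists>m' s' n' t'. (m', s') \<in> ?X \<and> (n', t') \<in> ?Y \<and>
      Z = loc_cls R S M (t' \<odot>\<^bsub>M\<^esub> m' \<oplus>\<^bsub>M\<^esub> s' \<odot>\<^bsub>M\<^esub> n') (s' \<otimes> t')"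
  have "?P (loc_cls R S M (t \<odot>\<^bsub>M\<^esub> m \<oplus>\<^bsub>M\<^esub> s \<odot>\<^bsub>M\<^esub> n) (s \<otimes> t))"
    using self_cls assms by blast
  then have "?P (SOME Z. ?P Z)" by (rule someI)
  then obtain m' s' n' t' where h: "(m', s') \<in> ?X" "(n', t') \<in> ?Y"
    "(SOME Z. ?P Z) = loc_cls R S M (t' \<odot>\<^bsub>M\<^esub> m' \<oplus>\<^bsub>M\<^esub> s' \<odot>\<^bsub>M\<^esub> n') (s' \<otimes> t')" by blast
  have c1: "m' \<in> carrier M" "s' \<in> S" "lrel m s m' s'" using h(1) mem_cls m s by auto
  have c2: "n' \<in> carrier M" "t' \<in> S" "lrel n t n' t'" using h(2) mem_cls n t by auto
  obtain u1 where u1: "u1 \<in> S" "(u1 \<otimes> s') \<odot>\<^bsub>M\<^esub> m = (u1 \<otimes> s) \<odot>\<^bsub>M\<^esub> m'" using c1(3) unfolding lrel_def by blast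
  obtain u2 where u2: "u2 \<in> S" "(u2 \<otimes> t') \<odot>\<^bsub>M\<^esub> n = (u2 \<otimes> t) \<odot>\<^bsub>M\<^esub> n'" using c2(3) unfolding lrel_def by blast
  have c: "u1 \<in> carrier R" "u2 \<in> carrier R" "s \<in> carrier R" "t \<in> carrier R" "s' \<in> carrier R" "t' \<in> carrier R"
    using u1 u2 s t c1 c2 Sc by auto
  define v where "v = u1 \<otimes> u2"
  have v: "v \<in> S" unfolding v_def using u1 u2 S_mult by blast
  have e1: "(v \<otimes> (s' \<otimes> t') \<otimes> t) \<odot>\<^bsub>M\<^esub> m = (v \<otimes> (s \<otimes> t) \<otimes> t') \<odot>\<^bsub>M\<^esub> m'"
  proof -
    have "(v \<otimes> (s' \<otimes> t') \<otimes> t) \<odot>\<^bsub>M\<^esub> m = ((u2 \<otimes> t' \<otimes> t) \<otimes> (u1 \<otimes> s')) \<odot>\<^bsub>M\<^esub> m" using c by (simp add: v_def m_ac)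
    also have "\<dots> = ((u2 \<otimes> t' \<otimes> t) \<otimes> (u1 \<otimes> s)) \<odot>\<^bsub>M\<^esub> m'" by (rule smult_cong[OF u1(2)]) (use c m c1 in auto)
    also have "\<dots> = (v \<otimes> (s \<otimes> t) \<otimes> t') \<odot>\<^bsub>M\<^esub> m'" using c by (simp add: v_def m_ac)
    finally show ?thesis .
  qed
  have e2: "(v \<otimes> (s' \<otimes> t') \<otimes> s) \<odot>\<^bsub>M\<^esub> n = (v \<otimes> (s \<otimes> t) \<otimes> s') \<odot>\<^bsub>M\<^esub> n'"
  proof -
    have "(v \<otimes> (s' \<otimes> t') \<otimes> s) \<odot>\<^bsub>M\<^esub> n = ((u1 \<otimes> s' \<otimes> s) \<otimes> (u2 \<otimes> t')) \<odot>\<^bsub>M\<^esub> n" using c by (simp add: v_def m_ac)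
    also have "\<dots> = ((u1 \<otimes> s' \<otimes> s) \<otimes> (u2 \<otimes> t)) \<odot>\<^bsub>M\<^esub> n'" by (rule smult_cong[OF u2(2)]) (use c n c2 in auto)
    also have "\<dots> = (v \<otimes> (s \<otimes> t) \<otimes> s') \<odot>\<^bsub>M\<^esub> n'" using c by (simp add: v_def m_ac)
    finally show ?thesis .
  qed
  have vc: "v \<in> carrier R" using v Sc by blast
  have "lrel (t \<odot>\<^bsub>M\<^esub> m \<oplus>\<^bsub>M\<^esub> s \<odot>\<^bsub>M\<^esub> n) (s \<otimes> t) (t' \<odot>\<^bsub>M\<^esub> m' \<oplus>\<^bsub>M\<^esub> s' \<odot>\<^bsub>M\<^esub> n') (s' \<otimes> t')"
    unfolding lrel_def
  proof (intro bexI[OF _ v])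
    have "(v \<otimes> (s' \<otimes> t')) \<odot>\<^bsub>M\<^esub> (t \<odot>\<^bsub>M\<^esub> m \<oplus>\<^bsub>M\<^esub> s \<odot>\<^bsub>M\<^esub> n)
        = (v \<otimes> (s' \<otimes> t') \<otimes> t) \<odot>\<^bsub>M\<^esub> m \<oplus>\<^bsub>M\<^esub> (v \<otimes> (s' \<otimes> t') \<otimes> s) \<odot>\<^bsub>M\<^esub> n"
      using c vc m n by (simp add: Mm.smult_r_distr Mm.smult_assoc1)
    also have "\<dots> = (v \<otimes> (s \<otimes> t) \<otimes> t') \<odot>\<^bsub>M\<^esub> m' \<oplus>\<^bsub>M\<^esub> (v \<otimes> (s \<otimes> t) \<otimes> s') \<odot>\<^bsub>M\<^esub> n'"
      using e1 e2 by simp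
    also have "\<dots> = (v \<otimes> (s \<otimes> t)) \<odot>\<^bsub>M\<^esub> (t' \<odot>\<^bsub>M\<^esub> m' \<oplus>\<^bsub>M\<^esub> s' \<odot>\<^bsub>M\<^esub> n')"
      using c vc c1 c2 by (simp add: Mm.smult_r_distr Mm.smult_assoc1)
    finally show "(v \<otimes> (s' \<otimes> t')) \<odot>\<^bsub>M\<^esub> (t \<odot>\<^bsub>M\<^esub> m \<oplus>\<^bsub>M\<^esub> s \<odot>\<^bsub>M\<^esub> n)
        = (v \<otimes> (s \<otimes> t)) \<odot>\<^bsub>M\<^esub> (t' \<odot>\<^bsub>M\<^esub> m' \<oplus>\<^bsub>M\<^esub> s' \<odot>\<^bsub>M\<^esub> n')" .
  qed
  then have "loc_cls R S M (t' \<odot>\<^bsub>M\<^esub> m' \<oplus>\<^bsub>M\<^esub> s' \<odot>\<^bsub>M\<^esub> n') (s' \<otimes> t') = loc_cls R S M (t \<odot>\<^bsub>M\<^esub> m \<oplus>\<^bsub>M\<^esub> s \<odot>\<^bsub>M\<^esub> n) (s \<otimes> t)"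
    using cls_eq[symmetric] c c1 c2 m n s t S_mult Sc by (metis Mm.a_closed Mm.smult_closed)
  then show ?thesis using h(3) unfolding loc_add_def by simp
qed

end

lemma self_module_simps:
  "carrier (self_module R) = carrier R" "\<zero>\<^bsub>self_module R\<^esub> = \<zero>\<^bsub>R\<^esub>"
  "x \<oplus>\<^bsub>self_module R\<^esub> y = x \<oplus>\<^bsub>R\<^esub> y" "a \<odot>\<^bsub>self_module R\<^esub> x = a \<otimes>\<^bsub>R\<^esub> x"
  "x \<otimes>\<^bsub>self_module R\<^esub> y = x \<otimes>\<^bsub>R\<^esub> y" "\<one>\<^bsub>self_module R\<^esub> = \<one>\<^bsub>R\<^esub>"
  unfolding self_module_def by simp_all

lemma (in cr) self_module_module: "module R (self_module R)"
proof (rule moduleI)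
  show "cring R" by (rule is_cring)
  show "abelian_group (self_module R)"
  proof (rule abelian_groupI)
    fix x assume "x \<in> carrier (self_module R)"
    then show "\<exists>y\<in>carrier (self_module R). y \<oplus>\<^bsub>self_module R\<^esub> x = \<zero>\<^bsub>self_module R\<^esub>"
      by (intro bexI[of _ "\<ominus> x"]) (auto simp: self_module_simps l_neg)
  qed (auto simp: self_module_simps a_ac)
qed (auto simp: self_module_simps l_distr r_distr m_assoc)

context locm begin

lemma RR_locm: "locm R S (self_module R)"
  by (rule locm.intro[OF locz_axioms]) (simp add: locm_axioms_def self_module_module)

sublocale RR: locm R S "self_module R"
  by (rule RR_locm)

lemma RR_lrel: "RR.lrel a s b t \<longleftrightarrow> (\<exists>u\<in>S. (u \<otimes> t) \<otimes> a = (u \<otimes> s) \<otimes> b)"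
  unfolding RR.lrel_def by (simp add: self_module_simps)

lemma loc_smult_cls:
  assumes a: "a \<in> carrier R" and s: "s \<in> S" and m: "m \<in> carrier M" and t: "t \<in> S"
  shows "(SOME Z. \<exists>a' s' m' t'. (a', s') \<in> loc_cls R S (self_module R) a s \<and> (m', t') \<in> loc_cls R S M m t
      \<and> Z = loc_cls R S M (a' \<odot>\<^bsub>M\<^esub> m') (s' \<otimes> t')) = loc_cls R S M (a \<odot>\<^bsub>M\<^esub> m) (s \<otimes> t)"
proof -
  let ?A = "loc_cls R S (self_module R) a s" and ?X = "loc_cls R S M m t"
  let ?P = "\<lambda>Z. \<exists>a' s' m' t'. (a', s') \<in> ?A \<and> (m', t') \<in> ?X \<and> Z = loc_cls R S M (a' \<odot>\<^bsub>M\<^esub> m') (s' \<otimes> t')"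
  have ac: "a \<in> carrier (self_module R)" using a by (simp add: self_module_simps)
  have "?P (loc_cls R S M (a \<odot>\<^bsub>M\<^esub> m) (s \<otimes> t))"
    using self_cls[OF m t] RR.self_cls[OF ac s] by blast
  then have "?P (SOME Z. ?P Z)" by (rule someI)
  then obtain a' s' m' t' where h: "(a', s') \<in> ?A" "(m', t') \<in> ?X"
    "(SOME Z. ?P Z) = loc_cls R S M (a' \<odot>\<^bsub>M\<^esub> m') (s' \<otimes> t')" by blast
  have c1: "a' \<in> carrier R" "s' \<in> S" "RR.lrel a s a' s'" using h(1) RR.mem_cls[OF ac s] by (auto simp: self_module_simps)
  have c2: "m' \<in> carrier M" "t' \<in> S" "lrel m t m' t'" using h(2) mem_cls m t by auto
  obtain u1 where u1: "u1 \<in> S" "(u1 \<otimes> s') \<otimes> a = (u1 \<otimes> s) \<otimes> a'" using c1(3) unfolding RR_lrel by blast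
  obtain u2 where u2: "u2 \<in> S" "(u2 \<otimes> t') \<odot>\<^bsub>M\<^esub> m = (u2 \<otimes> t) \<odot>\<^bsub>M\<^esub> m'" using c2(3) unfolding lrel_def by blast
  have c: "u1 \<in> carrier R" "u2 \<in> carrier R" "s \<in> carrier R" "t \<in> carrier R" "s' \<in> carrier R" "t' \<in> carrier R"
    using u1 u2 s t c1 c2 Sc by auto
  define v where "v = u1 \<otimes> u2"
  have v: "v \<in> S" unfolding v_def using u1 u2 S_mult by blast
  have "(v \<otimes> (s \<otimes> t)) \<odot>\<^bsub>M\<^esub> (a' \<odot>\<^bsub>M\<^esub> m') = (((u1 \<otimes> s) \<otimes> a') \<otimes> (u2 \<otimes> t)) \<odot>\<^bsub>M\<^esub> m'"
    using c c1 c2 by (simp add: v_def Mm.smult_assoc1[symmetric] m_ac)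
  also have "\<dots> = (((u1 \<otimes> s) \<otimes> a') \<otimes> (u2 \<otimes> t')) \<odot>\<^bsub>M\<^esub> m"
    by (rule smult_cong[OF u2(2)[symmetric]]) (use c c1 c2 m in auto)
  also have "\<dots> = (((u1 \<otimes> s') \<otimes> a) \<otimes> (u2 \<otimes> t')) \<odot>\<^bsub>M\<^esub> m" using u1(2) by simp
  also have "\<dots> = (v \<otimes> (s' \<otimes> t')) \<odot>\<^bsub>M\<^esub> (a \<odot>\<^bsub>M\<^esub> m)"
    using c a m by (simp add: v_def Mm.smult_assoc1[symmetric] m_ac)
  finally have "lrel (a \<odot>\<^bsub>M\<^esub> m) (s \<otimes> t) (a' \<odot>\<^bsub>M\<^esub> m') (s' \<otimes> t')"
    unfolding lrel_def using v by metis
  then have "loc_cls R S M (a' \<odot>\<^bsub>M\<^esub> m') (s' \<otimes> t') = loc_cls R S M (a \<odot>\<^bsub>M\<^esub> m) (s \<otimes> t)"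
    using cls_eq c c1 c2 a m s t S_mult by (metis Mm.smult_closed)
  then show ?thesis using h(3) by simp
qed

lemma locmod_smult:
  assumes "a \<in> carrier R" "s \<in> S" "m \<in> carrier M" "t \<in> S"
  shows "loc_cls R S (self_module R) a s \<odot>\<^bsub>loc_module R S M\<^esub> loc_cls R S M m t = loc_cls R S M (a \<odot>\<^bsub>M\<^esub> m) (s \<otimes> t)"
  using loc_smult_cls[OF assms] unfolding loc_module_def by simp

lemma locmod_add:
  assumes "m \<in> carrier M" "s \<in> S" "n \<in> carrier M" "t \<in> S"
  shows "loc_cls R S M m s \<oplus>\<^bsub>loc_module R S M\<^esub> loc_cls R S M n t = loc_cls R S M (t \<odot>\<^bsub>M\<^esub> m \<oplus>\<^bsub>M\<^esub> s \<odot>\<^bsub>M\<^esub> n) (s \<otimes> t)"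
  using loc_add_cls[OF assms] unfolding loc_module_def by simp

lemma locmod_zero: "\<zero>\<^bsub>loc_module R S M\<^esub> = loc_cls R S M \<zero>\<^bsub>M\<^esub> \<one>"
  unfolding loc_module_def by simp

lemma locmod_carrier: "carrier (loc_module R S M) = loc_carrier R S M"
  unfolding loc_module_def by simp

lemma locring_mult:
  assumes "a \<in> carrier R" "s \<in> S" "b \<in> carrier R" "t \<in> S"
  shows "loc_cls R S (self_module R) a s \<otimes>\<^bsub>loc_ring R S\<^esub> loc_cls R S (self_module R) b t
       = loc_cls R S (self_module R) (a \<otimes> b) (s \<otimes> t)"
proof -
  have "loc_cls R S (self_module R) a s \<otimes>\<^bsub>loc_ring R S\<^esub> loc_cls R S (self_module R) b t =
    (SOME Z. \<exists>a' s' m' t'. (a', s') \<in> loc_cls R S (self_module R) a s \<and> (m', t') \<in> loc_cls R S (self_module R) b t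
      \<and> Z = loc_cls R S (self_module R) (a' \<odot>\<^bsub>self_module R\<^esub> m') (s' \<otimes> t'))"
    unfolding loc_ring_def by (simp add: self_module_simps)
  also have "\<dots> = loc_cls R S (self_module R) (a \<odot>\<^bsub>self_module R\<^esub> b) (s \<otimes> t)"
    by (rule locm.loc_smult_cls[OF RR_locm]) (use assms in \<open>auto simp: self_module_simps\<close>)
  finally show ?thesis by (simp add: self_module_simps)
qed

lemma locring_add:
  assumes "a \<in> carrier R" "s \<in> S" "b \<in> carrier R" "t \<in> S"
  shows "loc_cls R S (self_module R) a s \<oplus>\<^bsub>loc_ring R S\<^esub> loc_cls R S (self_module R) b t
       = loc_cls R S (self_module R) (t \<otimes> a \<oplus> s \<otimes> b) (s \<otimes> t)"
  using RR.loc_add_cls[of a s b t] assms unfolding loc_ring_def by (simp add: self_module_simps)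

lemma locring_zero: "\<zero>\<^bsub>loc_ring R S\<^esub> = loc_cls R S (self_module R) \<zero> \<one>"
  unfolding loc_ring_def by simp

lemma locring_carrier: "carrier (loc_ring R S) = loc_carrier R S (self_module R)"
  unfolding loc_ring_def by simp

lemma locring_carrier_E:
  assumes "A \<in> carrier (loc_ring R S)"
  obtains a s where "a \<in> carrier R" "s \<in> S" "A = loc_cls R S (self_module R) a s"
  using assms unfolding locring_carrier loc_carrier_def by (auto simp: self_module_simps)

lemma locmod_carrier_E:
  assumes "X \<in> carrier (loc_module R S M)"
  obtains m s where "m \<in> carrier M" "s \<in> S" "X = loc_cls R S M m s"
  using assms unfolding locmod_carrier loc_carrier_def by auto

lemma locring_cls_in: "a \<in> carrier R \<Longrightarrow> s \<in> S \<Longrightarrow> loc_cls R S (self_module R) a s \<in> carrier (loc_ring R S)"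
  unfolding locring_carrier loc_carrier_def by (auto simp: self_module_simps)

lemma locmod_cls_in: "m \<in> carrier M \<Longrightarrow> s \<in> S \<Longrightarrow> loc_cls R S M m s \<in> carrier (loc_module R S M)"
  unfolding locmod_carrier loc_carrier_def by auto

lemma cls_zero_iff:
  assumes "m \<in> carrier M" "s \<in> S"
  shows "loc_cls R S M m s = loc_cls R S M \<zero>\<^bsub>M\<^esub> \<one> \<longleftrightarrow> (\<exists>u\<in>S. u \<odot>\<^bsub>M\<^esub> m = \<zero>\<^bsub>M\<^esub>)"
proof -
  have "loc_cls R S M m s = loc_cls R S M \<zero>\<^bsub>M\<^esub> \<one> \<longleftrightarrow> lrel m s \<zero>\<^bsub>M\<^esub> \<one>"
    using cls_eq assms one_S by simp
  also have "\<dots> \<longleftrightarrow> (\<exists>u\<in>S. u \<odot>\<^bsub>M\<^esub> m = \<zero>\<^bsub>M\<^esub>)"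
    unfolding lrel_def using assms Sc by (auto simp: Mm.smult_r_null)
  finally show ?thesis .
qed

end

context locm begin

abbreviation "LR \<equiv> loc_ring R S"
abbreviation "LM \<equiv> loc_module R S M"
abbreviation "cR \<equiv> loc_cls R S (self_module R)"
abbreviation "cM \<equiv> loc_cls R S M"

lemma cM_zero: "v \<in> S \<Longrightarrow> cM \<zero>\<^bsub>M\<^esub> v = \<zero>\<^bsub>LM\<^esub>"
  using cls_zero_iff[of "\<zero>\<^bsub>M\<^esub>" v] one_S Sc by (auto simp: locmod_zero)

lemma cM_zero_iff: "m \<in> carrier M \<Longrightarrow> s \<in> S \<Longrightarrow> cM m s = \<zero>\<^bsub>LM\<^esub> \<longleftrightarrow> (\<exists>u\<in>S. u \<odot>\<^bsub>M\<^esub> m = \<zero>\<^bsub>M\<^esub>)"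
  using cls_zero_iff by (simp add: locmod_zero)

lemma LM_smult_zero:
  assumes "B \<in> carrier LR" shows "B \<odot>\<^bsub>LM\<^esub> \<zero>\<^bsub>LM\<^esub> = \<zero>\<^bsub>LM\<^esub>"
proof -
  obtain b w where b: "b \<in> carrier R" "w \<in> S" "B = cR b w" using locring_carrier_E[OF assms] by blast
  have "B \<odot>\<^bsub>LM\<^esub> \<zero>\<^bsub>LM\<^esub> = cM (b \<odot>\<^bsub>M\<^esub> \<zero>\<^bsub>M\<^esub>) (w \<otimes> \<one>)"
    unfolding locmod_zero b(3) using b one_S by (simp add: locmod_smult)
  also have "\<dots> = \<zero>\<^bsub>LM\<^esub>" using b Sc cM_zero by simp
  finally show ?thesis .
qed

lemma LM_add_zero: "\<zero>\<^bsub>LM\<^esub> \<oplus>\<^bsub>LM\<^esub> \<zero>\<^bsub>LM\<^esub> = \<zero>\<^bsub>LM\<^esub>"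
proof -
  have "\<zero>\<^bsub>LM\<^esub> \<oplus>\<^bsub>LM\<^esub> \<zero>\<^bsub>LM\<^esub> = cM (\<one> \<odot>\<^bsub>M\<^esub> \<zero>\<^bsub>M\<^esub> \<oplus>\<^bsub>M\<^esub> \<one> \<odot>\<^bsub>M\<^esub> \<zero>\<^bsub>M\<^esub>) (\<one> \<otimes> \<one>)"
    unfolding locmod_zero using locmod_add[of "\<zero>\<^bsub>M\<^esub>" \<one> "\<zero>\<^bsub>M\<^esub>" \<one>] one_S by simp
  also have "\<dots> = cM \<zero>\<^bsub>M\<^esub> \<one>" by simp
  also have "\<dots> = \<zero>\<^bsub>LM\<^esub>" by (simp add: locmod_zero)
  finally show ?thesis .
qed

lemma LR_zero_smult: "X \<in> carrier LM \<Longrightarrow> \<zero>\<^bsub>LR\<^esub> \<odot>\<^bsub>LM\<^esub> X = \<zero>\<^bsub>LM\<^esub>"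
proof -
  assume "X \<in> carrier LM"
  then obtain x s where x: "x \<in> carrier M" "s \<in> S" "X = cM x s" using locmod_carrier_E by blast
  have "\<zero>\<^bsub>LR\<^esub> \<odot>\<^bsub>LM\<^esub> X = cM (\<zero> \<odot>\<^bsub>M\<^esub> x) (\<one> \<otimes> s)" unfolding locring_zero x(3) using x one_S by (simp add: locmod_smult)
  also have "\<dots> = \<zero>\<^bsub>LM\<^esub>" using x Sc cM_zero by simp
  finally show ?thesis .
qed

lemma ideal_LR_sub: "ideal J LR \<Longrightarrow> J \<subseteq> carrier LR"
  by (simp add: ideal.axioms(1) additive_subgroup.a_subset)

lemma ideal_LR_zero: "ideal J LR \<Longrightarrow> \<zero>\<^bsub>LR\<^esub> \<in> J"
  by (simp add: ideal.axioms(1) additive_subgroup.zero_closed)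

lemma LM_elt_zero_iff:
  assumes J: "ideal J LR" and X: "X \<in> carrier LM"
  shows "ideal_elt LR LM J X = {\<zero>\<^bsub>LM\<^esub>} \<longleftrightarrow> (\<forall>A\<in>J. A \<odot>\<^bsub>LM\<^esub> X = \<zero>\<^bsub>LM\<^esub>)"
proof
  assume "ideal_elt LR LM J X = {\<zero>\<^bsub>LM\<^esub>}"
  then show "\<forall>A\<in>J. A \<odot>\<^bsub>LM\<^esub> X = \<zero>\<^bsub>LM\<^esub>" unfolding ideal_elt_def by blast
next
  assume h: "\<forall>A\<in>J. A \<odot>\<^bsub>LM\<^esub> X = \<zero>\<^bsub>LM\<^esub>"
  have "\<zero>\<^bsub>LM\<^esub> \<in> ideal_elt LR LM J X"
    unfolding ideal_elt_def using ideal_LR_zero[OF J] LR_zero_smult[OF X, symmetric] by blast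
  moreover have "ideal_elt LR LM J X \<subseteq> {\<zero>\<^bsub>LM\<^esub>}" unfolding ideal_elt_def using h by blast
  ultimately show "ideal_elt LR LM J X = {\<zero>\<^bsub>LM\<^esub>}" by blast
qed

lemma LM_ideal_mod_zero:
  assumes kill: "\<And>A Y. A \<in> J \<Longrightarrow> Y \<in> carrier LM \<Longrightarrow> A \<odot>\<^bsub>LM\<^esub> Y = \<zero>\<^bsub>LM\<^esub>"
  shows "ideal_mod LR LM J = {\<zero>\<^bsub>LM\<^esub>}"
proof
  show "ideal_mod LR LM J \<subseteq> {\<zero>\<^bsub>LM\<^esub>}"
    unfolding ideal_mod_def
  proof (rule gen_submod_least)
    show "\<zero>\<^bsub>LM\<^esub> \<in> {\<zero>\<^bsub>LM\<^esub>}" by simp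
    show "{a \<odot>\<^bsub>LM\<^esub> m |a m. a \<in> J \<and> m \<in> carrier LM} \<subseteq> {\<zero>\<^bsub>LM\<^esub>}" using kill by blast
    show "a \<odot>\<^bsub>LM\<^esub> x \<in> {\<zero>\<^bsub>LM\<^esub>}" if "a \<in> carrier LR" "x \<in> {\<zero>\<^bsub>LM\<^esub>}" for a x
      using that LM_smult_zero by simp
    show "x \<oplus>\<^bsub>LM\<^esub> y \<in> {\<zero>\<^bsub>LM\<^esub>}" if "x \<in> {\<zero>\<^bsub>LM\<^esub>}" "y \<in> {\<zero>\<^bsub>LM\<^esub>}" for x y
      using that LM_add_zero by simp
  qed
  show "{\<zero>\<^bsub>LM\<^esub>} \<subseteq> ideal_mod LR LM J" using ideal_mod_zero_in by blast
qed

lemma loc_prime: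
  assumes pr: "prime_module R M"
  shows "prime_module LR LM"
  unfolding prime_module_def
proof (intro allI impI)
  fix J X assume h: "ideal J LR \<and> X \<in> carrier LM \<and> ideal_elt LR LM J X = {\<zero>\<^bsub>LM\<^esub>}"
  then have J: "ideal J LR" and X: "X \<in> carrier LM" and JX: "ideal_elt LR LM J X = {\<zero>\<^bsub>LM\<^esub>}" by auto
  obtain x s where x: "x \<in> carrier M" "s \<in> S" "X = cM x s" using locmod_carrier_E[OF X] by blast
  show "X = \<zero>\<^bsub>LM\<^esub> \<or> ideal_mod LR LM J = {\<zero>\<^bsub>LM\<^esub>}"
  proof (cases "X = \<zero>\<^bsub>LM\<^esub>")
    case True then show ?thesis by blast
  next
    case False
    then have nz: "u \<odot>\<^bsub>M\<^esub> x \<noteq> \<zero>\<^bsub>M\<^esub>" if "u \<in> S" for u using cM_zero_iff x that by blast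
    have "ideal_mod LR LM J = {\<zero>\<^bsub>LM\<^esub>}"
    proof (rule LM_ideal_mod_zero)
      fix A Y assume A: "A \<in> J" and Y: "Y \<in> carrier LM"
      obtain a t where a: "a \<in> carrier R" "t \<in> S" "A = cR a t"
        using locring_carrier_E ideal_LR_sub[OF J] A by blast
      obtain y v where y: "y \<in> carrier M" "v \<in> S" "Y = cM y v" using locmod_carrier_E[OF Y] by blast
      have "A \<odot>\<^bsub>LM\<^esub> X = \<zero>\<^bsub>LM\<^esub>" using LM_elt_zero_iff[OF J X] JX A by blast
      then have "cM (a \<odot>\<^bsub>M\<^esub> x) (t \<otimes> s) = \<zero>\<^bsub>LM\<^esub>" using a x by (simp add: locmod_smult)
      then obtain u where u: "u \<in> S" "u \<odot>\<^bsub>M\<^esub> (a \<odot>\<^bsub>M\<^esub> x) = \<zero>\<^bsub>M\<^esub>"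
        using cM_zero_iff[of "a \<odot>\<^bsub>M\<^esub> x" "t \<otimes> s"] a x S_mult by auto
      have uc: "u \<in> carrier R" using u Sc by blast
      have "a \<odot>\<^bsub>M\<^esub> (u \<odot>\<^bsub>M\<^esub> x) = \<zero>\<^bsub>M\<^esub>"
        using u(2) a uc x by (simp add: Mm.smult_assoc1[symmetric] m_comm)
      then have ay: "a \<odot>\<^bsub>M\<^esub> y = \<zero>\<^bsub>M\<^esub>"
        using prime_kills[OF M pr a(1) _ nz[OF u(1)] _ y(1)] uc x by simp
      have "A \<odot>\<^bsub>LM\<^esub> Y = cM (a \<odot>\<^bsub>M\<^esub> y) (t \<otimes> v)" using a y by (simp add: locmod_smult)
      also have "\<dots> = \<zero>\<^bsub>LM\<^esub>" using ay cM_zero S_mult a y by simp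
      finally show "A \<odot>\<^bsub>LM\<^esub> Y = \<zero>\<^bsub>LM\<^esub>" .
    qed
    then show ?thesis by blast
  qed
qed

lemma loc_weakly_prime:
  assumes wp: "weakly_prime_module R M"
  shows "weakly_prime_module LR LM"
  unfolding weakly_prime_module_def
proof (intro allI impI)
  fix J K X assume h: "ideal J LR \<and> ideal K LR \<and> X \<in> carrier LM \<and> ideal_elt LR LM (ideal_prod LR J K) X = {\<zero>\<^bsub>LM\<^esub>}"
  then have J: "ideal J LR" and K: "ideal K LR" and X: "X \<in> carrier LM"
    and JKX: "ideal_elt LR LM (ideal_prod LR J K) X = {\<zero>\<^bsub>LM\<^esub>}" by auto
  have ringLR: "ring LR" using J by (simp add: ideal.axioms(2))
  have JK: "ideal (ideal_prod LR J K) LR" by (rule ring.ideal_prod_is_ideal[OF ringLR J K])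
  obtain x s where x: "x \<in> carrier M" "s \<in> S" "X = cM x s" using locmod_carrier_E[OF X] by blast
  show "ideal_elt LR LM J X = {\<zero>\<^bsub>LM\<^esub>} \<or> ideal_elt LR LM K X = {\<zero>\<^bsub>LM\<^esub>}"
  proof (rule ccontr)
    assume "\<not> ?thesis"
    then have "\<not> (\<forall>A\<in>J. A \<odot>\<^bsub>LM\<^esub> X = \<zero>\<^bsub>LM\<^esub>)" "\<not> (\<forall>A\<in>K. A \<odot>\<^bsub>LM\<^esub> X = \<zero>\<^bsub>LM\<^esub>)"
      unfolding LM_elt_zero_iff[OF J X] LM_elt_zero_iff[OF K X] by auto
    then obtain A B where A: "A \<in> J" "A \<odot>\<^bsub>LM\<^esub> X \<noteq> \<zero>\<^bsub>LM\<^esub>" and B: "B \<in> K" "B \<odot>\<^bsub>LM\<^esub> X \<noteq> \<zero>\<^bsub>LM\<^esub>"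
      by blast
    obtain a t where a: "a \<in> carrier R" "t \<in> S" "A = cR a t"
      using locring_carrier_E ideal_LR_sub[OF J] A(1) by blast
    obtain b w where b: "b \<in> carrier R" "w \<in> S" "B = cR b w"
      using locring_carrier_E ideal_LR_sub[OF K] B(1) by blast
    have tc: "t \<in> carrier R" "w \<in> carrier R" "s \<in> carrier R" using a b x Sc by auto
    have "A \<otimes>\<^bsub>LR\<^esub> B \<in> ideal_prod LR J K" using A(1) B(1) by (rule ideal_prod.prod)
    then have "(A \<otimes>\<^bsub>LR\<^esub> B) \<odot>\<^bsub>LM\<^esub> X = \<zero>\<^bsub>LM\<^esub>" using LM_elt_zero_iff[OF JK X] JKX by blast
    moreover have "A \<otimes>\<^bsub>LR\<^esub> B = cR (a \<otimes> b) (t \<otimes> w)" using a b by (simp add: locring_mult)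
    ultimately have "cM ((a \<otimes> b) \<odot>\<^bsub>M\<^esub> x) ((t \<otimes> w) \<otimes> s) = \<zero>\<^bsub>LM\<^esub>" using a b x S_mult
      by (simp add: locmod_smult)
    moreover have "(a \<otimes> b) \<odot>\<^bsub>M\<^esub> x \<in> carrier M" "(t \<otimes> w) \<otimes> s \<in> S" using a b x S_mult by auto
    ultimately obtain u where u: "u \<in> S" "u \<odot>\<^bsub>M\<^esub> ((a \<otimes> b) \<odot>\<^bsub>M\<^esub> x) = \<zero>\<^bsub>M\<^esub>"
      using cM_zero_iff by blast
    have uc: "u \<in> carrier R" using u Sc by blast
    have ux: "u \<odot>\<^bsub>M\<^esub> x \<in> carrier M" using uc x by simp
    have na: "u \<odot>\<^bsub>M\<^esub> (a \<odot>\<^bsub>M\<^esub> x) \<noteq> \<zero>\<^bsub>M\<^esub>"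
    proof
      assume "u \<odot>\<^bsub>M\<^esub> (a \<odot>\<^bsub>M\<^esub> x) = \<zero>\<^bsub>M\<^esub>"
      moreover have "a \<odot>\<^bsub>M\<^esub> x \<in> carrier M" "t \<otimes> s \<in> S" using a x S_mult by auto
      ultimately have "cM (a \<odot>\<^bsub>M\<^esub> x) (t \<otimes> s) = \<zero>\<^bsub>LM\<^esub>" using cM_zero_iff u(1) by blast
      then show False using A(2) a x by (simp add: locmod_smult)
    qed
    have nb: "u \<odot>\<^bsub>M\<^esub> (b \<odot>\<^bsub>M\<^esub> x) \<noteq> \<zero>\<^bsub>M\<^esub>"
    proof
      assume "u \<odot>\<^bsub>M\<^esub> (b \<odot>\<^bsub>M\<^esub> x) = \<zero>\<^bsub>M\<^esub>"
      moreover have "b \<odot>\<^bsub>M\<^esub> x \<in> carrier M" "w \<otimes> s \<in> S" using b x S_mult by auto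
      ultimately have "cM (b \<odot>\<^bsub>M\<^esub> x) (w \<otimes> s) = \<zero>\<^bsub>LM\<^esub>" using cM_zero_iff u(1) by blast
      then show False using B(2) b x by (simp add: locmod_smult)
    qed
    have Pa: "ideal (PIdl a) R" by (rule cgenideal_ideal[OF a(1)])
    have Pb: "ideal (PIdl b) R" by (rule cgenideal_ideal[OF b(1)])
    have PP: "ideal (ideal_prod R (PIdl a) (PIdl b)) R" by (rule ideal_prod_is_ideal[OF Pa Pb])
    have "\<forall>c\<in>ideal_prod R (PIdl a) (PIdl b). c \<odot>\<^bsub>M\<^esub> (u \<odot>\<^bsub>M\<^esub> x) = \<zero>\<^bsub>M\<^esub>"
    proof
      fix c assume "c \<in> ideal_prod R (PIdl a) (PIdl b)"
      then have "c \<in> PIdl (a \<otimes> b)" using prod_PIdl[OF a(1) b(1)] by blast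
      then obtain r where r: "r \<in> carrier R" "c = r \<otimes> (a \<otimes> b)" unfolding cgenideal_def by blast
      have "c \<odot>\<^bsub>M\<^esub> (u \<odot>\<^bsub>M\<^esub> x) = r \<odot>\<^bsub>M\<^esub> (u \<odot>\<^bsub>M\<^esub> ((a \<otimes> b) \<odot>\<^bsub>M\<^esub> x))"
        using r a b uc x by (simp add: Mm.smult_assoc1[symmetric] m_ac)
      then show "c \<odot>\<^bsub>M\<^esub> (u \<odot>\<^bsub>M\<^esub> x) = \<zero>\<^bsub>M\<^esub>" using u(2) r by simp
    qed
    then have "ideal_elt R M (ideal_prod R (PIdl a) (PIdl b)) (u \<odot>\<^bsub>M\<^esub> x) = {\<zero>\<^bsub>M\<^esub>}"
      using elt_zero_iff[OF M PP ux] by blast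
    then have "ideal_elt R M (PIdl a) (u \<odot>\<^bsub>M\<^esub> x) = {\<zero>\<^bsub>M\<^esub>} \<or> ideal_elt R M (PIdl b) (u \<odot>\<^bsub>M\<^esub> x) = {\<zero>\<^bsub>M\<^esub>}"
      using wp[unfolded weakly_prime_module_def, THEN spec[where x="PIdl a"], THEN spec[where x="PIdl b"],
          THEN spec[where x="u \<odot>\<^bsub>M\<^esub> x"]] Pa Pb ux by blast
    then have "a \<odot>\<^bsub>M\<^esub> (u \<odot>\<^bsub>M\<^esub> x) = \<zero>\<^bsub>M\<^esub> \<or> b \<odot>\<^bsub>M\<^esub> (u \<odot>\<^bsub>M\<^esub> x) = \<zero>\<^bsub>M\<^esub>"
      using elt_zero_iff[OF M Pa ux] elt_zero_iff[OF M Pb ux] cgenideal_self[OF a(1)] cgenideal_self[OF b(1)]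
      by blast
    moreover have "a \<odot>\<^bsub>M\<^esub> (u \<odot>\<^bsub>M\<^esub> x) = u \<odot>\<^bsub>M\<^esub> (a \<odot>\<^bsub>M\<^esub> x)" "b \<odot>\<^bsub>M\<^esub> (u \<odot>\<^bsub>M\<^esub> x) = u \<odot>\<^bsub>M\<^esub> (b \<odot>\<^bsub>M\<^esub> x)"
      using a b uc x by (simp_all add: Mm.smult_assoc1[symmetric] m_comm)
    ultimately show False using na nb by simp
  qed
qed

end

context locm begin

definition contr :: "('a \<times> 'a) set set \<Rightarrow> 'a set" where
  "contr L = {a \<in> carrier R. cR a \<one> \<in> L}"

lemma cR_one_mult: "a \<in> carrier R \<Longrightarrow> t \<in> S \<Longrightarrow> cR t \<one> \<otimes>\<^bsub>LR\<^esub> cR a t = cR a \<one>"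
proof -
  assume a: "a \<in> carrier R" and t: "t \<in> S"
  have tc: "t \<in> carrier R" using t Sc by blast
  have "cR t \<one> \<otimes>\<^bsub>LR\<^esub> cR a t = cR (t \<otimes> a) (\<one> \<otimes> t)" using a t one_S tc by (simp add: locring_mult)
  also have "\<dots> = cR a \<one>"
  proof -
    have "RR.lrel (t \<otimes> a) (\<one> \<otimes> t) a \<one>" unfolding RR_lrel using one_S a tc
      by (intro bexI[of _ \<one>]) (auto simp: m_ac)
    then show ?thesis using RR.cls_eq[of "t \<otimes> a" "\<one> \<otimes> t" a \<one>] a tc t one_S
      by (simp add: self_module_simps)
  qed
  finally show ?thesis .
qed

lemma contr_mem:
  assumes L: "ideal L LR" and A: "A \<in> L"
  obtains a t where "a \<in> contr L" "t \<in> S" "A = cR a t"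
proof -
  obtain a t where a: "a \<in> carrier R" "t \<in> S" "A = cR a t"
    using locring_carrier_E ideal_LR_sub[OF L] A by blast
  have "cR t \<one> \<otimes>\<^bsub>LR\<^esub> A \<in> L"
    using ideal.I_l_closed[OF L A] locring_cls_in a Sc one_S by blast
  then have "a \<in> contr L" using cR_one_mult a unfolding contr_def by simp
  then show ?thesis using that a by blast
qed

lemma contr_sub: "contr L \<subseteq> carrier R" unfolding contr_def by blast

lemma contr_ideal:
  assumes L: "ideal L LR"
  shows "ideal (contr L) R"
proof (rule idealI)
  show "ring R" by (rule ring_axioms)
  have ringLR: "ring LR" using L by (simp add: ideal.axioms(2))
  have add: "cR (a \<oplus> b) \<one> = cR a \<one> \<oplus>\<^bsub>LR\<^esub> cR b \<one>" if "a \<in> carrier R" "b \<in> carrier R" for a b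
    using locring_add[of a \<one> b \<one>] that one_S by simp
  have mul: "cR (a \<otimes> b) \<one> = cR a \<one> \<otimes>\<^bsub>LR\<^esub> cR b \<one>" if "a \<in> carrier R" "b \<in> carrier R" for a b
    using locring_mult[of a \<one> b \<one>] that one_S by simp
  have Lc: "x \<in> L \<Longrightarrow> y \<in> L \<Longrightarrow> x \<oplus>\<^bsub>LR\<^esub> y \<in> L" for x y
    using L by (simp add: ideal.axioms(1) additive_subgroup.a_closed)
  show "subgroup (contr L) (add_monoid R)"
  proof (rule subgroup.intro)
    show "contr L \<subseteq> carrier (add_monoid R)" using contr_sub by simp
    show "x \<otimes>\<^bsub>add_monoid R\<^esub> y \<in> contr L" if "x \<in> contr L" "y \<in> contr L" for x y
      using that add Lc unfolding contr_def by auto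
    show "\<one>\<^bsub>add_monoid R\<^esub> \<in> contr L" using ideal_LR_zero[OF L] unfolding contr_def by (simp add: locring_zero)
    show "inv\<^bsub>add_monoid R\<^esub> x \<in> contr L" if x: "x \<in> contr L" for x
    proof -
      have xc: "x \<in> carrier R" using x contr_sub by blast
      have "cR (\<ominus> \<one> \<otimes> x) \<one> = cR (\<ominus> \<one>) \<one> \<otimes>\<^bsub>LR\<^esub> cR x \<one>" using mul xc by simp
      moreover have "cR (\<ominus> \<one>) \<one> \<otimes>\<^bsub>LR\<^esub> cR x \<one> \<in> L"
        using ideal.I_l_closed[OF L] x locring_cls_in one_S unfolding contr_def by simp
      ultimately have "\<ominus> x \<in> contr L" using xc unfolding contr_def by (simp add: l_minus)
      then show ?thesis by (simp add: a_inv_def)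
    qed
  qed
  show "y \<otimes> x \<in> contr L" if "x \<in> contr L" "y \<in> carrier R" for x y
    using that mul ideal.I_l_closed[OF L] locring_cls_in one_S unfolding contr_def by simp
  show "x \<otimes> y \<in> contr L" if "x \<in> contr L" "y \<in> carrier R" for x y
    using that mul ideal.I_r_closed[OF L] locring_cls_in one_S unfolding contr_def by simp
qed

lemma ideal_mod_carrier': "I \<subseteq> carrier R \<Longrightarrow> ideal_mod R M I \<subseteq> carrier M"
  unfolding ideal_mod_def by (rule gen_submod_carrier[OF M]) auto

lemma cM_add_same:
  assumes "y1 \<in> carrier M" "y2 \<in> carrier M" "v \<in> S"
  shows "cM y1 v \<oplus>\<^bsub>LM\<^esub> cM y2 v = cM (y1 \<oplus>\<^bsub>M\<^esub> y2) v"
proof -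
  have vc: "v \<in> carrier R" using assms Sc by blast
  have "cM y1 v \<oplus>\<^bsub>LM\<^esub> cM y2 v = cM (v \<odot>\<^bsub>M\<^esub> y1 \<oplus>\<^bsub>M\<^esub> v \<odot>\<^bsub>M\<^esub> y2) (v \<otimes> v)"
    using locmod_add assms by simp
  also have "\<dots> = cM (y1 \<oplus>\<^bsub>M\<^esub> y2) v"
  proof -
    have "lrel (v \<odot>\<^bsub>M\<^esub> y1 \<oplus>\<^bsub>M\<^esub> v \<odot>\<^bsub>M\<^esub> y2) (v \<otimes> v) (y1 \<oplus>\<^bsub>M\<^esub> y2) v"
      unfolding lrel_def using one_S assms vc
      by (intro bexI[of _ \<one>]) (simp_all add: Mm.smult_r_distr Mm.smult_assoc1)
    then show ?thesis using cls_eq assms vc S_mult by (meson Mm.a_closed Mm.smult_closed)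
  qed
  finally show ?thesis .
qed

lemma char:
  assumes L: "ideal L LR"
  shows "ideal_mod LR LM L = {cM y v | y v. y \<in> ideal_mod R M (contr L) \<and> v \<in> S}"
proof
  have Lsub: "ideal_mod R M (contr L) \<subseteq> carrier M" by (rule ideal_mod_carrier'[OF contr_sub])
  show "ideal_mod LR LM L \<subseteq> {cM y v | y v. y \<in> ideal_mod R M (contr L) \<and> v \<in> S}"
    unfolding ideal_mod_def[of LR]
  proof (rule gen_submod_least)
    show "\<zero>\<^bsub>LM\<^esub> \<in> {cM y v | y v. y \<in> ideal_mod R M (contr L) \<and> v \<in> S}"
      using ideal_mod_zero_in one_S unfolding locmod_zero by blast
    show "{a \<odot>\<^bsub>LM\<^esub> m |a m. a \<in> L \<and> m \<in> carrier LM} \<subseteq> {cM y v | y v. y \<in> ideal_mod R M (contr L) \<and> v \<in> S}"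
    proof clarify
      fix A Y assume A: "A \<in> L" and Y: "Y \<in> carrier LM"
      obtain a t where a: "a \<in> contr L" "t \<in> S" "A = cR a t" using contr_mem[OF L A] by blast
      obtain y v where y: "y \<in> carrier M" "v \<in> S" "Y = cM y v" using locmod_carrier_E[OF Y] by blast
      have ac: "a \<in> carrier R" using a contr_sub by blast
      have "A \<odot>\<^bsub>LM\<^esub> Y = cM (a \<odot>\<^bsub>M\<^esub> y) (t \<otimes> v)" using a y ac by (simp add: locmod_smult)
      moreover have "a \<odot>\<^bsub>M\<^esub> y \<in> ideal_mod R M (contr L)" by (rule ideal_mod_gen[OF a(1) y(1)])
      moreover have "t \<otimes> v \<in> S" using a y S_mult by blast
      ultimately show "\<exists>y v. A \<odot>\<^bsub>LM\<^esub> Y = cM y v \<and> y \<in> ideal_mod R M (contr L) \<and> v \<in> S" by blast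
    qed
    show "B \<odot>\<^bsub>LM\<^esub> Z \<in> {cM y v | y v. y \<in> ideal_mod R M (contr L) \<and> v \<in> S}"
      if B: "B \<in> carrier LR" and Z: "Z \<in> {cM y v | y v. y \<in> ideal_mod R M (contr L) \<and> v \<in> S}" for B Z
    proof -
      obtain b w where b: "b \<in> carrier R" "w \<in> S" "B = cR b w" using locring_carrier_E[OF B] by blast
      obtain y v where y: "y \<in> ideal_mod R M (contr L)" "v \<in> S" "Z = cM y v" using Z by blast
      have yc: "y \<in> carrier M" using y Lsub by blast
      have "B \<odot>\<^bsub>LM\<^esub> Z = cM (b \<odot>\<^bsub>M\<^esub> y) (w \<otimes> v)" using b y yc by (simp add: locmod_smult)
      moreover have "b \<odot>\<^bsub>M\<^esub> y \<in> ideal_mod R M (contr L)" by (rule ideal_mod_smult[OF b(1) y(1)])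
      moreover have "w \<otimes> v \<in> S" using b y S_mult by blast
      ultimately show ?thesis by blast
    qed
    show "Z1 \<oplus>\<^bsub>LM\<^esub> Z2 \<in> {cM y v | y v. y \<in> ideal_mod R M (contr L) \<and> v \<in> S}"
      if Z1: "Z1 \<in> {cM y v | y v. y \<in> ideal_mod R M (contr L) \<and> v \<in> S}"
        and Z2: "Z2 \<in> {cM y v | y v. y \<in> ideal_mod R M (contr L) \<and> v \<in> S}" for Z1 Z2
    proof -
      obtain y v where y: "y \<in> ideal_mod R M (contr L)" "v \<in> S" "Z1 = cM y v" using Z1 by blast
      obtain y' v' where y': "y' \<in> ideal_mod R M (contr L)" "v' \<in> S" "Z2 = cM y' v'" using Z2 by blast
      have yc: "y \<in> carrier M" "y' \<in> carrier M" using y y' Lsub by auto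
      have "Z1 \<oplus>\<^bsub>LM\<^esub> Z2 = cM (v' \<odot>\<^bsub>M\<^esub> y \<oplus>\<^bsub>M\<^esub> v \<odot>\<^bsub>M\<^esub> y') (v \<otimes> v')"
        using y y' yc by (simp add: locmod_add)
      moreover have "v' \<odot>\<^bsub>M\<^esub> y \<oplus>\<^bsub>M\<^esub> v \<odot>\<^bsub>M\<^esub> y' \<in> ideal_mod R M (contr L)"
        using ideal_mod_add ideal_mod_smult y y' Sc by metis
      moreover have "v \<otimes> v' \<in> S" using y y' S_mult by blast
      ultimately show ?thesis by blast
    qed
  qed
  show "{cM y v | y v. y \<in> ideal_mod R M (contr L) \<and> v \<in> S} \<subseteq> ideal_mod LR LM L"
  proof clarify
    fix y v assume y: "y \<in> ideal_mod R M (contr L)" and v: "v \<in> S"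
    from y[unfolded ideal_mod_def] have "\<forall>v\<in>S. cM y v \<in> ideal_mod LR LM L"
    proof (induction rule: gen_submod.induct)
      case zero
      then show ?case using cM_zero ideal_mod_zero_in[of LM LR L] by simp
    next
      case (incl x)
      then obtain a m where am: "a \<in> contr L" "m \<in> carrier M" "x = a \<odot>\<^bsub>M\<^esub> m" by blast
      have ac: "a \<in> carrier R" using am contr_sub by blast
      show ?case
      proof
        fix v assume v: "v \<in> S"
        have "cR a \<one> \<odot>\<^bsub>LM\<^esub> cM m v = cM (a \<odot>\<^bsub>M\<^esub> m) (\<one> \<otimes> v)" using ac am v one_S by (simp add: locmod_smult)
        then have "cM x v = cR a \<one> \<odot>\<^bsub>LM\<^esub> cM m v" using am v Sc by simp
        moreover have "cR a \<one> \<in> L" using am unfolding contr_def by simp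
        moreover have "cM m v \<in> carrier LM" using locmod_cls_in am v by blast
        ultimately show "cM x v \<in> ideal_mod LR LM L" using ideal_mod_gen by metis
      qed
    next
      case (smult b x)
      have xc: "x \<in> carrier M" using smult.hyps(2) Lsub unfolding ideal_mod_def by blast
      show ?case
      proof
        fix v assume v: "v \<in> S"
        have "cR b \<one> \<odot>\<^bsub>LM\<^esub> cM x v = cM (b \<odot>\<^bsub>M\<^esub> x) (\<one> \<otimes> v)" using smult.hyps(1) xc v one_S by (simp add: locmod_smult)
        then have "cM (b \<odot>\<^bsub>M\<^esub> x) v = cR b \<one> \<odot>\<^bsub>LM\<^esub> cM x v" using v Sc by simp
        moreover have "cR b \<one> \<in> carrier LR" using locring_cls_in smult.hyps(1) one_S by blast
        ultimately show "cM (b \<odot>\<^bsub>M\<^esub> x) v \<in> ideal_mod LR LM L" using ideal_mod_smult smult.IH v by metis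
      qed
    next
      case (add x y)
      have xc: "x \<in> carrier M" "y \<in> carrier M" using add.hyps(1,2) Lsub unfolding ideal_mod_def by blast+
      show ?case
      proof
        fix v assume v: "v \<in> S"
        have "cM (x \<oplus>\<^bsub>M\<^esub> y) v = cM x v \<oplus>\<^bsub>LM\<^esub> cM y v" using cM_add_same xc v by simp
        then show "cM (x \<oplus>\<^bsub>M\<^esub> y) v \<in> ideal_mod LR LM L" using ideal_mod_add add.IH v by metis
      qed
    qed
    then show "cM y v \<in> ideal_mod LR LM L" using v by blast
  qed
qed

lemma loc_coprime:
  assumes cp: "coprime_module R M"
  shows "coprime_module LR LM"
  unfolding coprime_module_def
proof (intro allI impI)
  fix J assume J: "ideal J LR"
  have I0: "ideal (contr J) R" by (rule contr_ideal[OF J])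
  consider "ideal_mod R M (contr J) = {\<zero>\<^bsub>M\<^esub>}" | "ideal_mod R M (contr J) = carrier M"
    using cp[unfolded coprime_module_def, THEN spec[where x="contr J"]] I0 by blast
  then show "ideal_mod LR LM J = {\<zero>\<^bsub>LM\<^esub>} \<or> ideal_mod LR LM J = carrier LM"
  proof cases
    case 1
    have "ideal_mod LR LM J = {cM \<zero>\<^bsub>M\<^esub> v | v. v \<in> S}" unfolding char[OF J] 1 by blast
    also have "\<dots> = {\<zero>\<^bsub>LM\<^esub>}" using cM_zero one_S by blast
    finally show ?thesis by blast
  next
    case 2
    have "ideal_mod LR LM J = {cM y v | y v. y \<in> carrier M \<and> v \<in> S}" unfolding char[OF J] 2 by blast
    also have "\<dots> = carrier LM" unfolding locmod_carrier loc_carrier_def by blast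
    finally show ?thesis by blast
  qed
qed

lemma loc_weakly_coprime:
  assumes wc: "weakly_coprime_module R M"
  shows "weakly_coprime_module LR LM"
  unfolding weakly_coprime_module_def
proof (intro allI impI)
  fix J K assume JK: "ideal J LR \<and> ideal K LR"
  then have J: "ideal J LR" and K: "ideal K LR" by auto
  have ringLR: "ring LR" using J by (simp add: ideal.axioms(2))
  define L where "L = ideal_prod LR J K"
  have L: "ideal L LR" unfolding L_def by (rule ring.ideal_prod_is_ideal[OF ringLR J K])
  have LJK: "L \<subseteq> J \<inter> K" unfolding L_def by (rule ring.ideal_prod_inter[OF ringLR J K])
  have I0: "ideal (contr J) R" by (rule contr_ideal[OF J])
  have K0: "ideal (contr K) R" by (rule contr_ideal[OF K])
  have L0J: "contr L \<subseteq> contr J" and L0K: "contr L \<subseteq> contr K" using LJK unfolding contr_def by auto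
  have IKL: "ideal_prod R (contr J) (contr K) \<subseteq> contr L"
  proof
    fix c assume "c \<in> ideal_prod R (contr J) (contr K)"
    then show "c \<in> contr L"
    proof (induction rule: ideal_prod.induct)
      case (prod i j)
      have c: "i \<in> carrier R" "j \<in> carrier R" using prod contr_sub by auto
      have "cR i \<one> \<otimes>\<^bsub>LR\<^esub> cR j \<one> \<in> L" unfolding L_def
        using prod unfolding contr_def by (blast intro: ideal_prod.prod)
      moreover have "cR i \<one> \<otimes>\<^bsub>LR\<^esub> cR j \<one> = cR (i \<otimes> j) \<one>" using locring_mult[of i \<one> j \<one>] c one_S by simp
      ultimately show ?case using c unfolding contr_def by simp
    next
      case (sum s1 s2)
      have c: "s1 \<in> carrier R" "s2 \<in> carrier R" using sum contr_sub by auto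
      have "cR s1 \<one> \<oplus>\<^bsub>LR\<^esub> cR s2 \<one> \<in> L" unfolding L_def
        using sum unfolding contr_def L_def by (blast intro: ideal_prod.sum)
      moreover have "cR s1 \<one> \<oplus>\<^bsub>LR\<^esub> cR s2 \<one> = cR (s1 \<oplus> s2) \<one>" using locring_add[of s1 \<one> s2 \<one>] c one_S by simp
      ultimately show ?case using c unfolding contr_def by simp
    qed
  qed
  have cases: "ideal_mod R M (ideal_prod R (contr J) (contr K)) = ideal_mod R M (contr J) \<or>
      ideal_mod R M (ideal_prod R (contr J) (contr K)) = ideal_mod R M (contr K)"
    using wc[unfolded weakly_coprime_module_def, THEN spec[where x="contr J"], THEN spec[where x="contr K"]] I0 K0
    by blast
  have mono1: "ideal_mod R M (ideal_prod R (contr J) (contr K)) \<subseteq> ideal_mod R M (contr L)"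
    by (rule ideal_mod_mono[OF IKL])
  have mono2: "ideal_mod R M (contr L) \<subseteq> ideal_mod R M (contr J)" by (rule ideal_mod_mono[OF L0J])
  have mono3: "ideal_mod R M (contr L) \<subseteq> ideal_mod R M (contr K)" by (rule ideal_mod_mono[OF L0K])
  from cases show "ideal_mod LR LM (ideal_prod LR J K) = ideal_mod LR LM J \<or>
        ideal_mod LR LM (ideal_prod LR J K) = ideal_mod LR LM K"
  proof
    assume h: "ideal_mod R M (ideal_prod R (contr J) (contr K)) = ideal_mod R M (contr J)"
    then have "ideal_mod R M (contr L) = ideal_mod R M (contr J)" using mono1 mono2 by blast
    then have "ideal_mod LR LM L = ideal_mod LR LM J" unfolding char[OF L] char[OF J] by simp
    then show ?thesis unfolding L_def by blast
  next
    assume h: "ideal_mod R M (ideal_prod R (contr J) (contr K)) = ideal_mod R M (contr K)"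
    then have "ideal_mod R M (contr L) = ideal_mod R M (contr K)" using mono1 mono3 by blast
    then have "ideal_mod LR LM L = ideal_mod LR LM K" unfolding char[OF L] char[OF K] by simp
    then show ?thesis unfolding L_def by blast
  qed
qed

end

lemma (in cr) loc_part3:
  fixes M :: "('a, 'm) module"
  assumes M: "module R M" and P: "primeideal P R"
  shows "(prime_module R M \<longrightarrow> prime_module (loc_ring_at R P) (loc_module_at R P M))
       \<and> (weakly_prime_module R M \<longrightarrow> weakly_prime_module (loc_ring_at R P) (loc_module_at R P M))
       \<and> (coprime_module R M \<longrightarrow> coprime_module (loc_ring_at R P) (loc_module_at R P M))
       \<and> (weakly_coprime_module R M \<longrightarrow> weakly_coprime_module (loc_ring_at R P) (loc_module_at R P M))"
proof -
  interpret Pi: primeideal P R by (rule P)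
  have one: "\<one> \<in> carrier R - P" using Pi.one_imp_carrier Pi.I_notcarr by auto
  have mult: "s \<otimes> t \<in> carrier R - P" if "s \<in> carrier R - P" "t \<in> carrier R - P" for s t
    using that Pi.I_prime by auto
  interpret L: locm R "carrier R - P" M
    by (intro locm.intro locz.intro locz_axioms.intro locm_axioms.intro)
       (use M one mult is_cring in \<open>auto simp: cr_def\<close>)
  show ?thesis using L.loc_prime L.loc_weakly_prime L.loc_coprime L.loc_weakly_coprime by blast
qed

theorem mainTheorem9:
  fixes R :: "'r ring"
  assumes "cring R"
  shows
   \<comment> \<open>(1)\<close>
   "(\<forall>(M :: ('r, 'm) module) (N :: ('r, 'n) module).
       module R M \<and> module R N \<and> coprime_module R M
       \<longrightarrow> prime_module R (hom_module R M N))
    \<and> (\<forall>(M :: ('r, 'm) module) (N :: ('r, 'n) module).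
       module R M \<and> module R N \<and> injective_module R N \<and> cogenerator_module R N
       \<and> prime_module R (hom_module R M N)
       \<longrightarrow> coprime_module R M)
   \<comment> \<open>(2)\<close>
    \<and> (noetherian_ring R \<longrightarrow>
       (\<forall>(M :: ('r, 'm) module) (N :: ('r, 'n) module).
         module R M \<and> module R N \<and> injective_module R N \<and> cogenerator_module R N
         \<and> prime_module R M
         \<longrightarrow> coprime_module R (hom_module R M N)))
   \<comment> \<open>(3)\<close>
    \<and> (\<forall>(M :: ('r, 'm) module) P. module R M \<and> primeideal P R \<longrightarrow>
         (prime_module R M \<longrightarrow> prime_module (loc_ring_at R P) (loc_module_at R P M))
       \<and> (weakly_prime_module R M \<longrightarrow> weakly_prime_module (loc_ring_at R P) (loc_module_at R P M))
       \<and> (coprime_module R M \<longrightarrow> coprime_module (loc_ring_at R P) (loc_module_at R P M))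
       \<and> (weakly_coprime_module R M \<longrightarrow> weakly_coprime_module (loc_ring_at R P) (loc_module_at R P M)))
   \<comment> \<open>(4)\<close>
    \<and> (\<forall>(N :: ('r, 'n) module). module R N \<and> injective_module R N \<and> cogenerator_module R N \<longrightarrow>
         (reduced_module R N \<longrightarrow> coreduced_module R N)
       \<and> (weakly_prime_module R N \<longrightarrow> weakly_coprime_module R N))
   \<comment> \<open>(5)\<close>
    \<and> (\<forall>(Q :: ('r, 'm) module). module R Q \<and> progenerator_module R Q \<longrightarrow>
         (coreduced_module R Q \<longrightarrow> reduced_module R Q)
       \<and> (weakly_coprime_module R Q \<longrightarrow> weakly_prime_module R Q))"
proof -
  interpret cr R by (simp add: cr_def assms)
  show ?thesis
  proof (intro conjI allI impI)
    fix M :: "('r, 'm) module" and N :: "('r, 'n) module"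
    assume "module R M \<and> module R N \<and> coprime_module R M"
    then show "prime_module R (hom_module R M N)" using part1a by blast
  next
    fix M :: "('r, 'm) module" and N :: "('r, 'n) module"
    assume "module R M \<and> module R N \<and> injective_module R N \<and> cogenerator_module R N
       \<and> prime_module R (hom_module R M N)"
    then show "coprime_module R M" using part1b by blast
  next
    fix M :: "('r, 'm) module" and N :: "('r, 'n) module"
    assume "module R M \<and> module R N \<and> injective_module R N \<and> cogenerator_module R N \<and> prime_module R M"
    then show "coprime_module R (hom_module R M N)" using part2 by blast
  next
    fix M :: "('r, 'm) module" and P
    assume h: "module R M \<and> primeideal P R"
    note L = loc_part3[OF conjunct1[OF h] conjunct2[OF h]]
    show "prime_module R M \<Longrightarrow> prime_module (loc_ring_at R P) (loc_module_at R P M)" using L by blast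
    show "weakly_prime_module R M \<Longrightarrow> weakly_prime_module (loc_ring_at R P) (loc_module_at R P M)" using L by blast
    show "coprime_module R M \<Longrightarrow> coprime_module (loc_ring_at R P) (loc_module_at R P M)" using L by blast
    show "weakly_coprime_module R M \<Longrightarrow> weakly_coprime_module (loc_ring_at R P) (loc_module_at R P M)" using L by blast
  next
    fix N :: "('r, 'n) module"
    assume h: "module R N \<and> injective_module R N \<and> cogenerator_module R N"
    note L = part4[of N]
    show "reduced_module R N \<Longrightarrow> coreduced_module R N" using L h by blast
    show "weakly_prime_module R N \<Longrightarrow> weakly_coprime_module R N" using L h by blast
  next
    fix Q :: "('r, 'm) module"
    assume h: "module R Q \<and> progenerator_module R Q"
    note L = part5[of Q]
    show "coreduced_module R Q \<Longrightarrow> reduced_module R Q" using L h by blast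
    show "weakly_coprime_module R Q \<Longrightarrow> weakly_prime_module R Q" using L h by blast
  qed
qed

end
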